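(* For $n\ge 0$ and every $l$ with $\lfloor\frac{n+1}{2}\rfloor\le l\le\binom n2$, there is a one-to-one correspondence between $\mathscr F_n(l)$ and $\mathscr D(n,l)$; in particular $f(n,l)=d(n,l)$.
   Context: An element of a lattice is reducible if it is $y\vee z$ or $y\wedge z$ for some $y,z$ both distinct from it; an element of a poset is doubly irreducible if it has at most one upper and at most one lower cover. The nullity $\eta(P)$ of a finite poset is $|E|-|V|+c$ for its cover graph (edges = coverings), $c$ the number of components. Adjunct operation: for disjoint lattices $L_1,L_2$ and $a<b$ in $L_1$ with $b$ not covering $a$, $L_1\,]_a^b\,L_2$ is $L_1\cup L_2$ with $x\le y$ iff $x\le y$ within $L_1$ or within $L_2$, or $x\in L_1,y\in L_2,x\le a$, or $x\in L_2,y\in L_1,b\le y$. An RC-lattice is a finite lattice whose reducible elements are pairwise comparable; it is an adjunct of chains $C_0\,]_{a_1}^{b_1}C_1\cdots]_{a_r}^{b_r}C_r$ ($C_0$ maximal chain), unique up to order of adjunct pairs. A basic block is a poset that has one element, or has no doubly irreducible elements, or from which removal of a doubly irreducible element reduces nullity by one. A fundamental basic block is an RC-lattice that is a basic block whose adjunct representation has pairwise distinct adjunct pairs. $\mathscr F_n(l)$ is the set of isomorphism classes of fundamental basic blocks with exactly $n$ reducible elements and nullity $l$, and $f(n,l)=|\mathscr F_n(l)|$ (with $f(0,0)=1$). $\mathscr D(n,l)$ is the set of labeled simple graphs on the vertex set $\{1,\dots,n\}$ with exactly $l$ edges and no isolated vertices (two labeled graphs are the same iff they have the same edge set), and $d(n,l)=|\mathscr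 D(n,l)|$ (with $d(0,0)=1$). *)

theory Defs
  imports Main
begin

type_synonym poset = "nat set \<times> (nat \<times> nat) set"

definition carrier :: "poset \<Rightarrow> nat set" where "carrier P = fst P"
definition ord :: "poset \<Rightarrow> (nat \<times> nat) set" where "ord P = snd P"

definition finite_poset :: "poset \<Rightarrow> bool" where
  "finite_poset P \<longleftrightarrow> finite (carrier P) \<and> ord P \<subseteq> carrier P \<times> carrier P
     \<and> (\<forall>x\<in>carrier P. (x,x) \<in> ord P)
     \<and> (\<forall>x y. (x,y) \<in> ord P \<and> (y,x) \<in> ord P \<longrightarrow> x = y)
     \<and> (\<forall>x y z. (x,y) \<in> ord P \<and> (y,z) \<in> ord P \<longrightarrow> (x,z) \<in> ord P)"

definition is_lub :: "poset \<Rightarrow> nat \<Rightarrow> nat \<Rightarrow> nat \<Rightarrow> bool" where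
  "is_lub P y z x \<longleftrightarrow> x \<in> carrier P \<and> (y,x) \<in> ord P \<and> (z,x) \<in> ord P
     \<and> (\<forall>w\<in>carrier P. (y,w) \<in> ord P \<and> (z,w) \<in> ord P \<longrightarrow> (x,w) \<in> ord P)"

definition is_glb :: "poset \<Rightarrow> nat \<Rightarrow> nat \<Rightarrow> nat \<Rightarrow> bool" where
  "is_glb P y z x \<longleftrightarrow> x \<in> carrier P \<and> (x,y) \<in> ord P \<and> (x,z) \<in> ord P
     \<and> (\<forall>w\<in>carrier P. (w,y) \<in> ord P \<and> (w,z) \<in> ord P \<longrightarrow> (w,x) \<in> ord P)"

definition finite_lattice :: "poset \<Rightarrow> bool" where
  "finite_lattice P \<longleftrightarrow> finite_poset P \<and> carrier P \<noteq> {}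
     \<and> (\<forall>y\<in>carrier P. \<forall>z\<in>carrier P. (\<exists>x. is_lub P y z x) \<and> (\<exists>x. is_glb P y z x))"

definition is_chain :: "poset \<Rightarrow> bool" where
  "is_chain P \<longleftrightarrow> finite_lattice P
     \<and> (\<forall>x\<in>carrier P. \<forall>y\<in>carrier P. (x,y) \<in> ord P \<or> (y,x) \<in> ord P)"

definition comparable :: "poset \<Rightarrow> nat \<Rightarrow> nat \<Rightarrow> bool" where
  "comparable P x y \<longleftrightarrow> (x,y) \<in> ord P \<or> (y,x) \<in> ord P"

definition reducible :: "poset \<Rightarrow> nat \<Rightarrow> bool" where
  "reducible P x \<longleftrightarrow> x \<in> carrier P \<and> (\<exists>y\<in>carrier P. \<exists>z\<in>carrier P. y \<noteq> x \<and> z \<noteq> x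
      \<and> (is_lub P y z x \<or> is_glb P y z x))"

definition num_reducible :: "poset \<Rightarrow> nat" where
  "num_reducible P = card {x\<in>carrier P. reducible P x}"

definition RC_lattice :: "poset \<Rightarrow> bool" where
  "RC_lattice P \<longleftrightarrow> finite_lattice P
     \<and> (\<forall>x y. reducible P x \<and> reducible P y \<longrightarrow> comparable P x y)"

definition covers :: "poset \<Rightarrow> nat \<Rightarrow> nat \<Rightarrow> bool" where
  "covers P x y \<longleftrightarrow> (x,y) \<in> ord P \<and> x \<noteq> y
     \<and> \<not> (\<exists>z. (x,z) \<in> ord P \<and> (z,y) \<in> ord P \<and> z \<noteq> x \<and> z \<noteq> y)"

definition doubly_irreducible :: "poset \<Rightarrow> nat \<Rightarrow> bool" where
  "doubly_irreducible P x \<longleftrightarrow> x \<in> carrier P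
     \<and> card {y. covers P x y} \<le> 1 \<and> card {y. covers P y x} \<le> 1"

definition cover_edges :: "poset \<Rightarrow> (nat \<times> nat) set" where
  "cover_edges P = {(x,y). covers P x y}"

definition cover_conn :: "poset \<Rightarrow> (nat \<times> nat) set" where
  "cover_conn P = Id_on (carrier P) \<union> (cover_edges P \<union> (cover_edges P)\<inverse>)\<^sup>+"

definition num_components :: "poset \<Rightarrow> nat" where
  "num_components P = card (carrier P // cover_conn P)"

definition nullity :: "poset \<Rightarrow> int" where
  "nullity P = int (card (cover_edges P)) - int (card (carrier P)) + int (num_components P)"

definition remove_elem :: "poset \<Rightarrow> nat \<Rightarrow> poset" where
  "remove_elem P x = (carrier P - {x}, ord P \<inter> ((carrier P - {x}) \<times> (carrier P - {x})))"

definition basic_block :: "poset \<Rightarrow> bool" where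
  "basic_block P \<longleftrightarrow> card (carrier P) = 1
     \<or> (\<forall>x. \<not> doubly_irreducible P x)
     \<or> (\<forall>x. doubly_irreducible P x \<longrightarrow> nullity (remove_elem P x) = nullity P - 1)"

definition adjunct :: "poset \<Rightarrow> nat \<Rightarrow> nat \<Rightarrow> poset \<Rightarrow> poset" where
  "adjunct L1 a b L2 = (carrier L1 \<union> carrier L2,
      ord L1 \<union> ord L2
      \<union> {(x,y). x \<in> carrier L1 \<and> y \<in> carrier L2 \<and> (x,a) \<in> ord L1}
      \<union> {(x,y). x \<in> carrier L2 \<and> y \<in> carrier L1 \<and> (b,y) \<in> ord L1})"

fun adjunct_list :: "poset \<Rightarrow> (nat \<times> nat \<times> poset) list \<Rightarrow> poset" where
  "adjunct_list L [] = L"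
| "adjunct_list L ((a,b,C) # xs) = adjunct_list (adjunct L a b C) xs"

fun valid_adjunct_list :: "poset \<Rightarrow> (nat \<times> nat \<times> poset) list \<Rightarrow> bool" where
  "valid_adjunct_list L [] = True"
| "valid_adjunct_list L ((a,b,C) # xs) \<longleftrightarrow>
     finite_lattice L \<and> is_chain C \<and> carrier L \<inter> carrier C = {}
     \<and> a \<in> carrier L \<and> b \<in> carrier L \<and> (a,b) \<in> ord L \<and> a \<noteq> b \<and> \<not> covers L a b
     \<and> valid_adjunct_list (adjunct L a b C) xs"

definition maximal_chain :: "poset \<Rightarrow> nat set \<Rightarrow> bool" where
  "maximal_chain P S \<longleftrightarrow> S \<subseteq> carrier P \<and> (\<forall>x\<in>S. \<forall>y\<in>S. comparable P x y)
     \<and> (\<forall>T. S \<subset> T \<and> T \<subseteq> carrier P \<longrightarrow> \<not> (\<forall>x\<in>T. \<forall>y\<in>T. comparable P x y))"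

definition adjunct_representation :: "poset \<Rightarrow> poset \<Rightarrow> (nat \<times> nat \<times> poset) list \<Rightarrow> bool" where
  "adjunct_representation L C0 xs \<longleftrightarrow> is_chain C0 \<and> valid_adjunct_list C0 xs
     \<and> adjunct_list C0 xs = L \<and> maximal_chain L (carrier C0)"

definition fundamental_basic_block :: "poset \<Rightarrow> bool" where
  "fundamental_basic_block L \<longleftrightarrow> RC_lattice L \<and> basic_block L
     \<and> (\<exists>C0 xs. adjunct_representation L C0 xs \<and> distinct (map (\<lambda>(a,b,C). (a,b)) xs))"

definition poset_iso :: "poset \<Rightarrow> poset \<Rightarrow> bool" where
  "poset_iso P Q \<longleftrightarrow> (\<exists>h. bij_betw h (carrier P) (carrier Q)
     \<and> (\<forall>x\<in>carrier P. \<forall>y\<in>carrier P. (x,y) \<in> ord P \<longleftrightarrow> (h x, h y) \<in> ord Q))"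

definition FBB :: "nat \<Rightarrow> int \<Rightarrow> poset set" where
  "FBB n l = {L. fundamental_basic_block L \<and> num_reducible L = n \<and> nullity L = l}"

definition F_classes :: "nat \<Rightarrow> int \<Rightarrow> poset set set" where
  "F_classes n l = (\<lambda>L. {M \<in> FBB n l. poset_iso L M}) ` FBB n l"

definition f :: "nat \<Rightarrow> int \<Rightarrow> nat" where
  "f n l = card (F_classes n l)"

definition D_graphs :: "nat \<Rightarrow> nat \<Rightarrow> nat set set set" where
  "D_graphs n l = {E. E \<subseteq> {{i,j} | i j. 1 \<le> i \<and> i < j \<and> j \<le> n} \<and> card E = l
      \<and> (\<forall>v\<in>{1..n}. \<exists>e\<in>E. v \<in> e)}"

definition d :: "nat \<Rightarrow> nat \<Rightarrow> nat" where
  "d n l = card (D_graphs n l)"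

end

theory Submission
  imports Defs "HOL-Library.Nat_Bijection"
begin


lemma carrier_pair[simp]: "carrier (A,R) = A" by (simp add: carrier_def)
lemma ord_pair[simp]: "ord (A,R) = R" by (simp add: ord_def)

lemma covers_iff: "covers P x y \<longleftrightarrow> (x,y) \<in> ord P \<and> x \<noteq> y
     \<and> \<not> (\<exists>z. (x,z) \<in> ord P \<and> (z,y) \<in> ord P \<and> z \<noteq> x \<and> z \<noteq> y)"
  by (simp add: covers_def)

locale fpos =
  fixes P :: poset
  assumes fp: "finite_poset P"
begin

abbreviation "Cr \<equiv> carrier P"
abbreviation lq where "lq x y \<equiv> (x,y) \<in> ord P"

lemma fin: "finite Cr" using fp by (simp add: finite_poset_def)
lemma ord_sub: "ord P \<subseteq> Cr \<times> Cr" using fp by (simp add: finite_poset_def)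
lemma ordD: "lq x y \<Longrightarrow> x \<in> Cr \<and> y \<in> Cr" using ord_sub by blast
lemma refl: "x \<in> Cr \<Longrightarrow> lq x x" using fp by (simp add: finite_poset_def)
lemma antisym: "lq x y \<Longrightarrow> lq y x \<Longrightarrow> x = y" using fp unfolding finite_poset_def by blast
lemma trans: "lq x y \<Longrightarrow> lq y z \<Longrightarrow> lq x z" using fp unfolding finite_poset_def by blast

lemma coversD: "covers P x y \<Longrightarrow> lq x y \<and> x \<noteq> y \<and> x \<in> Cr \<and> y \<in> Cr"
  using ordD by (auto simp: covers_def)

lemma fin_up: "finite {y. covers P x y}"
  by (rule finite_subset[OF _ fin]) (auto dest: coversD)
lemma fin_low: "finite {y. covers P y x}"
  by (rule finite_subset[OF _ fin]) (auto dest: coversD)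
lemma fin_edges: "finite (cover_edges P)"
  by (rule finite_subset[of _ "Cr \<times> Cr"]) (auto simp: cover_edges_def fin dest: coversD)

lemma exists_max: "finite S \<Longrightarrow> S \<noteq> {} \<Longrightarrow> S \<subseteq> Cr \<Longrightarrow> \<exists>m\<in>S. \<forall>s\<in>S. lq m s \<longrightarrow> s = m"
proof (induction S rule: finite_ne_induct)
  case (singleton x) then show ?case by auto
next
  case (insert x S)
  then obtain m where m: "m \<in> S" "\<forall>s\<in>S. lq m s \<longrightarrow> s = m" by auto
  show ?case
  proof (cases "lq m x")
    case True
    have "\<forall>s\<in>insert x S. lq x s \<longrightarrow> s = x"
    proof (intro ballI impI)
      fix s assume s: "s \<in> insert x S" "lq x s"
      show "s = x"
      proof (cases "s = x")
        case False
        then have "s \<in> S" using s by auto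
        moreover have "lq m s" using True s trans by blast
        ultimately have "s = m" using m by auto
        then show ?thesis using True s antisym by blast
      qed
    qed
    then show ?thesis by auto
  next
    case False
    then show ?thesis using m by auto
  qed
qed

lemma exists_min: "finite S \<Longrightarrow> S \<noteq> {} \<Longrightarrow> S \<subseteq> Cr \<Longrightarrow> \<exists>m\<in>S. \<forall>s\<in>S. lq s m \<longrightarrow> s = m"
proof (induction S rule: finite_ne_induct)
  case (singleton x) then show ?case by auto
next
  case (insert x S)
  then obtain m where m: "m \<in> S" "\<forall>s\<in>S. lq s m \<longrightarrow> s = m" by auto
  show ?case
  proof (cases "lq x m")
    case True
    have "\<forall>s\<in>insert x S. lq s x \<longrightarrow> s = x"
    proof (intro ballI impI)
      fix s assume s: "s \<in> insert x S" "lq s x"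
      show "s = x"
      proof (cases "s = x")
        case False
        then have "s \<in> S" using s by auto
        moreover have "lq s m" using True s trans by blast
        ultimately have "s = m" using m by auto
        then show ?thesis using True s antisym by blast
      qed
    qed
    then show ?thesis by auto
  next
    case False
    then show ?thesis using m by auto
  qed
qed

lemma lower_cover: assumes "lq y x" "y \<noteq> x" shows "\<exists>z. covers P z x \<and> lq y z"
proof -
  let ?S = "{w. lq y w \<and> lq w x \<and> w \<noteq> x}"
  have "?S \<subseteq> Cr" using ordD by auto
  moreover have "finite ?S" using fin by (rule finite_subset[OF calculation])
  moreover have "y \<in> ?S" using assms by (auto intro: refl dest: ordD)
  ultimately obtain m where m: "m \<in> ?S" "\<forall>s\<in>?S. lq m s \<longrightarrow> s = m"
    using exists_max[of ?S] by blast
  have "covers P m x"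
    unfolding covers_def using m trans by blast
  then show ?thesis using m by auto
qed

lemma upper_cover: assumes "lq x y" "y \<noteq> x" shows "\<exists>z. covers P x z \<and> lq z y"
proof -
  let ?S = "{w. lq w y \<and> lq x w \<and> w \<noteq> x}"
  have "?S \<subseteq> Cr" using ordD by auto
  moreover have "finite ?S" using fin by (rule finite_subset[OF calculation])
  moreover have "y \<in> ?S" using assms by (auto intro: refl dest: ordD)
  ultimately obtain m where m: "m \<in> ?S" "\<forall>s\<in>?S. lq s m \<longrightarrow> s = m"
    using exists_min[of ?S] by blast
  have "covers P x m"
    unfolding covers_def using m trans by blast
  then show ?thesis using m by auto
qed

lemma conn_bot:
  assumes b: "b \<in> Cr" "\<forall>x\<in>Cr. lq b x"
  shows "x \<in> Cr \<Longrightarrow> (b,x) \<in> (cover_edges P)\<^sup>*"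
proof (induction "card {w. lq b w \<and> lq w x}" arbitrary: x rule: less_induct)
  case less
  show ?case
  proof (cases "x = b")
    case True then show ?thesis by simp
  next
    case False
    have "lq b x" using b less by auto
    then obtain z where z: "covers P z x" "lq b z" using lower_cover False by metis
    have sub: "{w. lq b w \<and> lq w z} \<subset> {w. lq b w \<and> lq w x}"
    proof
      show "{w. lq b w \<and> lq w z} \<subseteq> {w. lq b w \<and> lq w x}" using z coversD trans by blast
      have "x \<notin> {w. lq b w \<and> lq w z}" using z coversD antisym by blast
      moreover have "x \<in> {w. lq b w \<and> lq w x}" using \<open>lq b x\<close> refl less by auto
      ultimately show "{w. lq b w \<and> lq w z} \<noteq> {w. lq b w \<and> lq w x}" by blast
    qed
    have "finite {w. lq b w \<and> lq w x}"
      by (rule finite_subset[OF _ fin]) (auto dest: ordD)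
    then have "card {w. lq b w \<and> lq w z} < card {w. lq b w \<and> lq w x}"
      using sub psubset_card_mono by blast
    moreover have "z \<in> Cr" using z coversD by blast
    ultimately have "(b,z) \<in> (cover_edges P)\<^sup>*" using less by blast
    moreover have "(z,x) \<in> cover_edges P" using z by (simp add: cover_edges_def)
    ultimately show ?thesis by simp
  qed
qed

lemma one_component:
  assumes b: "b \<in> Cr" "\<forall>x\<in>Cr. lq b x"
  shows "num_components P = 1"
proof -
  let ?E = "cover_edges P"
  let ?R = "cover_conn P"
  have Esub: "?E \<subseteq> Cr \<times> Cr" by (auto simp: cover_edges_def dest: coversD)
  then have "?E \<union> ?E\<inverse> \<subseteq> Cr \<times> Cr" by auto
  then have "(?E \<union> ?E\<inverse>)\<^sup>+ \<subseteq> Cr \<times> Cr" by (rule trancl_subset_Sigma)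
  then have Rsub: "?R \<subseteq> Cr \<times> Cr" by (auto simp: cover_conn_def)
  have all: "(x,y) \<in> ?R" if "x \<in> Cr" "y \<in> Cr" for x y
  proof -
    have "(b,x) \<in> ?E\<^sup>*" "(b,y) \<in> ?E\<^sup>*" using conn_bot[OF b] that by auto
    then have "(x,b) \<in> (?E\<inverse>)\<^sup>*" "(b,y) \<in> ?E\<^sup>*" by (auto simp: rtrancl_converse)
    moreover have "(?E\<inverse>)\<^sup>* \<subseteq> (?E \<union> ?E\<inverse>)\<^sup>*" "?E\<^sup>* \<subseteq> (?E \<union> ?E\<inverse>)\<^sup>*"
      by (rule rtrancl_mono, blast)+
    ultimately have "(x,y) \<in> (?E \<union> ?E\<inverse>)\<^sup>*" by (meson rtrancl_trans subsetD)
    then show ?thesis using that unfolding cover_conn_def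
      by (metis IdI Id_on_iff UnI1 UnI2 rtranclD)
  qed
  have "\<And>x. x \<in> Cr \<Longrightarrow> ?R `` {x} = Cr" using all Rsub by auto
  then have "Cr // ?R = {Cr}" using b unfolding quotient_def by auto
  then show ?thesis by (simp add: num_components_def)
qed

lemma nullity_bot:
  assumes b: "b \<in> Cr" "\<forall>x\<in>Cr. lq b x"
  shows "nullity P = int (card (cover_edges P)) - int (card Cr) + 1"
  using one_component[OF b] by (simp add: nullity_def)

end

lemma finite_poset_remove: assumes "finite_poset P" shows "finite_poset (remove_elem P x)"
proof -
  interpret fpos P by (rule fpos.intro, rule assms)
  show ?thesis unfolding finite_poset_def
    by (auto simp: remove_elem_def fin intro: refl antisym trans dest: ordD)
qed


lemma covers_rem: "covers (remove_elem P x) u v \<longleftrightarrow> u \<noteq> x \<and> v \<noteq> x \<and> u \<in> carrier P \<and> v \<in> carrier P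
   \<and> (u,v) \<in> ord P \<and> u \<noteq> v \<and> \<not>(\<exists>z. z \<noteq> x \<and> z \<in> carrier P \<and> (u,z) \<in> ord P \<and> (z,v) \<in> ord P \<and> z \<noteq> u \<and> z \<noteq> v)"
  by (auto simp: covers_def remove_elem_def)

locale flat = fpos +
  assumes lat: "finite_lattice P"
begin

lemma nonempty: "Cr \<noteq> {}" using lat by (simp add: finite_lattice_def)
lemma lub_ex: "y \<in> Cr \<Longrightarrow> z \<in> Cr \<Longrightarrow> \<exists>x. is_lub P y z x" using lat by (simp add: finite_lattice_def)
lemma glb_ex: "y \<in> Cr \<Longrightarrow> z \<in> Cr \<Longrightarrow> \<exists>x. is_glb P y z x" using lat by (simp add: finite_lattice_def)

lemma bot_ex: "\<exists>b\<in>Cr. \<forall>x\<in>Cr. lq b x"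
proof -
  obtain m where m: "m \<in> Cr" "\<forall>s\<in>Cr. lq s m \<longrightarrow> s = m" using exists_min[OF fin nonempty] by blast
  have "lq m x" if xC: "x \<in> Cr" for x
  proof -
    obtain g where g: "is_glb P m x g" using glb_ex m xC by blast
    then have "g \<in> Cr" "lq g m" "lq g x" by (auto simp: is_glb_def)
    then have "g = m" using m by blast
    then show ?thesis using \<open>lq g x\<close> by simp
  qed
  then show ?thesis using m by blast
qed

lemma top_ex: "\<exists>b\<in>Cr. \<forall>x\<in>Cr. lq x b"
proof -
  obtain m where m: "m \<in> Cr" "\<forall>s\<in>Cr. lq m s \<longrightarrow> s = m" using exists_max[OF fin nonempty] by blast
  have "lq x m" if xC: "x \<in> Cr" for x
  proof -
    obtain g where g: "is_lub P m x g" using lub_ex m xC by blast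
    then have "g \<in> Cr" "lq m g" "lq x g" by (auto simp: is_lub_def)
    then have "g = m" using m by blast
    then show ?thesis using \<open>lq x g\<close> by simp
  qed
  then show ?thesis using m by blast
qed

lemma nullity_lat: "nullity P = int (card (cover_edges P)) - int (card Cr) + 1"
  using bot_ex nullity_bot by blast

lemma di_low_unique: "doubly_irreducible P x \<Longrightarrow> covers P a x \<Longrightarrow> covers P b x \<Longrightarrow> a = b"
  using card_le_Suc0_iff_eq[OF fin_low, of x] by (auto simp: doubly_irreducible_def)
lemma di_up_unique: "doubly_irreducible P x \<Longrightarrow> covers P x a \<Longrightarrow> covers P x b \<Longrightarrow> a = b"
  using card_le_Suc0_iff_eq[OF fin_up, of x] by (auto simp: doubly_irreducible_def)

lemma red_imp_not_di: assumes "reducible P x" shows "\<not> doubly_irreducible P x"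
proof
  assume di: "doubly_irreducible P x"
  from assms obtain y z where yz: "y \<in> Cr" "z \<in> Cr" "y \<noteq> x" "z \<noteq> x" "is_lub P y z x \<or> is_glb P y z x"
    by (auto simp: reducible_def)
  show False
  proof (cases "is_lub P y z x")
    case True
    then have "lq y x" "lq z x" "x \<in> Cr" by (auto simp: is_lub_def)
    obtain p where p: "covers P p x" "lq y p" using lower_cover \<open>lq y x\<close> yz by blast
    obtain p' where p': "covers P p' x" "lq z p'" using lower_cover \<open>lq z x\<close> yz by blast
    have "p = p'" using di_low_unique[OF di p(1) p'(1)] .
    then have "lq x p" using True p p' coversD unfolding is_lub_def by blast
    then show False using p coversD antisym by blast
  next
    case False
    then have g: "is_glb P y z x" using yz by blast
    then have "lq x y" "lq x z" "x \<in> Cr" by (auto simp: is_glb_def)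
    obtain p where p: "covers P x p" "lq p y" using upper_cover \<open>lq x y\<close> yz by blast
    obtain p' where p': "covers P x p'" "lq p' z" using upper_cover \<open>lq x z\<close> yz by blast
    have "p = p'" using di_up_unique[OF di p(1) p'(1)] .
    then have "lq p x" using g p p' coversD unfolding is_glb_def by blast
    then show False using p coversD antisym by blast
  qed
qed

lemma not_red_imp_di: assumes x: "x \<in> Cr" and nr: "\<not> reducible P x" shows "doubly_irreducible P x"
proof -
  have up: "u = v" if u: "covers P x u" and v: "covers P x v" for u v
  proof (rule ccontr)
    assume uv: "u \<noteq> v"
    have uC: "u \<in> Cr" "v \<in> Cr" "lq x u" "lq x v" "u \<noteq> x" "v \<noteq> x" using u v coversD by auto
    obtain g where g: "is_glb P u v g" using glb_ex uC by blast
    then have g1: "g \<in> Cr" "lq g u" "lq g v" "lq x g" using uC x by (auto simp: is_glb_def)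
    have "g = x"
    proof (rule ccontr)
      assume "g \<noteq> x"
      then have "g = u" using u g1 unfolding covers_def by blast
      moreover have "g = v" using v g1 \<open>g \<noteq> x\<close> unfolding covers_def by blast
      ultimately show False using uv by simp
    qed
    then have "reducible P x" unfolding reducible_def using g uC x by blast
    then show False using nr by simp
  qed
  have low: "u = v" if u: "covers P u x" and v: "covers P v x" for u v
  proof (rule ccontr)
    assume uv: "u \<noteq> v"
    have uC: "u \<in> Cr" "v \<in> Cr" "lq u x" "lq v x" "u \<noteq> x" "v \<noteq> x" using u v coversD by auto
    obtain g where g: "is_lub P u v g" using lub_ex uC by blast
    then have g1: "g \<in> Cr" "lq u g" "lq v g" "lq g x" using uC x by (auto simp: is_lub_def)
    have "g = x"
    proof (rule ccontr)
      assume "g \<noteq> x"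
      then have "g = u" using u g1 unfolding covers_def by blast
      moreover have "g = v" using v g1 \<open>g \<noteq> x\<close> unfolding covers_def by blast
      ultimately show False using uv by simp
    qed
    then have "reducible P x" unfolding reducible_def using g uC x by blast
    then show False using nr by simp
  qed
  show ?thesis unfolding doubly_irreducible_def
    using x card_le_Suc0_iff_eq[OF fin_up, of x] card_le_Suc0_iff_eq[OF fin_low, of x] up low by auto
qed

lemma red_iff: "x \<in> Cr \<Longrightarrow> reducible P x \<longleftrightarrow> \<not> doubly_irreducible P x"
  using red_imp_not_di not_red_imp_di by blast

lemma rem_mid:
  assumes di: "doubly_irreducible P x" and p: "covers P p x" and q: "covers P x q"
  shows "nullity (remove_elem P x) = nullity P -
     (if (\<exists>w. w \<noteq> x \<and> lq p w \<and> lq w q \<and> w \<noteq> p \<and> w \<noteq> q) then 1 else 0)"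
proof -
  define \<delta> where "\<delta> = (\<exists>w. w \<noteq> x \<and> lq p w \<and> lq w q \<and> w \<noteq> p \<and> w \<noteq> q)"
  let ?Q = "remove_elem P x"
  interpret Q: fpos ?Q by (rule fpos.intro, rule finite_poset_remove[OF fp])
  have pC: "p \<in> Cr" "x \<in> Cr" "q \<in> Cr" "lq p x" "lq x q" "p \<noteq> x" "x \<noteq> q" using p q coversD by auto
  have pq: "p \<noteq> q" using pC antisym by blast
  have lpq: "lq p q" using pC trans by blast
  obtain b where b: "b \<in> Cr" "\<forall>y\<in>Cr. lq b y" using bot_ex by blast
  have "b \<noteq> x" using b pC antisym by (metis trans)
  then have Qb: "b \<in> carrier ?Q" "\<forall>y\<in>carrier ?Q. (b,y) \<in> ord ?Q"
    using b by (auto simp: remove_elem_def)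
  have nQ: "nullity ?Q = int (card (cover_edges ?Q)) - int (card (carrier ?Q)) + 1"
    using Q.nullity_bot[OF Qb] .
  have cQ: "card (carrier ?Q) = card Cr - 1" using pC fin by (simp add: remove_elem_def)
  have EQ: "cover_edges ?Q = (cover_edges P - {(p,x),(x,q)}) \<union> (if \<delta> then {} else {(p,q)})"
  proof (rule set_eqI, clarify)
    fix u v
    show "(u,v) \<in> cover_edges ?Q \<longleftrightarrow> (u,v) \<in> (cover_edges P - {(p,x),(x,q)}) \<union> (if \<delta> then {} else {(p,q)})"
    proof
      assume "(u,v) \<in> cover_edges ?Q"
      then have c: "covers ?Q u v" by (simp add: cover_edges_def)
      note c' = c[unfolded covers_rem]
      show "(u,v) \<in> (cover_edges P - {(p,x),(x,q)}) \<union> (if \<delta> then {} else {(p,q)})"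
      proof (cases "covers P u v")
        case True
        then show ?thesis using c' by (auto simp: cover_edges_def)
      next
        case False
        then obtain z where z: "lq u z" "lq z v" "z \<noteq> u" "z \<noteq> v" using c' unfolding covers_def by blast
        then have "z = x" using c' ordD by blast
        then have ux: "lq u x" "lq x v" using z by auto
        obtain p' where p': "covers P p' x" "lq u p'" using lower_cover[OF ux(1)] c' by blast
        have "p' = p" using di_low_unique[OF di p'(1) p] .
        obtain q' where q': "covers P x q'" "lq q' v" using upper_cover[OF ux(2)] c' by metis
        have "q' = q" using di_up_unique[OF di q'(1) q] .
        have "u = p"
        proof (rule ccontr)
          assume "u \<noteq> p"
          moreover have "lq p v" using pC ux trans by blast
          moreover have "p \<noteq> v" using pC ux antisym by blast
          ultimately have "p \<noteq> x \<and> p \<in> Cr \<and> lq u p \<and> lq p v \<and> p \<noteq> u \<and> p \<noteq> v"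
            using pC p' \<open>p' = p\<close> by auto
          then show False using c' by blast
        qed
        moreover have "v = q"
        proof (rule ccontr)
          assume "v \<noteq> q"
          moreover have "lq u q" using pC ux trans by blast
          moreover have "q \<noteq> u" using pC ux antisym by blast
          ultimately have "q \<noteq> x \<and> q \<in> Cr \<and> lq u q \<and> lq q v \<and> q \<noteq> u \<and> q \<noteq> v"
            using pC q' \<open>q' = q\<close> by auto
          then show False using c' by blast
        qed
        moreover have "\<not> \<delta>" unfolding \<delta>_def using c' calculation ordD by blast
        ultimately show ?thesis by simp
      qed
    next
      assume "(u,v) \<in> (cover_edges P - {(p,x),(x,q)}) \<union> (if \<delta> then {} else {(p,q)})"
      then consider "covers P u v" "(u,v) \<noteq> (p,x)" "(u,v) \<noteq> (x,q)" | "\<not>\<delta>" "u = p" "v = q"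
        by (auto simp: cover_edges_def split: if_splits)
      then show "(u,v) \<in> cover_edges ?Q"
      proof cases
        case 1
        have "u \<noteq> x" using 1 di_up_unique[OF di _ q] by auto
        moreover have "v \<noteq> x" using 1 di_low_unique[OF di _ p] by auto
        moreover have cv: "covers P u v" using 1 by simp
        moreover have "lq u v" "u \<noteq> v" "u \<in> Cr" "v \<in> Cr" using coversD[OF cv] by auto
        moreover have "\<not>(\<exists>z. z \<noteq> x \<and> z \<in> Cr \<and> lq u z \<and> lq z v \<and> z \<noteq> u \<and> z \<noteq> v)"
          using cv unfolding covers_def by blast
        ultimately show ?thesis by (simp add: cover_edges_def covers_rem)
      next
        case 2
        then show ?thesis unfolding cover_edges_def covers_rem \<delta>_def using pC pq lpq by auto
      qed
    qed
  qed
  have fE: "finite (cover_edges P)" by (rule fin_edges)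
  have inE: "(p,x) \<in> cover_edges P" "(x,q) \<in> cover_edges P" using p q by (auto simp: cover_edges_def)
  have pqE: "(p,q) \<notin> cover_edges P" using pC unfolding cover_edges_def covers_def by auto
  have c1: "card (cover_edges P - {(p,x),(x,q)}) = card (cover_edges P) - 2"
    using fE inE pC by (simp add: card_Diff_subset)
  have "card (cover_edges ?Q) = card (cover_edges P) - 2 + (if \<delta> then 0 else 1)"
  proof (cases \<delta>)
    case True then show ?thesis using EQ c1 by simp
  next
    case False
    have "(p,q) \<notin> cover_edges P - {(p,x),(x,q)}" using pqE by auto
    then show ?thesis using EQ c1 False fE by simp
  qed
  moreover have "card (cover_edges P) \<ge> 2"
  proof -
    have "{(p,x),(x,q)} \<subseteq> cover_edges P" using inE by auto
    then have "card {(p,x),(x,q)} \<le> card (cover_edges P)" using fE card_mono by blast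
    then show ?thesis using pC by simp
  qed
  moreover have "card Cr \<ge> 1" using pC fin by (metis One_nat_def Suc_leI card_gt_0_iff empty_iff)
  ultimately show ?thesis using nQ cQ nullity_lat unfolding \<delta>_def[symmetric] by (auto simp: of_nat_diff)
qed

lemma rem_bot:
  assumes b: "b \<in> Cr" "\<forall>y\<in>Cr. lq b y" and di: "doubly_irreducible P b" and c2: "card Cr \<ge> 2"
  shows "nullity (remove_elem P b) = nullity P"
proof -
  let ?Q = "remove_elem P b"
  interpret Q: fpos ?Q by (rule fpos.intro, rule finite_poset_remove[OF fp])
  obtain y where y: "y \<in> Cr" "y \<noteq> b"
  proof -
    have "Cr - {b} \<noteq> {}"
    proof
      assume "Cr - {b} = {}"
      then have "Cr \<subseteq> {b}" by blast
      then have "card Cr \<le> 1" using card_mono[of "{b}" Cr] by simp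
      then show False using c2 by simp
    qed
    then show ?thesis using that by blast
  qed
  obtain q where q: "covers P b q" using upper_cover[of b y] b y by blast
  have qb: "\<forall>y'\<in>Cr. y' \<noteq> b \<longrightarrow> lq q y'"
  proof (intro ballI impI)
    fix y' assume "y' \<in> Cr" "y' \<noteq> b"
    then obtain q' where "covers P b q'" "lq q' y'" using upper_cover[of b y'] b by blast
    then show "lq q y'" using di_up_unique[OF di q] by auto
  qed
  have qC: "q \<in> Cr" "q \<noteq> b" using q coversD by auto
  then have Qb: "q \<in> carrier ?Q" "\<forall>y\<in>carrier ?Q. (q,y) \<in> ord ?Q"
    using qb by (auto simp: remove_elem_def)
  have nQ: "nullity ?Q = int (card (cover_edges ?Q)) - int (card (carrier ?Q)) + 1"
    using Q.nullity_bot[OF Qb] .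
  have cQ: "card (carrier ?Q) = card Cr - 1" using b fin by (simp add: remove_elem_def)
  have EQ: "cover_edges ?Q = cover_edges P - {(b,q)}"
  proof (rule set_eqI, clarify)
    fix u v
    show "(u,v) \<in> cover_edges ?Q \<longleftrightarrow> (u,v) \<in> cover_edges P - {(b,q)}"
    proof
      assume "(u,v) \<in> cover_edges ?Q"
      then have c': "u \<noteq> b \<and> v \<noteq> b \<and> u \<in> Cr \<and> v \<in> Cr \<and> lq u v \<and> u \<noteq> v \<and>
        \<not>(\<exists>z. z \<noteq> b \<and> z \<in> Cr \<and> lq u z \<and> lq z v \<and> z \<noteq> u \<and> z \<noteq> v)"
        by (simp add: cover_edges_def covers_rem)
      have "\<not>(\<exists>z. lq u z \<and> lq z v \<and> z \<noteq> u \<and> z \<noteq> v)"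
      proof
        assume "\<exists>z. lq u z \<and> lq z v \<and> z \<noteq> u \<and> z \<noteq> v"
        then obtain z where z: "lq u z" "lq z v" "z \<noteq> u" "z \<noteq> v" by blast
        show False
        proof (cases "z = b")
          case True then have "lq u b" using z by simp
          then have "u = b" using b c' antisym by blast
          then show False using c' by simp
        next
          case False then show False using c' z ordD by blast
        qed
      qed
      then have "covers P u v" unfolding covers_def using c' by blast
      then show "(u,v) \<in> cover_edges P - {(b,q)}" using c' by (auto simp: cover_edges_def)
    next
      assume a: "(u,v) \<in> cover_edges P - {(b,q)}"
      then have c: "covers P u v" by (simp add: cover_edges_def)
      have "u \<noteq> b" using a c di_up_unique[OF di _ q] by (auto simp: cover_edges_def)
      moreover have "v \<noteq> b" using c b coversD antisym by blast
      moreover have "lq u v" "u \<noteq> v" "u \<in> Cr" "v \<in> Cr" using coversD[OF c] by auto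
      moreover have "\<not>(\<exists>z. z \<noteq> b \<and> z \<in> Cr \<and> lq u z \<and> lq z v \<and> z \<noteq> u \<and> z \<noteq> v)"
        using c unfolding covers_def by blast
      ultimately show "(u,v) \<in> cover_edges ?Q" by (simp add: cover_edges_def covers_rem)
    qed
  qed
  have fE: "finite (cover_edges P)" by (rule fin_edges)
  have inE: "(b,q) \<in> cover_edges P" using q by (auto simp: cover_edges_def)
  have "card (cover_edges ?Q) = card (cover_edges P) - 1" using EQ inE fE by simp
  moreover have "card (cover_edges P) \<ge> 1" using inE fE by (metis One_nat_def Suc_leI card_gt_0_iff empty_iff)
  moreover have "card Cr \<ge> 1" using b fin by (metis One_nat_def Suc_leI card_gt_0_iff empty_iff)
  ultimately show ?thesis using nQ cQ nullity_lat by (auto simp: of_nat_diff)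
qed

lemma rem_top:
  assumes b: "b \<in> Cr" "\<forall>y\<in>Cr. lq y b" and di: "doubly_irreducible P b" and c2: "card Cr \<ge> 2"
  shows "nullity (remove_elem P b) = nullity P"
proof -
  let ?Q = "remove_elem P b"
  interpret Q: fpos ?Q by (rule fpos.intro, rule finite_poset_remove[OF fp])
  obtain y where y: "y \<in> Cr" "y \<noteq> b"
  proof -
    have "Cr - {b} \<noteq> {}"
    proof
      assume "Cr - {b} = {}"
      then have "Cr \<subseteq> {b}" by blast
      then have "card Cr \<le> 1" using card_mono[of "{b}" Cr] by simp
      then show False using c2 by simp
    qed
    then show ?thesis using that by blast
  qed
  obtain q where q: "covers P q b" using lower_cover[of y b] b y by blast
  have qC: "q \<in> Cr" "q \<noteq> b" using q coversD by auto
  obtain b0 where b0: "b0 \<in> Cr" "\<forall>x\<in>Cr. lq b0 x" using bot_ex by blast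
  have "b0 \<noteq> b" using b0 b qC antisym by blast
  then have Qb: "b0 \<in> carrier ?Q" "\<forall>y\<in>carrier ?Q. (b0,y) \<in> ord ?Q"
    using b0 by (auto simp: remove_elem_def)
  have nQ: "nullity ?Q = int (card (cover_edges ?Q)) - int (card (carrier ?Q)) + 1"
    using Q.nullity_bot[OF Qb] .
  have cQ: "card (carrier ?Q) = card Cr - 1" using b fin by (simp add: remove_elem_def)
  have EQ: "cover_edges ?Q = cover_edges P - {(q,b)}"
  proof (rule set_eqI, clarify)
    fix u v
    show "(u,v) \<in> cover_edges ?Q \<longleftrightarrow> (u,v) \<in> cover_edges P - {(q,b)}"
    proof
      assume "(u,v) \<in> cover_edges ?Q"
      then have c': "u \<noteq> b \<and> v \<noteq> b \<and> u \<in> Cr \<and> v \<in> Cr \<and> lq u v \<and> u \<noteq> v \<and>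
        \<not>(\<exists>z. z \<noteq> b \<and> z \<in> Cr \<and> lq u z \<and> lq z v \<and> z \<noteq> u \<and> z \<noteq> v)"
        by (simp add: cover_edges_def covers_rem)
      have "\<not>(\<exists>z. lq u z \<and> lq z v \<and> z \<noteq> u \<and> z \<noteq> v)"
      proof
        assume "\<exists>z. lq u z \<and> lq z v \<and> z \<noteq> u \<and> z \<noteq> v"
        then obtain z where z: "lq u z" "lq z v" "z \<noteq> u" "z \<noteq> v" by blast
        show False
        proof (cases "z = b")
          case True then have "lq b v" using z by simp
          then have "v = b" using b c' antisym by blast
          then show False using c' by simp
        next
          case False then show False using c' z ordD by blast
        qed
      qed
      then have "covers P u v" unfolding covers_def using c' by blast
      then show "(u,v) \<in> cover_edges P - {(q,b)}" using c' by (auto simp: cover_edges_def)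
    next
      assume a: "(u,v) \<in> cover_edges P - {(q,b)}"
      then have c: "covers P u v" by (simp add: cover_edges_def)
      have "v \<noteq> b" using a c di_low_unique[OF di _ q] by (auto simp: cover_edges_def)
      moreover have "u \<noteq> b" using c b coversD antisym by blast
      moreover have "lq u v" "u \<noteq> v" "u \<in> Cr" "v \<in> Cr" using coversD[OF c] by auto
      moreover have "\<not>(\<exists>z. z \<noteq> b \<and> z \<in> Cr \<and> lq u z \<and> lq z v \<and> z \<noteq> u \<and> z \<noteq> v)"
        using c unfolding covers_def by blast
      ultimately show "(u,v) \<in> cover_edges ?Q" by (simp add: cover_edges_def covers_rem)
    qed
  qed
  have fE: "finite (cover_edges P)" by (rule fin_edges)
  have inE: "(q,b) \<in> cover_edges P" using q by (auto simp: cover_edges_def)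
  have "card (cover_edges ?Q) = card (cover_edges P) - 1" using EQ inE fE by simp
  moreover have "card (cover_edges P) \<ge> 1" using inE fE by (metis One_nat_def Suc_leI card_gt_0_iff empty_iff)
  moreover have "card Cr \<ge> 1" using b fin by (metis One_nat_def Suc_leI card_gt_0_iff empty_iff)
  ultimately show ?thesis using nQ cQ nullity_lat by (auto simp: of_nat_diff)
qed

end




lemma (in flat) chain_edges:
  assumes tot: "\<forall>x\<in>Cr. \<forall>y\<in>Cr. lq x y \<or> lq y x"
  shows "card (cover_edges P) = card Cr - 1"
proof -
  obtain t where t: "t \<in> Cr" "\<forall>x\<in>Cr. lq x t" using top_ex by blast
  have inj: "inj_on fst (cover_edges P)"
  proof (rule inj_onI, clarify)
    fix x y x' y' assume e: "(x,y) \<in> cover_edges P" "(x',y') \<in> cover_edges P" "fst (x,y) = fst (x',y')"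
    then have c: "covers P x y" "covers P x y'" by (auto simp: cover_edges_def)
    then have cc: "y \<in> Cr" "y' \<in> Cr" "lq x y" "lq x y'" "x \<noteq> y" "x \<noteq> y'" using coversD by auto
    have "y = y'"
    proof (cases "lq y y'")
      case True then show ?thesis using c(2) cc unfolding covers_def by blast
    next
      case False then have "lq y' y" using tot cc by blast
      then show ?thesis using c(1) cc unfolding covers_def by blast
    qed
    then show "x = x' \<and> y = y'" using e by simp
  qed
  have img: "fst ` cover_edges P = Cr - {t}"
  proof
    show "fst ` cover_edges P \<subseteq> Cr - {t}"
    proof clarify
      fix x y assume "(x,y) \<in> cover_edges P"
      then have c: "covers P x y" by (simp add: cover_edges_def)
      then have "x \<in> Cr" "y \<in> Cr" "lq x y" "x \<noteq> y" using coversD by auto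
      moreover have "x \<noteq> t" using calculation t antisym by blast
      ultimately show "fst (x,y) \<in> Cr - {t}" by simp
    qed
    show "Cr - {t} \<subseteq> fst ` cover_edges P"
    proof
      fix x assume x: "x \<in> Cr - {t}"
      then obtain z where "covers P x z" using upper_cover[of x t] t by blast
      then have "(x,z) \<in> cover_edges P" by (simp add: cover_edges_def)
      then show "x \<in> fst ` cover_edges P" by force
    qed
  qed
  have "card (cover_edges P) = card (fst ` cover_edges P)" using card_image[OF inj] by simp
  also have "\<dots> = card Cr - 1" using img t fin by simp
  finally show ?thesis .
qed

lemma (in flat) chain_nullity:
  assumes tot: "\<forall>x\<in>Cr. \<forall>y\<in>Cr. lq x y \<or> lq y x"
  shows "nullity P = 0"
proof -
  have "card Cr \<ge> 1" using nonempty fin by (metis One_nat_def Suc_leI card_gt_0_iff)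
  then show ?thesis using nullity_lat chain_edges[OF tot] by (simp add: of_nat_diff)
qed

locale adjstep = K: flat K + D: flat D for K D +
  fixes a b :: nat
  assumes tot: "\<forall>x\<in>carrier D. \<forall>y\<in>carrier D. (x,y) \<in> ord D \<or> (y,x) \<in> ord D"
  and disj: "carrier K \<inter> carrier D = {}"
  and aK: "a \<in> carrier K" and bK: "b \<in> carrier K" and ab: "(a,b) \<in> ord K" "a \<noteq> b"
  and nc: "\<not> covers K a b"
begin

abbreviation "K' \<equiv> adjunct K a b D"
abbreviation "lq' x y \<equiv> (x,y) \<in> ord K'"

lemma cK': "carrier K' = carrier K \<union> carrier D" by (simp add: adjunct_def)

lemma oKK: "x \<in> carrier K \<Longrightarrow> y \<in> carrier K \<Longrightarrow> lq' x y \<longleftrightarrow> K.lq x y"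
  using disj D.ordD by (auto simp: adjunct_def)
lemma oDD: "x \<in> carrier D \<Longrightarrow> y \<in> carrier D \<Longrightarrow> lq' x y \<longleftrightarrow> D.lq x y"
  using disj K.ordD by (auto simp: adjunct_def)
lemma oKD: "x \<in> carrier K \<Longrightarrow> y \<in> carrier D \<Longrightarrow> lq' x y \<longleftrightarrow> K.lq x a"
  using disj K.ordD D.ordD by (auto simp: adjunct_def)
lemma oDK: "x \<in> carrier D \<Longrightarrow> y \<in> carrier K \<Longrightarrow> lq' x y \<longleftrightarrow> K.lq b y"
  using disj K.ordD D.ordD by (auto simp: adjunct_def)
lemma o_sub: "lq' x y \<Longrightarrow> x \<in> carrier K' \<and> y \<in> carrier K'"
  using K.ordD D.ordD aK bK by (auto simp: adjunct_def)

lemma cov_KK: assumes "u \<in> carrier K" "v \<in> carrier K" shows "covers K' u v \<longleftrightarrow> covers K u v"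
proof
  assume c: "covers K' u v"
  show "covers K u v" unfolding covers_def
  proof (intro conjI)
    show "K.lq u v" using c assms oKK by (auto simp: covers_def)
    show "u \<noteq> v" using c by (auto simp: covers_def)
    show "\<not> (\<exists>z. K.lq u z \<and> K.lq z v \<and> z \<noteq> u \<and> z \<noteq> v)"
    proof
      assume "\<exists>z. K.lq u z \<and> K.lq z v \<and> z \<noteq> u \<and> z \<noteq> v"
      then obtain z where z: "K.lq u z" "K.lq z v" "z \<noteq> u" "z \<noteq> v" by blast
      then have "z \<in> carrier K" using K.ordD by blast
      then have "lq' u z" "lq' z v" using z assms oKK by auto
      then show False using c z unfolding covers_def by blast
    qed
  qed
next
  assume c: "covers K u v"
  then have uv: "K.lq u v" "u \<noteq> v" using K.coversD by auto
  show "covers K' u v" unfolding covers_def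
  proof (intro conjI)
    show "lq' u v" using uv assms oKK by auto
    show "u \<noteq> v" by fact
    show "\<not> (\<exists>z. lq' u z \<and> lq' z v \<and> z \<noteq> u \<and> z \<noteq> v)"
    proof
      assume "\<exists>z. lq' u z \<and> lq' z v \<and> z \<noteq> u \<and> z \<noteq> v"
      then obtain z where z: "lq' u z" "lq' z v" "z \<noteq> u" "z \<noteq> v" by blast
      then have "z \<in> carrier K \<or> z \<in> carrier D" using o_sub cK' by blast
      then show False
      proof
        assume "z \<in> carrier K"
        then have "K.lq u z" "K.lq z v" using z assms oKK by auto
        then show False using c z unfolding covers_def by blast
      next
        assume zD: "z \<in> carrier D"
        then have ua: "K.lq u a" and bv: "K.lq b v" using z assms oKD oDK by auto
        have av: "K.lq a v" using ab bv K.trans by blast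
        have ub: "K.lq u b" using ab ua K.trans by blast
        have "a = u \<or> a = v" using c ua av unfolding covers_def by blast
        moreover have "b = u \<or> b = v" using c ub bv unfolding covers_def by blast
        ultimately have "a = u \<and> b = v"
          using ab uv K.antisym by metis
        then show False using c nc by simp
      qed
    qed
  qed
qed

lemma cov_DD: assumes "u \<in> carrier D" "v \<in> carrier D" shows "covers K' u v \<longleftrightarrow> covers D u v"
proof
  assume c: "covers K' u v"
  show "covers D u v" unfolding covers_def
  proof (intro conjI)
    show "D.lq u v" using c assms oDD by (auto simp: covers_def)
    show "u \<noteq> v" using c by (auto simp: covers_def)
    show "\<not> (\<exists>z. D.lq u z \<and> D.lq z v \<and> z \<noteq> u \<and> z \<noteq> v)"
    proof
      assume "\<exists>z. D.lq u z \<and> D.lq z v \<and> z \<noteq> u \<and> z \<noteq> v"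
      then obtain z where z: "D.lq u z" "D.lq z v" "z \<noteq> u" "z \<noteq> v" by blast
      then have "z \<in> carrier D" using D.ordD by blast
      then have "lq' u z" "lq' z v" using z assms oDD by auto
      then show False using c z unfolding covers_def by blast
    qed
  qed
next
  assume c: "covers D u v"
  then have uv: "D.lq u v" "u \<noteq> v" using D.coversD by auto
  show "covers K' u v" unfolding covers_def
  proof (intro conjI)
    show "lq' u v" using uv assms oDD by auto
    show "u \<noteq> v" by fact
    show "\<not> (\<exists>z. lq' u z \<and> lq' z v \<and> z \<noteq> u \<and> z \<noteq> v)"
    proof
      assume "\<exists>z. lq' u z \<and> lq' z v \<and> z \<noteq> u \<and> z \<noteq> v"
      then obtain z where z: "lq' u z" "lq' z v" "z \<noteq> u" "z \<noteq> v" by blast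
      then have "z \<in> carrier K \<or> z \<in> carrier D" using o_sub cK' by blast
      then show False
      proof
        assume zK: "z \<in> carrier K"
        then have "K.lq b z" "K.lq z a" using z assms oKD oDK by auto
        then have "K.lq b a" using K.trans by blast
        then show False using ab K.antisym by blast
      next
        assume "z \<in> carrier D"
        then have "D.lq u z" "D.lq z v" using z assms oDD by auto
        then show False using c z unfolding covers_def by blast
      qed
    qed
  qed
qed

lemma cov_KD: assumes u: "u \<in> carrier K" and v: "v \<in> carrier D"
  shows "covers K' u v \<longleftrightarrow> u = a \<and> (\<forall>d\<in>carrier D. D.lq v d)"
proof
  assume c: "covers K' u v"
  then have ua: "K.lq u a" using oKD u v by (auto simp: covers_def)
  have "u = a"
  proof (rule ccontr)
    assume "u \<noteq> a"
    moreover have "lq' u a" using ua u aK oKK by auto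
    moreover have "lq' a v" using aK v oKD K.refl by auto
    moreover have "a \<noteq> v" using aK v disj by auto
    ultimately show False using c unfolding covers_def by blast
  qed
  moreover have "\<forall>d\<in>carrier D. D.lq v d"
  proof
    fix d assume d: "d \<in> carrier D"
    show "D.lq v d"
    proof (rule ccontr)
      assume "\<not> D.lq v d"
      then have "D.lq d v" "d \<noteq> v" using tot d v D.refl by auto
      moreover have "lq' u d" using d u oKD ua by auto
      moreover have "d \<noteq> u" using d u disj by auto
      ultimately show False using c d v oDD unfolding covers_def by blast
    qed
  qed
  ultimately show "u = a \<and> (\<forall>d\<in>carrier D. D.lq v d)" by blast
next
  assume h: "u = a \<and> (\<forall>d\<in>carrier D. D.lq v d)"
  show "covers K' u v" unfolding covers_def
  proof (intro conjI)
    show "lq' u v" using h u v oKD K.refl by auto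
    show "u \<noteq> v" using u v disj by auto
    show "\<not> (\<exists>z. lq' u z \<and> lq' z v \<and> z \<noteq> u \<and> z \<noteq> v)"
    proof
      assume "\<exists>z. lq' u z \<and> lq' z v \<and> z \<noteq> u \<and> z \<noteq> v"
      then obtain z where z: "lq' u z" "lq' z v" "z \<noteq> u" "z \<noteq> v" by blast
      then have "z \<in> carrier K \<or> z \<in> carrier D" using o_sub cK' by blast
      then show False
      proof
        assume zK: "z \<in> carrier K"
        then have "K.lq z a" "K.lq a z" using z u v h oKD oKK by auto
        then show False using K.antisym z h by blast
      next
        assume zD: "z \<in> carrier D"
        then have "D.lq z v" using z v oDD by auto
        moreover have "D.lq v z" using h zD by blast
        ultimately show False using D.antisym z by blast
      qed
    qed
  qed
qed

lemma cov_DK: assumes u: "u \<in> carrier D" and v: "v \<in> carrier K"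
  shows "covers K' u v \<longleftrightarrow> v = b \<and> (\<forall>d\<in>carrier D. D.lq d u)"
proof
  assume c: "covers K' u v"
  then have bv: "K.lq b v" using oDK u v by (auto simp: covers_def)
  have "v = b"
  proof (rule ccontr)
    assume "v \<noteq> b"
    moreover have "lq' b v" using bv v bK oKK by auto
    moreover have "lq' u b" using bK u oDK K.refl by auto
    moreover have "b \<noteq> u" using bK u disj by auto
    ultimately show False using c unfolding covers_def by blast
  qed
  moreover have "\<forall>d\<in>carrier D. D.lq d u"
  proof
    fix d assume d: "d \<in> carrier D"
    show "D.lq d u"
    proof (rule ccontr)
      assume "\<not> D.lq d u"
      then have "D.lq u d" "d \<noteq> u" using tot d u D.refl by auto
      moreover have "lq' d v" using d v oDK bv by auto
      moreover have "d \<noteq> v" using d v disj by auto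
      ultimately show False using c d u oDD unfolding covers_def by blast
    qed
  qed
  ultimately show "v = b \<and> (\<forall>d\<in>carrier D. D.lq d u)" by blast
next
  assume h: "v = b \<and> (\<forall>d\<in>carrier D. D.lq d u)"
  show "covers K' u v" unfolding covers_def
  proof (intro conjI)
    show "lq' u v" using h u v oDK K.refl by auto
    show "u \<noteq> v" using u v disj by auto
    show "\<not> (\<exists>z. lq' u z \<and> lq' z v \<and> z \<noteq> u \<and> z \<noteq> v)"
    proof
      assume "\<exists>z. lq' u z \<and> lq' z v \<and> z \<noteq> u \<and> z \<noteq> v"
      then obtain z where z: "lq' u z" "lq' z v" "z \<noteq> u" "z \<noteq> v" by blast
      then have "z \<in> carrier K \<or> z \<in> carrier D" using o_sub cK' by blast
      then show False
      proof
        assume zK: "z \<in> carrier K"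
        then have "K.lq z b" "K.lq b z" using z u v h oDK oKK by auto
        then show False using K.antisym z h by blast
      next
        assume zD: "z \<in> carrier D"
        then have "D.lq u z" using z u oDD by auto
        moreover have "D.lq z u" using h zD by blast
        ultimately show False using D.antisym z by blast
      qed
    qed
  qed
qed

lemma edges_eq:
  assumes d0: "d0 \<in> carrier D" "\<forall>x\<in>carrier D. D.lq d0 x"
  and d1: "d1 \<in> carrier D" "\<forall>x\<in>carrier D. D.lq x d1"
  shows "cover_edges K' = cover_edges K \<union> cover_edges D \<union> {(a,d0), (d1,b)}"
proof (rule set_eqI, clarify)
  fix u v
  have least: "(\<forall>d\<in>carrier D. D.lq v d) \<longleftrightarrow> v = d0" if "v \<in> carrier D" for v
    using d0 that D.antisym by blast
  have greatest: "(\<forall>d\<in>carrier D. D.lq d u) \<longleftrightarrow> u = d1" if "u \<in> carrier D" for u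
    using d1 that D.antisym by blast
  show "(u,v) \<in> cover_edges K' \<longleftrightarrow> (u,v) \<in> cover_edges K \<union> cover_edges D \<union> {(a,d0), (d1,b)}"
  proof
    assume "(u,v) \<in> cover_edges K'"
    then have c: "covers K' u v" by (simp add: cover_edges_def)
    then have "u \<in> carrier K \<union> carrier D" "v \<in> carrier K \<union> carrier D"
      using o_sub cK' unfolding covers_def by blast+
    then show "(u,v) \<in> cover_edges K \<union> cover_edges D \<union> {(a,d0), (d1,b)}"
      using c cov_KK cov_DD cov_KD cov_DK least greatest by (auto simp: cover_edges_def)
  next
    assume h: "(u,v) \<in> cover_edges K \<union> cover_edges D \<union> {(a,d0), (d1,b)}"
    then consider "covers K u v" | "covers D u v" | "u = a" "v = d0" | "u = d1" "v = b"
      by (auto simp: cover_edges_def)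
    then have "covers K' u v"
    proof cases
      case 1 then show ?thesis using cov_KK K.coversD by blast
    next
      case 2 then show ?thesis using cov_DD D.coversD by blast
    next
      case 3 then show ?thesis using cov_KD aK d0 by blast
    next
      case 4 then show ?thesis using cov_DK bK d1 by blast
    qed
    then show "(u,v) \<in> cover_edges K'" by (simp add: cover_edges_def)
  qed
qed

lemma nullity_step: assumes L': "finite_lattice K'" shows "nullity K' = nullity K + 1"
proof -
  interpret L: flat K' by (unfold_locales) (use L' in \<open>simp_all add: finite_lattice_def\<close>)
  obtain d0 where d0: "d0 \<in> carrier D" "\<forall>x\<in>carrier D. D.lq d0 x" using D.bot_ex by blast
  obtain d1 where d1: "d1 \<in> carrier D" "\<forall>x\<in>carrier D. D.lq x d1" using D.top_ex by blast
  have E: "cover_edges K' = cover_edges K \<union> cover_edges D \<union> {(a,d0), (d1,b)}"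
    by (rule edges_eq[OF d0 d1])
  have sK: "cover_edges K \<subseteq> carrier K \<times> carrier K" using K.coversD by (auto simp: cover_edges_def)
  have sD: "cover_edges D \<subseteq> carrier D \<times> carrier D" using D.coversD by (auto simp: cover_edges_def)
  have fK: "finite (cover_edges K)" by (rule K.fin_edges)
  have fD: "finite (cover_edges D)" by (rule D.fin_edges)
  have dis1: "cover_edges K \<inter> cover_edges D = {}" using sK sD disj by blast
  have n1: "(a,d0) \<notin> cover_edges K \<union> cover_edges D" using sK sD disj d0 aK by blast
  have n2: "(d1,b) \<notin> insert (a,d0) (cover_edges K \<union> cover_edges D)" using sK sD disj d1 bK aK by blast
  have "card (cover_edges K') = card (cover_edges K) + card (cover_edges D) + 2"
  proof -
    have "cover_edges K' = insert (d1,b) (insert (a,d0) (cover_edges K \<union> cover_edges D))" using E by auto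
    then show ?thesis using n1 n2 fK fD dis1 by (simp add: card_Un_disjoint)
  qed
  moreover have "card (cover_edges D) = card (carrier D) - 1" using D.chain_edges tot by blast
  moreover have "card (carrier D) \<ge> 1" using D.nonempty D.fin by (metis One_nat_def Suc_leI card_gt_0_iff)
  moreover have "card (carrier K') = card (carrier K) + card (carrier D)"
    using cK' disj K.fin D.fin by (simp add: card_Un_disjoint)
  ultimately show ?thesis using L.nullity_lat K.nullity_lat by (simp add: of_nat_diff)
qed

end

lemma adjunct_list_append: "adjunct_list L (xs @ ys) = adjunct_list (adjunct_list L xs) ys"
proof (induction xs arbitrary: L)
  case Nil then show ?case by simp
next
  case (Cons x xs) then show ?case by (cases x) simp
qed

lemma valid_append: "valid_adjunct_list L (xs @ ys) \<longleftrightarrow> valid_adjunct_list L xs \<and> valid_adjunct_list (adjunct_list L xs) ys"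
proof (induction xs arbitrary: L)
  case Nil then show ?case by simp
next
  case (Cons x xs) then show ?case by (cases x) auto
qed

lemma flat_of_lat: "finite_lattice P \<Longrightarrow> flat P"
  by (unfold_locales) (simp_all add: finite_lattice_def)

lemma adjstep_of_valid:
  assumes "finite_lattice L" "is_chain C" "carrier L \<inter> carrier C = {}" "a \<in> carrier L" "b \<in> carrier L"
    "(a,b) \<in> ord L" "a \<noteq> b" "\<not> covers L a b"
  shows "adjstep L C a b"
  using assms unfolding adjstep_def adjstep_axioms_def is_chain_def
  by (auto intro: flat_of_lat)

lemma nullity_list:
  "valid_adjunct_list P xs \<Longrightarrow> finite_lattice P \<Longrightarrow> finite_lattice (adjunct_list P xs)
    \<Longrightarrow> nullity (adjunct_list P xs) = nullity P + int (length xs)"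
proof (induction xs arbitrary: P)
  case Nil then show ?case by simp
next
  case (Cons x xs)
  obtain a b C where x: "x = (a,b,C)" by (cases x)
  let ?P' = "adjunct P a b C"
  have v: "finite_lattice P" "is_chain C" "carrier P \<inter> carrier C = {}" "a \<in> carrier P" "b \<in> carrier P"
    "(a,b) \<in> ord P" "a \<noteq> b" "\<not> covers P a b" "valid_adjunct_list ?P' xs"
    using Cons.prems x by auto
  interpret S: adjstep P C a b by (rule adjstep_of_valid) (use v in auto)
  have L': "finite_lattice ?P'"
  proof (cases xs)
    case Nil then show ?thesis using Cons.prems x by simp
  next
    case (Cons y ys) then show ?thesis using v(9) by (cases y) auto
  qed
  have "nullity (adjunct_list ?P' xs) = nullity ?P' + int (length xs)"
    using Cons.IH v(9) L' Cons.prems x by simp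
  then show ?case using S.nullity_step[OF L'] x by simp
qed




definition btw :: "poset \<Rightarrow> nat \<Rightarrow> nat \<Rightarrow> nat \<Rightarrow> bool" where
  "btw P a b z \<longleftrightarrow> (a,z) \<in> ord P \<and> (z,b) \<in> ord P \<and> z \<noteq> a \<and> z \<noteq> b"

definition colinv :: "poset \<Rightarrow> nat \<Rightarrow> nat \<Rightarrow> (nat \<Rightarrow> nat) \<Rightarrow> bool" where
  "colinv P a b col \<longleftrightarrow> (\<forall>z w. btw P a b z \<and> btw P a b w \<and> col z \<noteq> col w \<longrightarrow> (z,w) \<notin> ord P)
     \<and> (\<exists>z w. btw P a b z \<and> btw P a b w \<and> col z \<noteq> col w)"

context adjstep
begin

lemma btw_old: "z \<in> carrier K \<Longrightarrow> a0 \<in> carrier K \<Longrightarrow> b0 \<in> carrier K \<Longrightarrow> btw K' a0 b0 z \<longleftrightarrow> btw K a0 b0 z"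
  unfolding btw_def using oKK by auto

lemma btw_new: "z \<in> carrier D \<Longrightarrow> a0 \<in> carrier K \<Longrightarrow> b0 \<in> carrier K \<Longrightarrow> btw K' a0 b0 z \<longleftrightarrow> K.lq a0 a \<and> K.lq b b0"
  unfolding btw_def using oKD oDK disj by auto

lemma btw_car: "btw K' a0 b0 z \<Longrightarrow> z \<in> carrier K \<or> z \<in> carrier D"
  unfolding btw_def using o_sub cK' by blast

lemma colinv_step:
  assumes ci: "colinv K a0 b0 col"
  shows "colinv K' a0 b0 (\<lambda>z. if z \<in> carrier D then (if btw K a0 b0 a then col a else col b) else col z)"
    (is "colinv K' a0 b0 ?col")
proof -
  obtain z0 w0 where zw0: "btw K a0 b0 z0" "btw K a0 b0 w0" "col z0 \<noteq> col w0" using ci by (auto simp: colinv_def)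
  have a0K: "a0 \<in> carrier K" and b0K: "b0 \<in> carrier K" using zw0 K.ordD by (auto simp: btw_def)
  have ci2: "\<And>z w. btw K a0 b0 z \<Longrightarrow> btw K a0 b0 w \<Longrightarrow> K.lq z w \<Longrightarrow> col z = col w"
    using ci by (auto simp: colinv_def)
  have main: "\<not> lq' z w" if z: "btw K' a0 b0 z" and w: "btw K' a0 b0 w" and c: "?col z \<noteq> ?col w" for z w
  proof -
    consider "z \<in> carrier K" "w \<in> carrier K" | "z \<in> carrier D" "w \<in> carrier D"
      | "z \<in> carrier K" "w \<in> carrier D" | "z \<in> carrier D" "w \<in> carrier K"
      using btw_car z w by blast
    then show ?thesis
    proof cases
      case 1
      then have "btw K a0 b0 z" "btw K a0 b0 w" using z w btw_old a0K b0K by auto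
      moreover have "z \<notin> carrier D" "w \<notin> carrier D" using 1 disj by auto
      moreover have "col z \<noteq> col w" using c calculation(3,4) by simp
      ultimately show ?thesis using ci2 oKK 1 by metis
    next
      case 2 then show ?thesis using c by simp
    next
      case 3
      have zb: "btw K a0 b0 z" using z 3 btw_old a0K b0K by auto
      have wn: "K.lq a0 a" "K.lq b b0" using w 3 btw_new a0K b0K by auto
      show ?thesis
      proof
        assume "lq' z w"
        then have za: "K.lq z a" using oKD 3 by auto
        have ab0: "K.lq a b0" using ab wn K.trans by blast
        have "a \<noteq> a0" using za zb K.antisym unfolding btw_def by blast
        moreover have "a \<noteq> b0" using ab wn K.antisym by blast
        ultimately have ba: "btw K a0 b0 a" using wn ab0 unfolding btw_def by blast
        then have "col z = col a" using ci2 zb za by blast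
        moreover have "z \<notin> carrier D" using 3 disj by auto
        ultimately show False using c 3 ba by simp
      qed
    next
      case 4
      have wb: "btw K a0 b0 w" using w 4 btw_old a0K b0K by auto
      have zn: "K.lq a0 a" "K.lq b b0" using z 4 btw_new a0K b0K by auto
      show ?thesis
      proof
        assume "lq' z w"
        then have bw: "K.lq b w" using oDK 4 by auto
        have a0b: "K.lq a0 b" using ab zn K.trans by blast
        have "b \<noteq> b0" using bw wb K.antisym unfolding btw_def by blast
        moreover have "b \<noteq> a0" using ab zn K.antisym by blast
        ultimately have bb: "btw K a0 b0 b" using zn a0b unfolding btw_def by blast
        then have cb: "col w = col b" using ci2 wb bw by metis
        have "btw K a0 b0 a \<Longrightarrow> col a = col b" using ci2 bb ab by blast
        moreover have "w \<notin> carrier D" using 4 disj by auto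
        ultimately show False using c 4 cb by (auto split: if_splits)
      qed
    qed
  qed
  have "z0 \<in> carrier K" "w0 \<in> carrier K" using zw0 K.ordD unfolding btw_def by auto
  then have "btw K' a0 b0 z0" "btw K' a0 b0 w0" using zw0 btw_old a0K b0K by auto
  moreover have "?col z0 \<noteq> ?col w0" using zw0 disj K.ordD unfolding btw_def by auto
  ultimately show ?thesis unfolding colinv_def using main by blast
qed

lemma colinv_init: "colinv K' a b (\<lambda>z. if z \<in> carrier D then 1 else 0)"
proof -
  obtain y where y: "K.lq a y" "K.lq y b" "y \<noteq> a" "y \<noteq> b" using nc ab unfolding covers_def by blast
  then have yK: "y \<in> carrier K" using K.ordD by blast
  obtain c where c: "c \<in> carrier D" using D.nonempty by blast
  have "btw K' a b y" using y yK btw_old aK bK unfolding btw_def by auto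
  moreover have "btw K' a b c" using c btw_new aK bK K.refl by auto
  moreover have "y \<notin> carrier D" using yK disj by auto
  moreover have main: "\<not> lq' z w" if z: "btw K' a b z" and w: "btw K' a b w"
    and cc: "(if z \<in> carrier D then 1 else 0::nat) \<noteq> (if w \<in> carrier D then 1 else 0)" for z w
  proof -
    consider "z \<in> carrier K" "w \<in> carrier D" | "z \<in> carrier D" "w \<in> carrier K"
      using btw_car z w cc by (auto split: if_splits)
    then show ?thesis
    proof cases
      case 1
      then have "K.lq a z" "z \<noteq> a" using z oKK aK unfolding btw_def by auto
      then show ?thesis using oKD 1 K.antisym by blast
    next
      case 2
      then have "K.lq w b" "w \<noteq> b" using w oKK bK unfolding btw_def by auto
      then show ?thesis using oDK 2 K.antisym by blast
    qed
  qed
  ultimately show ?thesis unfolding colinv_def using c by (metis one_neq_zero)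
qed

end

lemma colinv_list:
  "valid_adjunct_list P xs \<Longrightarrow> colinv P a0 b0 col \<Longrightarrow> \<exists>col'. colinv (adjunct_list P xs) a0 b0 col'"
proof (induction xs arbitrary: P col)
  case Nil then show ?case by auto
next
  case (Cons x xs)
  obtain a b C where x: "x = (a,b,C)" by (cases x)
  have v: "finite_lattice P" "is_chain C" "carrier P \<inter> carrier C = {}" "a \<in> carrier P" "b \<in> carrier P"
    "(a,b) \<in> ord P" "a \<noteq> b" "\<not> covers P a b" "valid_adjunct_list (adjunct P a b C) xs"
    using Cons.prems x by auto
  interpret S: adjstep P C a b by (rule adjstep_of_valid) (use v in auto)
  have "colinv (adjunct P a b C) a0 b0
     (\<lambda>z. if z \<in> carrier C then (if btw P a0 b0 a then col a else col b) else col z)"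
    using S.colinv_step Cons.prems(2) by blast
  then show ?case using Cons.IH v(9) x by auto
qed

lemma pair_colinv:
  assumes v: "valid_adjunct_list C0 xs" and m: "(a,b,C) \<in> set xs"
  shows "\<exists>col. colinv (adjunct_list C0 xs) a b col"
proof -
  obtain ys zs where xs: "xs = ys @ (a,b,C) # zs" using split_list[OF m] by blast
  let ?K = "adjunct_list C0 ys"
  have v2: "valid_adjunct_list ?K ((a,b,C) # zs)" using v xs valid_append by blast
  then have vv: "finite_lattice ?K" "is_chain C" "carrier ?K \<inter> carrier C = {}" "a \<in> carrier ?K" "b \<in> carrier ?K"
    "(a,b) \<in> ord ?K" "a \<noteq> b" "\<not> covers ?K a b" "valid_adjunct_list (adjunct ?K a b C) zs"
    by auto
  interpret S: adjstep ?K C a b by (rule adjstep_of_valid) (use vv in auto)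
  obtain col where "colinv (adjunct_list (adjunct ?K a b C) zs) a b col"
    using colinv_list[OF vv(9) S.colinv_init] by blast
  moreover have "adjunct_list C0 xs = adjunct_list (adjunct ?K a b C) zs"
    using xs adjunct_list_append by simp
  ultimately show ?thesis by auto
qed




definition xc :: "nat \<Rightarrow> nat \<Rightarrow> nat" where "xc i j = 3 * prod_encode (i,j) + 2"

definition lo3 :: "nat \<Rightarrow> nat" where
  "lo3 x = (if x mod 3 = 2 then fst (prod_decode (x div 3)) else x div 3)"
definition hi3 :: "nat \<Rightarrow> nat" where
  "hi3 x = (if x mod 3 = 0 then x div 3 else if x mod 3 = 1 then Suc (x div 3) else snd (prod_decode (x div 3)))"

lemma aux3: "(3*m+2) mod 3 = (2::nat)" "(3*m+2) div 3 = (m::nat)" by presburger+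

lemma lo3_R[simp]: "lo3 (3*i) = i" by (simp add: lo3_def)
lemma hi3_R[simp]: "hi3 (3*i) = i" by (simp add: hi3_def)
lemma lo3_c[simp]: "lo3 (3*i+1) = i" by (simp add: lo3_def)
lemma hi3_c[simp]: "hi3 (3*i+1) = Suc i" by (simp add: hi3_def)
lemma lo3_x[simp]: "lo3 (xc i j) = i" unfolding lo3_def xc_def aux3 by simp
lemma hi3_x[simp]: "hi3 (xc i j) = j" unfolding hi3_def xc_def aux3 by simp
lemma mod_R[simp]: "(3*i) mod 3 = (0::nat)" by simp
lemma mod_c[simp]: "(3*i+1) mod 3 = (1::nat)" by simp
lemma lo3_R'[simp]: "lo3 (3 + 3*i) = Suc i" using lo3_R[of "Suc i"] by simp
lemma hi3_R'[simp]: "hi3 (3 + 3*i) = Suc i" using hi3_R[of "Suc i"] by simp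
lemma mod_R'[simp]: "(3 + 3*i) mod 3 = (0::nat)" by presburger
lemma lo3_c'[simp]: "lo3 (Suc (3*i)) = i" using lo3_c by simp
lemma hi3_c'[simp]: "hi3 (Suc (3*i)) = Suc i" using hi3_c by simp
lemma mod_c'[simp]: "(Suc (3*i)) mod 3 = (1::nat)" by presburger
lemma mod_x[simp]: "xc i j mod 3 = 2" unfolding xc_def aux3 by simp
lemma xc_inj[simp]: "xc i j = xc i' j' \<longleftrightarrow> i = i' \<and> j = j'"
  by (auto simp: xc_def dest: arg_cong[where f = prod_decode])
lemma xc_ne_R[simp]: "xc i j \<noteq> 3*k" "3*k \<noteq> xc i j"
proof -
  show "xc i j \<noteq> 3*k"
  proof
    assume "xc i j = 3*k" then have "xc i j mod 3 = 0" by simp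
    then show False by simp
  qed
  then show "3*k \<noteq> xc i j" by metis
qed
lemma xc_ne_c[simp]: "xc i j \<noteq> 3*k+1" "3*k+1 \<noteq> xc i j"
proof -
  show "xc i j \<noteq> 3*k+1"
  proof
    assume "xc i j = 3*k+1" then have "xc i j mod 3 = 1" by simp
    then show False by simp
  qed
  then show "3*k+1 \<noteq> xc i j" by metis
qed
lemma xc_ne_c'[simp]: "xc i j \<noteq> Suc (3*k)" "Suc (3*k) \<noteq> xc i j" using xc_ne_c[of i j k] by simp_all
lemma xc_ne_R'[simp]: "xc i j \<noteq> 3 + 3*k" "3 + 3*k \<noteq> xc i j" using xc_ne_R[of i j "Suc k"] by simp_all
lemma c_ne_R[simp]: "3*k+1 \<noteq> 3*(i::nat)" "3*i \<noteq> 3*k+(1::nat)" by presburger+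

definition Scar :: "nat \<Rightarrow> nat set \<Rightarrow> nat set" where
  "Scar n A = {3*i | i. 1 \<le> i \<and> i \<le> n} \<union> A"
definition Sord :: "nat \<Rightarrow> nat set \<Rightarrow> (nat \<times> nat) set" where
  "Sord n A = {(x,y). x \<in> Scar n A \<and> y \<in> Scar n A \<and> (x = y \<or> hi3 x \<le> lo3 y)}"
definition S :: "nat \<Rightarrow> nat set \<Rightarrow> poset" where "S n A = (Scar n A, Sord n A)"

definition okA :: "nat \<Rightarrow> nat set \<Rightarrow> bool" where
  "okA n A \<longleftrightarrow> finite A \<and> (\<forall>x\<in>A. x mod 3 \<noteq> 0 \<and> 1 \<le> lo3 x \<and> lo3 x < hi3 x \<and> hi3 x \<le> n)"

lemma S_car[simp]: "carrier (S n A) = Scar n A" by (simp add: S_def)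
lemma S_ord[simp]: "ord (S n A) = Sord n A" by (simp add: S_def)

locale Sn =
  fixes n :: nat and A :: "nat set"
  assumes n1: "n \<ge> 1" and ok: "okA n A"
begin

lemma fA: "finite A" using ok by (simp add: okA_def)
lemma okx: "x \<in> A \<Longrightarrow> x mod 3 \<noteq> 0 \<and> 1 \<le> lo3 x \<and> lo3 x < hi3 x \<and> hi3 x \<le> n"
  using ok by (simp add: okA_def)

lemma le_iff: "(x,y) \<in> Sord n A \<longleftrightarrow> x \<in> Scar n A \<and> y \<in> Scar n A \<and> (x = y \<or> hi3 x \<le> lo3 y)"
  by (simp add: Sord_def)

lemma car_cases: "x \<in> Scar n A \<Longrightarrow> (\<exists>i. x = 3*i \<and> 1 \<le> i \<and> i \<le> n) \<or> x \<in> A"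
  by (auto simp: Scar_def)

lemma Rin: "1 \<le> i \<Longrightarrow> i \<le> n \<Longrightarrow> 3*i \<in> Scar n A" by (auto simp: Scar_def)
lemma Ain: "x \<in> A \<Longrightarrow> x \<in> Scar n A" by (auto simp: Scar_def)

lemma bounds: "x \<in> Scar n A \<Longrightarrow> 1 \<le> lo3 x \<and> lo3 x \<le> hi3 x \<and> hi3 x \<le> n"
  using car_cases okx by fastforce

lemma eq_R: "x \<in> Scar n A \<Longrightarrow> lo3 x = hi3 x \<Longrightarrow> x = 3 * lo3 x"
  using car_cases okx by fastforce

lemma A_iff: "x \<in> Scar n A \<Longrightarrow> x \<in> A \<longleftrightarrow> x mod 3 \<noteq> 0"
  using car_cases okx by fastforce

lemma finS: "finite (Scar n A)"
proof -
  have "{3*i | i. 1 \<le> i \<and> i \<le> n} = (\<lambda>i. 3*i) ` {1..n}" by auto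
  then show ?thesis using fA by (simp add: Scar_def)
qed

lemma antisymS: "x \<in> Scar n A \<Longrightarrow> y \<in> Scar n A \<Longrightarrow> hi3 x \<le> lo3 y \<Longrightarrow> hi3 y \<le> lo3 x \<Longrightarrow> x = y"
proof -
  assume a: "x \<in> Scar n A" "y \<in> Scar n A" "hi3 x \<le> lo3 y" "hi3 y \<le> lo3 x"
  then have "lo3 x = hi3 x" "lo3 y = hi3 y" "lo3 x = lo3 y" using bounds[of x] bounds[of y] by auto
  then show "x = y" using eq_R a by metis
qed

lemma fpS: "finite_poset (S n A)"
  unfolding finite_poset_def
proof (intro conjI allI impI ballI)
  show "finite (carrier (S n A))" using finS by simp
  show "ord (S n A) \<subseteq> carrier (S n A) \<times> carrier (S n A)" by (auto simp: Sord_def)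
  show "\<And>x. x \<in> carrier (S n A) \<Longrightarrow> (x,x) \<in> ord (S n A)" by (simp add: Sord_def)
  show "\<And>x y. (x, y) \<in> ord (S n A) \<and> (y, x) \<in> ord (S n A) \<Longrightarrow> x = y"
    using antisymS by (auto simp: Sord_def)
  show "\<And>x y z. (x, y) \<in> ord (S n A) \<and> (y, z) \<in> ord (S n A) \<Longrightarrow> (x, z) \<in> ord (S n A)"
  proof -
    fix x y z assume "(x, y) \<in> ord (S n A) \<and> (y, z) \<in> ord (S n A)"
    then show "(x, z) \<in> ord (S n A)" using bounds[of y] by (auto simp: Sord_def)
  qed
qed

lemma lub_S: assumes y: "y \<in> Scar n A" and z: "z \<in> Scar n A" shows "\<exists>w. is_lub (S n A) y z w"
proof (cases "(y,z) \<in> Sord n A \<or> (z,y) \<in> Sord n A")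
  case True
  then show ?thesis
  proof
    assume yz: "(y,z) \<in> Sord n A"
    have "is_lub (S n A) y z z" using yz z unfolding is_lub_def by (auto simp: Sord_def)
    then show ?thesis by blast
  next
    assume yz: "(z,y) \<in> Sord n A"
    have "is_lub (S n A) y z y" using yz y unfolding is_lub_def by (auto simp: Sord_def)
    then show ?thesis by blast
  qed
next
  case False
  then have inc: "y \<noteq> z" "\<not> hi3 y \<le> lo3 z" "\<not> hi3 z \<le> lo3 y" using y z by (auto simp: Sord_def)
  let ?w = "3 * max (hi3 y) (hi3 z)"
  have wC: "?w \<in> Scar n A" using bounds[of y] bounds[of z] y z by (intro Rin) (auto simp: max_def)
  have "is_lub (S n A) y z ?w" unfolding is_lub_def
  proof (intro conjI ballI impI)
    show "?w \<in> carrier (S n A)" using wC by simp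
    show "(y, ?w) \<in> ord (S n A)" "(z, ?w) \<in> ord (S n A)" using wC y z by (auto simp: Sord_def)
    fix v assume v: "v \<in> carrier (S n A)" "(y, v) \<in> ord (S n A) \<and> (z, v) \<in> ord (S n A)"
    then have "hi3 y \<le> lo3 v" "hi3 z \<le> lo3 v" using inc by (auto simp: Sord_def)
    then show "(?w, v) \<in> ord (S n A)" using v wC by (auto simp: Sord_def)
  qed
  then show ?thesis by blast
qed

lemma glb_S: assumes y: "y \<in> Scar n A" and z: "z \<in> Scar n A" shows "\<exists>w. is_glb (S n A) y z w"
proof (cases "(y,z) \<in> Sord n A \<or> (z,y) \<in> Sord n A")
  case True
  then show ?thesis
  proof
    assume yz: "(y,z) \<in> Sord n A"
    have "is_glb (S n A) y z y" using yz y unfolding is_glb_def by (auto simp: Sord_def)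
    then show ?thesis by blast
  next
    assume yz: "(z,y) \<in> Sord n A"
    have "is_glb (S n A) y z z" using yz z unfolding is_glb_def by (auto simp: Sord_def)
    then show ?thesis by blast
  qed
next
  case False
  then have inc: "y \<noteq> z" "\<not> hi3 y \<le> lo3 z" "\<not> hi3 z \<le> lo3 y" using y z by (auto simp: Sord_def)
  let ?w = "3 * min (lo3 y) (lo3 z)"
  have wC: "?w \<in> Scar n A" using bounds[of y] bounds[of z] y z by (intro Rin) (auto simp: min_def)
  have "is_glb (S n A) y z ?w" unfolding is_glb_def
  proof (intro conjI ballI impI)
    show "?w \<in> carrier (S n A)" using wC by simp
    show "(?w, y) \<in> ord (S n A)" "(?w, z) \<in> ord (S n A)" using wC y z by (auto simp: Sord_def)
    fix v assume v: "v \<in> carrier (S n A)" "(v, y) \<in> ord (S n A) \<and> (v, z) \<in> ord (S n A)"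
    then have "hi3 v \<le> lo3 y" "hi3 v \<le> lo3 z" using inc by (auto simp: Sord_def)
    then show "(v, ?w) \<in> ord (S n A)" using v wC by (auto simp: Sord_def)
  qed
  then show ?thesis by blast
qed

lemma latS: "finite_lattice (S n A)"
  unfolding finite_lattice_def using fpS lub_S glb_S Rin[of 1] n1 by auto

end


lemma okA_mono: "okA n B \<Longrightarrow> C \<subseteq> B \<Longrightarrow> okA n C"
  unfolding okA_def using finite_subset by blast

lemma chain_single: "is_chain ({x},{(x,x)})"
  unfolding is_chain_def finite_lattice_def finite_poset_def is_lub_def is_glb_def by auto

definition EPG :: "nat set set \<Rightarrow> (nat \<times> nat) set" where "EPG G = {(i,j). i < j \<and> {i,j} \<in> G}"
definition Ac :: "nat set set \<Rightarrow> nat set" where "Ac G = {3*i+1 | i. (i, Suc i) \<in> EPG G}"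
definition Ax :: "nat set set \<Rightarrow> nat set" where "Ax G = {xc i j | i j. (i,j) \<in> EPG G}"
definition Lat :: "nat \<Rightarrow> nat set set \<Rightarrow> poset" where "Lat n G = S n (Ac G \<union> Ax G)"

definition rk :: "poset \<Rightarrow> nat \<Rightarrow> nat" where
  "rk P r = card {r'\<in>carrier P. reducible P r' \<and> (r',r) \<in> ord P}"
definition EPof :: "poset \<Rightarrow> (nat \<times> nat) set" where
  "EPof P = {(rk P a, rk P b) | a x b. x \<in> carrier P \<and> \<not> reducible P x \<and> covers P a x \<and> covers P x b}"

lemma adj_one:
  assumes x: "x \<notin> Scar n B" "lo3 x = i" "hi3 x = j" and ij: "1 \<le> i" "i < j" "j \<le> n"
  shows "adjunct (S n B) (3*i) (3*j) ({x},{(x,x)}) = S n (B \<union> {x})"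
proof -
  have c: "Scar n (B \<union> {x}) = Scar n B \<union> {x}" by (auto simp: Scar_def)
  have iC: "3*i \<in> Scar n B" "3*j \<in> Scar n B" using ij x(2,3) by (auto simp: Scar_def)
  have "ord (adjunct (S n B) (3*i) (3*j) ({x},{(x,x)})) = Sord n (B \<union> {x})"
  proof (rule set_eqI, clarify)
    fix y z
    show "(y,z) \<in> ord (adjunct (S n B) (3*i) (3*j) ({x},{(x,x)})) \<longleftrightarrow> (y,z) \<in> Sord n (B \<union> {x})"
      unfolding adjunct_def S_car S_ord Sord_def c using x iC by auto
  qed
  then show ?thesis using c by (simp add: adjunct_def S_def)
qed

fun fx :: "nat \<times> nat \<Rightarrow> nat \<times> nat \<times> poset" where
  "fx (i,j) = (3*i, 3*j, ({xc i j}, {(xc i j, xc i j)}))"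

definition fc :: "nat \<Rightarrow> (nat \<times> nat) set \<Rightarrow> nat \<times> nat \<Rightarrow> nat" where
  "fc n E v = (if fst v = snd v then (if 1 \<le> fst v \<and> fst v \<le> n then 1 else 0)
     else if v \<in> E then (if snd v = Suc (fst v) then 2 else 1) else 0)"

locale canon =
  fixes n l :: nat and G :: "nat set set"
  assumes G: "G \<in> D_graphs n l" and n1: "n \<ge> 1"
begin

abbreviation "EP \<equiv> EPG G"
abbreviation "AA \<equiv> Ac G \<union> Ax G"

lemma Gsub: "G \<subseteq> {{i,j} | i j. 1 \<le> i \<and> i < j \<and> j \<le> n}" using G by (simp add: D_graphs_def)
lemma Gcard: "card G = l" using G by (simp add: D_graphs_def)
lemma Gcov: "\<forall>v\<in>{1..n}. \<exists>e\<in>G. v \<in> e" using G by (simp add: D_graphs_def)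

lemma EP_bounds: "(i,j) \<in> EP \<Longrightarrow> 1 \<le> i \<and> i < j \<and> j \<le> n"
proof -
  assume a: "(i,j) \<in> EP"
  then have "i < j" "{i,j} \<in> G" by (auto simp: EPG_def)
  then obtain i' j' where "{i,j} = {i',j'}" "1 \<le> i'" "i' < j'" "j' \<le> n" using Gsub by blast
  then show ?thesis using \<open>i < j\<close> by (metis doubleton_eq_iff less_asym)
qed

lemma EP_fin: "finite EP"
  by (rule finite_subset[of _ "{1..n} \<times> {1..n}"]) (auto dest: EP_bounds)

lemma G_img: "G = (\<lambda>(i,j). {i,j}) ` EP"
proof
  show "G \<subseteq> (\<lambda>(i,j). {i,j}) ` EP"
  proof
    fix e assume "e \<in> G"
    then obtain i j where "e = {i,j}" "1 \<le> i" "i < j" "j \<le> n" using Gsub by blast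
    then have "(i,j) \<in> EP" using \<open>e \<in> G\<close> by (auto simp: EPG_def)
    then show "e \<in> (\<lambda>(i,j). {i,j}) ` EP" using \<open>e = {i,j}\<close> by force
  qed
  show "(\<lambda>(i,j). {i,j}) ` EP \<subseteq> G" by (auto simp: EPG_def)
qed

lemma EP_card: "card EP = l"
proof -
  have "inj_on (\<lambda>(i,j). {i,j}) EP"
  proof (rule inj_onI, clarify)
    fix i j i' j' assume "(i,j) \<in> EP" "(i',j') \<in> EP" "{i,j} = {i',j'}"
    then show "i = i' \<and> j = j'" by (auto simp: EPG_def doubleton_eq_iff)
  qed
  then show ?thesis using Gcard G_img card_image by metis
qed

lemma okAA: "okA n AA"
  unfolding okA_def
proof (intro conjI)
  have "Ac G = (\<lambda>(i,j). 3*i+1) ` {e\<in>EP. snd e = Suc (fst e)}" by (force simp: Ac_def)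
  moreover have "Ax G = (\<lambda>(i,j). xc i j) ` EP" by (force simp: Ax_def)
  ultimately show "finite AA" using EP_fin by simp
  show "\<forall>x\<in>AA. x mod 3 \<noteq> 0 \<and> 1 \<le> lo3 x \<and> lo3 x < hi3 x \<and> hi3 x \<le> n"
    by (auto simp: Ac_def Ax_def dest: EP_bounds)
qed

sublocale Sn n AA using n1 okAA by unfold_locales

abbreviation "L \<equiv> Lat n G"

lemma L_def': "L = S n AA" by (simp add: Lat_def)

interpretation LL: flat L
  unfolding L_def' using latS by (simp add: flat_of_lat)

lemma lat: "finite_lattice L" unfolding L_def' using latS .

lemma covA_low: assumes x: "x \<in> AA" shows "covers L (3 * lo3 x) x" and "covers L u x \<Longrightarrow> u = 3 * lo3 x"
proof -
  have xC: "x \<in> Scar n AA" using x Ain by blast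
  have p: "3 * lo3 x \<in> Scar n AA" using bounds[OF xC] by (intro Rin) auto
  have xp: "x \<noteq> 3 * lo3 x" using okx[OF x] by (metis mod_R)
  have nz: "\<not>(\<exists>z. (3 * lo3 x,z) \<in> Sord n AA \<and> (z,x) \<in> Sord n AA \<and> z \<noteq> 3 * lo3 x \<and> z \<noteq> x)"
  proof
    assume "\<exists>z. (3 * lo3 x,z) \<in> Sord n AA \<and> (z,x) \<in> Sord n AA \<and> z \<noteq> 3 * lo3 x \<and> z \<noteq> x"
    then obtain z where z: "(3 * lo3 x,z) \<in> Sord n AA" "(z,x) \<in> Sord n AA" "z \<noteq> 3 * lo3 x" "z \<noteq> x" by blast
    then have zC: "z \<in> Scar n AA" "lo3 x \<le> lo3 z" "hi3 z \<le> lo3 x" by (auto simp: Sord_def)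
    then have "lo3 z = hi3 z" "lo3 z = lo3 x" using bounds[OF zC(1)] by linarith+
    then have "z = 3 * lo3 x" using eq_R zC by metis
    then show False using z by simp
  qed
  show "covers L (3 * lo3 x) x"
    unfolding covers_def L_def' using p xC xp nz by (simp add: Sord_def)
  assume c: "covers L u x"
  then have u: "u \<in> Scar n AA" "u \<noteq> x" "hi3 u \<le> lo3 x" unfolding covers_def L_def' by (auto simp: Sord_def)
  show "u = 3 * lo3 x"
  proof (rule ccontr)
    assume ne: "u \<noteq> 3 * lo3 x"
    have o: "(u, 3 * lo3 x) \<in> ord L" "(3 * lo3 x, x) \<in> ord L" using u p xC unfolding L_def' by (auto simp: Sord_def)
    have nc: "\<not>(\<exists>z. (u,z) \<in> ord L \<and> (z,x) \<in> ord L \<and> z \<noteq> u \<and> z \<noteq> x)" using c by (simp add: covers_def)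
    have "(u, 3 * lo3 x) \<in> ord L \<and> (3 * lo3 x, x) \<in> ord L \<and> 3 * lo3 x \<noteq> u \<and> 3 * lo3 x \<noteq> x"
      using o ne xp by simp
    then show False using nc by blast
  qed
qed

lemma covA_up: assumes x: "x \<in> AA" shows "covers L x (3 * hi3 x)" and "covers L x u \<Longrightarrow> u = 3 * hi3 x"
proof -
  have xC: "x \<in> Scar n AA" using x Ain by blast
  have p: "3 * hi3 x \<in> Scar n AA" using bounds[OF xC] by (intro Rin) auto
  have xp: "x \<noteq> 3 * hi3 x" using okx[OF x] by (metis mod_R)
  have nz: "\<not>(\<exists>z. (x,z) \<in> Sord n AA \<and> (z,3 * hi3 x) \<in> Sord n AA \<and> z \<noteq> x \<and> z \<noteq> 3 * hi3 x)"
  proof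
    assume "\<exists>z. (x,z) \<in> Sord n AA \<and> (z,3 * hi3 x) \<in> Sord n AA \<and> z \<noteq> x \<and> z \<noteq> 3 * hi3 x"
    then obtain z where z: "(x,z) \<in> Sord n AA" "(z,3 * hi3 x) \<in> Sord n AA" "z \<noteq> x" "z \<noteq> 3 * hi3 x" by blast
    then have zC: "z \<in> Scar n AA" "hi3 x \<le> lo3 z" "hi3 z \<le> hi3 x" by (auto simp: Sord_def)
    then have "lo3 z = hi3 z" "lo3 z = hi3 x" using bounds[OF zC(1)] by linarith+
    then have "z = 3 * hi3 x" using eq_R zC by metis
    then show False using z by simp
  qed
  show "covers L x (3 * hi3 x)"
    unfolding covers_def L_def' using p xC xp nz by (simp add: Sord_def)
  assume c: "covers L x u"
  then have u: "u \<in> Scar n AA" "u \<noteq> x" "hi3 x \<le> lo3 u" unfolding covers_def L_def' by (auto simp: Sord_def)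
  show "u = 3 * hi3 x"
  proof (rule ccontr)
    assume ne: "u \<noteq> 3 * hi3 x"
    have o: "(3 * hi3 x, u) \<in> ord L" "(x, 3 * hi3 x) \<in> ord L" using u p xC unfolding L_def' by (auto simp: Sord_def)
    have nc: "\<not>(\<exists>z. (x,z) \<in> ord L \<and> (z,u) \<in> ord L \<and> z \<noteq> x \<and> z \<noteq> u)" using c by (simp add: covers_def)
    have "(x, 3 * hi3 x) \<in> ord L \<and> (3 * hi3 x, u) \<in> ord L \<and> 3 * hi3 x \<noteq> x \<and> 3 * hi3 x \<noteq> u"
      using o ne xp by simp
    then show False using nc by blast
  qed
qed


lemma diA: "x \<in> AA \<Longrightarrow> doubly_irreducible L x"
proof -
  assume x: "x \<in> AA"
  have "{y. covers L x y} \<subseteq> {3 * hi3 x}" using covA_up(2)[OF x] by blast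
  then have u: "card {y. covers L x y} \<le> 1" using card_mono[of "{3 * hi3 x}"] by fastforce
  have "{y. covers L y x} \<subseteq> {3 * lo3 x}" using covA_low(2)[OF x] by blast
  then have l: "card {y. covers L y x} \<le> 1" using card_mono[of "{3 * lo3 x}"] by fastforce
  show ?thesis unfolding doubly_irreducible_def using u l x Ain L_def' by simp
qed

lemma nredA: "x \<in> AA \<Longrightarrow> \<not> reducible L x" using LL.red_imp_not_di diA by blast

lemma red_incomp:
  assumes y: "y \<in> Scar n AA" and w: "w \<in> Scar n AA" and yw: "y \<noteq> w"
    and inc: "\<not> hi3 y \<le> lo3 w" "\<not> hi3 w \<le> lo3 y"
  shows "reducible L (3 * min (lo3 y) (lo3 w))" "reducible L (3 * max (hi3 y) (hi3 w))"
proof -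
  let ?g = "3 * min (lo3 y) (lo3 w)"
  have gC: "?g \<in> Scar n AA" using bounds[OF y] bounds[OF w] by (intro Rin) (auto simp: min_def)
  have "is_glb L y w ?g" unfolding is_glb_def L_def'
  proof (intro conjI ballI impI)
    show "?g \<in> carrier (S n AA)" using gC by simp
    show "(?g, y) \<in> ord (S n AA)" "(?g, w) \<in> ord (S n AA)" using gC y w by (auto simp: Sord_def)
    fix v assume v: "v \<in> carrier (S n AA)" "(v, y) \<in> ord (S n AA) \<and> (v, w) \<in> ord (S n AA)"
    then have "hi3 v \<le> lo3 y" "hi3 v \<le> lo3 w" using inc yw by (auto simp: Sord_def)
    then show "(v, ?g) \<in> ord (S n AA)" using v gC by (auto simp: Sord_def)
  qed
  moreover have "?g \<noteq> y"
  proof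
    assume "?g = y" then have "hi3 y = min (lo3 y) (lo3 w)" by (metis hi3_R)
    then have "hi3 y \<le> lo3 w" by (simp add: min_le_iff_disj)
    then show False using inc by simp
  qed
  moreover have "?g \<noteq> w"
  proof
    assume "?g = w" then have "hi3 w = min (lo3 y) (lo3 w)" by (metis hi3_R)
    then have "hi3 w \<le> lo3 y" by (simp add: min_le_iff_disj)
    then show False using inc by simp
  qed
  ultimately have gg: "is_glb L y w ?g" "?g \<noteq> y" "?g \<noteq> w" by (auto simp: L_def')
  show "reducible L ?g" unfolding reducible_def
    apply (rule conjI) using gC L_def' apply simp
    apply (rule bexI[where x=y]) apply (rule bexI[where x=w])
    using gg y w L_def' by auto
  let ?m = "3 * max (hi3 y) (hi3 w)"
  have mC: "?m \<in> Scar n AA" using bounds[OF y] bounds[OF w] by (intro Rin) (auto simp: max_def)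
  have "is_lub L y w ?m" unfolding is_lub_def L_def'
  proof (intro conjI ballI impI)
    show "?m \<in> carrier (S n AA)" using mC by simp
    show "(y, ?m) \<in> ord (S n AA)" "(w, ?m) \<in> ord (S n AA)" using mC y w by (auto simp: Sord_def)
    fix v assume v: "v \<in> carrier (S n AA)" "(y, v) \<in> ord (S n AA) \<and> (w, v) \<in> ord (S n AA)"
    then have "hi3 y \<le> lo3 v" "hi3 w \<le> lo3 v" using inc yw by (auto simp: Sord_def)
    then show "(?m, v) \<in> ord (S n AA)" using v mC by (auto simp: Sord_def)
  qed
  moreover have "?m \<noteq> y"
  proof
    assume "?m = y" then have "lo3 y = max (hi3 y) (hi3 w)" by (metis lo3_R)
    then have "hi3 w \<le> lo3 y" by (simp add: le_max_iff_disj)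
    then show False using inc by simp
  qed
  moreover have "?m \<noteq> w"
  proof
    assume "?m = w" then have "lo3 w = max (hi3 y) (hi3 w)" by (metis lo3_R)
    then have "hi3 y \<le> lo3 w" by (simp add: le_max_iff_disj)
    then show False using inc by simp
  qed
  ultimately have gg: "is_lub L y w ?m" "?m \<noteq> y" "?m \<noteq> w" by (auto simp: L_def')
  show "reducible L ?m" unfolding reducible_def
    apply (rule conjI) using mC L_def' apply simp
    apply (rule bexI[where x=y]) apply (rule bexI[where x=w])
    using gg y w L_def' by auto
qed

lemma Ac_iff: "y \<in> Ac G \<longleftrightarrow> (\<exists>i. y = 3*i+1 \<and> (i, Suc i) \<in> EP)" by (auto simp: Ac_def)
lemma Ax_iff: "y \<in> Ax G \<longleftrightarrow> (\<exists>i j. y = xc i j \<and> (i, j) \<in> EP)" by (auto simp: Ax_def)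

lemma redR: assumes i: "1 \<le> i" "i \<le> n" shows "reducible L (3*i)"
proof -
  have "i \<in> {1..n}" using i by simp
  then obtain e where e: "e \<in> G" "i \<in> e" using Gcov by blast
  have "e \<in> (\<lambda>(i,j). {i,j}) ` EP" using e G_img by simp
  then obtain a b where ab: "(a,b) \<in> EP" "e = {a,b}" by auto
  have abd: "1 \<le> a" "a < b" "b \<le> n" using EP_bounds[OF ab(1)] by auto
  have y: "xc a b \<in> Scar n AA" using ab(1) Ain by (auto simp: Ax_def)
  show ?thesis
  proof (cases "b = Suc a")
    case True
    have w: "3*a+1 \<in> Scar n AA" using ab(1) True Ain by (auto simp: Ac_def)
    have "reducible L (3 * min (lo3 (xc a b)) (lo3 (3*a+1)))" "reducible L (3 * max (hi3 (xc a b)) (hi3 (3*a+1)))"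
      using red_incomp[OF y w] True by auto
    then show ?thesis using e ab True by auto
  next
    case False
    then have sa: "Suc a < b" using abd by simp
    have w: "3*(Suc a) \<in> Scar n AA" using sa abd by (intro Rin) auto
    have r1: "reducible L (3 * min (lo3 (xc a b)) (lo3 (3*(Suc a))))" using red_incomp(1)[OF y w] sa by auto
    show ?thesis
    proof (cases "i = a")
      case True then show ?thesis using r1 by simp
    next
      case False
      then have ib: "i = b" using e ab by auto
      have w2: "3*(b - 1) \<in> Scar n AA" using sa abd by (intro Rin) auto
      have "reducible L (3 * max (hi3 (xc a b)) (hi3 (3*(b-1))))" using red_incomp(2)[OF y w2] sa by auto
      moreover have "max (hi3 (xc a b)) (hi3 (3*(b-1))) = b" by simp
      ultimately show ?thesis using ib by simp
    qed
  qed
qed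

lemma Rcodes: "x \<in> Scar n AA \<Longrightarrow> x \<notin> AA \<Longrightarrow> \<exists>i. x = 3*i \<and> 1 \<le> i \<and> i \<le> n"
  using car_cases by blast

lemma redset: "{x \<in> carrier L. reducible L x} = (\<lambda>i. 3*i) ` {1..n}"
proof
  show "{x \<in> carrier L. reducible L x} \<subseteq> (\<lambda>i. 3*i) ` {1..n}"
  proof clarify
    fix x assume "x \<in> carrier L" "reducible L x"
    then have "x \<in> Scar n AA" "x \<notin> AA" using nredA L_def' by auto
    then show "x \<in> (\<lambda>i. 3*i) ` {1..n}" using Rcodes by fastforce
  qed
  show "(\<lambda>i. 3*i) ` {1..n} \<subseteq> {x \<in> carrier L. reducible L x}"
    using redR Rin L_def' by auto
qed

lemma numred: "num_reducible L = n"
proof -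
  have "inj_on (\<lambda>i::nat. 3*i) {1..n}" by (auto simp: inj_on_def)
  then show ?thesis unfolding num_reducible_def redset by (simp add: card_image)
qed

lemma RC: "RC_lattice L"
  unfolding RC_lattice_def
proof (intro conjI allI impI)
  show "finite_lattice L" by (rule lat)
  fix x y assume "reducible L x \<and> reducible L y"
  then have "x \<in> {x \<in> carrier L. reducible L x}" "y \<in> {x \<in> carrier L. reducible L x}"
    by (auto simp: reducible_def)
  then obtain i j where "x = 3*i" "y = 3*j" "1 \<le> i" "i \<le> n" "1 \<le> j" "j \<le> n" unfolding redset by auto
  then show "comparable L x y" unfolding comparable_def L_def' using Rin by (auto simp: Sord_def)
qed

lemma BB: "basic_block L"
proof -
  have "\<forall>x. doubly_irreducible L x \<longrightarrow> nullity (remove_elem L x) = nullity L - 1"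
  proof (intro allI impI)
    fix x assume di: "doubly_irreducible L x"
    then have xC: "x \<in> Scar n AA" using L_def' by (simp add: doubly_irreducible_def)
    have xA: "x \<in> AA"
    proof (rule ccontr)
      assume "x \<notin> AA"
      then obtain i where "x = 3*i" "1 \<le> i" "i \<le> n" using Rcodes xC by blast
      then show False using redR di LL.red_imp_not_di by blast
    qed
    let ?p = "3 * lo3 x" and ?q = "3 * hi3 x"
    have "\<exists>w. w \<noteq> x \<and> (?p,w) \<in> ord L \<and> (w,?q) \<in> ord L \<and> w \<noteq> ?p \<and> w \<noteq> ?q"
    proof -
      have pC: "?p \<in> Scar n AA" "?q \<in> Scar n AA" using bounds[OF xC] by (auto intro: Rin)
      have wit: "\<exists>w. w \<in> Scar n AA \<and> w \<noteq> x \<and> lo3 x \<le> lo3 w \<and> hi3 w \<le> hi3 x \<and> w mod 3 \<noteq> 0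
          \<or> w \<in> Scar n AA \<and> w = 3 * Suc (lo3 x) \<and> Suc (lo3 x) < hi3 x"
      proof (cases "x \<in> Ac G")
        case True
        then obtain i where i: "x = 3*i+1" "(i, Suc i) \<in> EP" by (auto simp: Ac_iff)
        have "xc i (Suc i) \<in> Scar n AA" using i Ain by (auto simp: Ax_iff)
        then show ?thesis using i by (intro exI[of _ "xc i (Suc i)"]) auto
      next
        case False
        then obtain i j where ij: "x = xc i j" "(i,j) \<in> EP" using xA by (auto simp: Ax_iff)
        show ?thesis
        proof (cases "j = Suc i")
          case True
          have "3*i+1 \<in> Scar n AA" using ij True Ain by (auto simp: Ac_iff)
          then show ?thesis using ij True by (intro exI[of _ "3*i+1"]) auto
        next
          case False
          then have "Suc i < j" using EP_bounds[OF ij(2)] by auto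
          moreover have "3*(Suc i) \<in> Scar n AA" using calculation EP_bounds[OF ij(2)] by (intro Rin) auto
          ultimately show ?thesis using ij by (intro exI[of _ "3 * Suc i"]) auto
        qed
      qed
      then obtain w where w: "w \<in> Scar n AA \<and> w \<noteq> x \<and> lo3 x \<le> lo3 w \<and> hi3 w \<le> hi3 x \<and> w mod 3 \<noteq> 0
          \<or> w \<in> Scar n AA \<and> w = 3 * Suc (lo3 x) \<and> Suc (lo3 x) < hi3 x" by blast
      have lh: "lo3 x < hi3 x" using okx xA by blast
      have xne: "x \<noteq> 3 + 3 * lo3 x" using okx[OF xA] by (metis mod_R')
      have "w \<noteq> x \<and> (?p,w) \<in> ord L \<and> (w,?q) \<in> ord L \<and> w \<noteq> ?p \<and> w \<noteq> ?q"
        using w pC lh okx[OF xA] xne unfolding L_def' by (auto simp: Sord_def)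
      then show ?thesis by blast
    qed
    then show "nullity (remove_elem L x) = nullity L - 1"
      using LL.rem_mid[OF di covA_low(1)[OF xA] covA_up(1)[OF xA]] by simp
  qed
  then show ?thesis unfolding basic_block_def by blast
qed


lemma SnAc: "Sn n (Ac G)" using n1 okA_mono[OF okAA] by unfold_locales auto

lemma Ac_shape: "x \<in> Scar n (Ac G) \<Longrightarrow> (x = 3 * lo3 x \<and> hi3 x = lo3 x) \<or> (x = 3 * lo3 x + 1 \<and> hi3 x = Suc (lo3 x))"
proof -
  assume x: "x \<in> Scar n (Ac G)"
  from Sn.car_cases[OF SnAc x] consider (R) i where "x = 3*i" | (C) i where "x = Suc (3*i)"
    by (auto simp: Ac_iff)
  then show ?thesis by cases auto
qed

lemma chain_formula:
  assumes x: "x \<in> Scar n (Ac G)" and y: "y \<in> Scar n (Ac G)"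
  shows "x = y \<or> hi3 x \<le> lo3 y \<or> hi3 y \<le> lo3 x"
proof (rule ccontr)
  assume "\<not> (x = y \<or> hi3 x \<le> lo3 y \<or> hi3 y \<le> lo3 x)"
  then have h: "x \<noteq> y" "lo3 y < hi3 x" "lo3 x < hi3 y" by auto
  have "lo3 x = lo3 y \<and> hi3 x = Suc (lo3 x) \<and> hi3 y = Suc (lo3 y)" using Ac_shape[OF x] Ac_shape[OF y] h by auto
  then show False using Ac_shape[OF x] Ac_shape[OF y] h by auto
qed

lemma chainC0: "is_chain (S n (Ac G))"
  unfolding is_chain_def using Sn.latS[OF SnAc] chain_formula by (auto simp: Sord_def)

lemma adj_ind:
  "distinct es \<Longrightarrow> set es \<subseteq> EP \<Longrightarrow> Ac G \<subseteq> B \<Longrightarrow> B \<subseteq> AA \<Longrightarrow> (\<forall>(i,j)\<in>set es. xc i j \<notin> B) \<Longrightarrow>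
   valid_adjunct_list (S n B) (map fx es) \<and>
   adjunct_list (S n B) (map fx es) = S n (B \<union> {xc i j | i j. (i,j) \<in> set es})"
proof (induction es arbitrary: B)
  case Nil then show ?case by simp
next
  case (Cons e es)
  obtain i j where e: "e = (i,j)" by (cases e)
  let ?x = "xc i j"
  have ij: "(i,j) \<in> EP" using Cons.prems e by auto
  have bd: "1 \<le> i" "i < j" "j \<le> n" using EP_bounds[OF ij] by auto
  interpret SB: Sn n B using n1 okA_mono[OF okAA Cons.prems(4)] by unfold_locales
  have xB: "?x \<notin> B" using Cons.prems e by auto
  have xS: "?x \<notin> Scar n B" using xB by (auto simp: Scar_def)
  have iS: "3*i \<in> Scar n B" "3*j \<in> Scar n B" using bd by (auto intro: SB.Rin)
  have nc: "\<not> covers (S n B) (3*i) (3*j)"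
  proof -
    let ?z = "if j = Suc i then 3*i+1 else 3 * Suc i"
    have zS: "?z \<in> Scar n B"
    proof (cases "j = Suc i")
      case True
      then have "3*i+1 \<in> Ac G" using ij by (auto simp: Ac_iff)
      then show ?thesis using True Cons.prems(3) SB.Ain by auto
    next
      case False then show ?thesis using bd SB.Rin[of "Suc i"] by simp
    qed
    have "(3*i, ?z) \<in> Sord n B \<and> (?z, 3*j) \<in> Sord n B \<and> ?z \<noteq> 3*i \<and> ?z \<noteq> 3*j"
      using zS iS bd by (auto simp: Sord_def)
    then show ?thesis unfolding covers_def by auto
  qed
  have step: "adjunct (S n B) (3*i) (3*j) ({?x},{(?x,?x)}) = S n (B \<union> {?x})"
    using adj_one[OF xS _ _ bd(1) bd(2) bd(3)] by simp
  have IHp: "distinct es" "set es \<subseteq> EP" "Ac G \<subseteq> B \<union> {?x}" "B \<union> {?x} \<subseteq> AA"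
    "\<forall>(i',j')\<in>set es. xc i' j' \<notin> B \<union> {?x}"
    using Cons.prems e ij by (auto simp: Ax_iff)
  note IH = Cons.IH[OF IHp]
  have v: "valid_adjunct_list (S n B) (map fx (e # es))"
    using e SB.latS chain_single xS iS bd nc IH step by (auto simp: Sord_def)
  have "adjunct_list (S n B) (map fx (e # es)) = S n ((B \<union> {?x}) \<union> {xc i j | i j. (i,j) \<in> set es})"
    using e IH step by simp
  also have "(B \<union> {?x}) \<union> {xc i j | i j. (i,j) \<in> set es} = B \<union> {xc i j | i j. (i,j) \<in> set (e # es)}"
    using e by auto
  finally show ?case using v by simp
qed

definition "es = (SOME xs. set xs = EP \<and> distinct xs)"
lemma es_prop: "set es = EP" "distinct es"
  using someI_ex[OF finite_distinct_list[OF EP_fin]] unfolding es_def by auto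
abbreviation "C0 \<equiv> S n (Ac G)"
abbreviation "xs \<equiv> map fx es"

lemma C0_valid: "valid_adjunct_list C0 xs" and C0_list: "adjunct_list C0 xs = L"
proof -
  have "\<forall>(i,j)\<in>set es. xc i j \<notin> Ac G" by (auto simp: Ac_iff)
  then have r: "valid_adjunct_list C0 xs \<and> adjunct_list C0 xs = S n (Ac G \<union> {xc i j | i j. (i,j) \<in> set es})"
    using adj_ind[of es "Ac G"] es_prop by auto
  have "{xc i j | i j. (i,j) \<in> set es} = Ax G" using es_prop by (auto simp: Ax_iff)
  then show "valid_adjunct_list C0 xs" "adjunct_list C0 xs = L" using r L_def' by auto
qed

lemma maxchain: "maximal_chain L (Scar n (Ac G))"
  unfolding maximal_chain_def
proof (intro conjI allI impI)
  show "Scar n (Ac G) \<subseteq> carrier L" using L_def' by (auto simp: Scar_def)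
  show "\<forall>x\<in>Scar n (Ac G). \<forall>y\<in>Scar n (Ac G). comparable L x y"
    using chain_formula L_def' by (auto simp: comparable_def Sord_def Scar_def)
  fix T assume T: "Scar n (Ac G) \<subset> T \<and> T \<subseteq> carrier L"
  then obtain t where t: "t \<in> T" "t \<notin> Scar n (Ac G)" by blast
  then have "t \<in> Ax G" using T L_def' by (auto simp: Scar_def)
  then obtain i j where ij: "t = xc i j" "(i,j) \<in> EP" by (auto simp: Ax_iff)
  have bd: "1 \<le> i" "i < j" "j \<le> n" using EP_bounds[OF ij(2)] by auto
  let ?w = "if j = Suc i then 3*i+1 else 3 * Suc i"
  have wS: "?w \<in> Scar n (Ac G)"
  proof (cases "j = Suc i")
    case True then show ?thesis using ij by (auto simp: Ac_iff Scar_def)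
  next
    case False then show ?thesis using bd Sn.Rin[OF SnAc, of "Suc i"] by simp
  qed
  have "\<not> comparable L t ?w" using ij bd L_def' unfolding comparable_def by (auto simp: Sord_def)
  then show "\<not> (\<forall>x\<in>T. \<forall>y\<in>T. comparable L x y)" using t wS T by blast
qed

lemma rep: "adjunct_representation L C0 xs" "distinct (map (\<lambda>(a,b,C). (a,b)) xs)"
proof -
  show "adjunct_representation L C0 xs"
    unfolding adjunct_representation_def using chainC0 C0_valid C0_list maxchain by simp
  have eq: "map (\<lambda>(a,b,C). (a,b)) (map fx ys) = map (\<lambda>(i,j). (3*i, 3*j)) ys" for ys
    by (induction ys) auto
  have "inj_on (\<lambda>(i,j). (3*i::nat, 3*j::nat)) (set es)" by (auto simp: inj_on_def)
  then have "distinct (map (\<lambda>(i,j). (3*i::nat, 3*j::nat)) es)" using es_prop by (simp add: distinct_map)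
  then show "distinct (map (\<lambda>(a,b,C). (a,b)) xs)" by (simp only: eq)
qed

lemma nullity_L: "nullity L = int l"
proof -
  interpret C: flat C0 using chainC0 by (simp add: is_chain_def flat_of_lat)
  have "nullity C0 = 0" using C.chain_nullity chainC0 by (simp add: is_chain_def)
  moreover have "nullity (adjunct_list C0 xs) = nullity C0 + int (length xs)"
    using nullity_list[OF C0_valid] chainC0 C0_list lat by (simp add: is_chain_def)
  moreover have "length xs = l" using es_prop EP_card distinct_card by fastforce
  ultimately show ?thesis using C0_list by simp
qed

lemma L_FBB: "L \<in> FBB n (int l)"
  unfolding FBB_def fundamental_basic_block_def using RC BB rep numred nullity_L by blast

lemma rk_R: assumes k: "1 \<le> k" "k \<le> n" shows "rk L (3*k) = k"
proof -
  have "{r'\<in>carrier L. reducible L r' \<and> (r', 3*k) \<in> ord L} = (\<lambda>i. 3*i) ` {1..k}"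
  proof
    show "{r'\<in>carrier L. reducible L r' \<and> (r', 3*k) \<in> ord L} \<subseteq> (\<lambda>i. 3*i) ` {1..k}"
    proof clarify
      fix r assume r: "r \<in> carrier L" "reducible L r" "(r, 3*k) \<in> ord L"
      then have "r \<in> {x \<in> carrier L. reducible L x}" by simp
      then have "r \<in> (\<lambda>i. 3*i) ` {1..n}" unfolding redset .
      then obtain i where i: "r = 3*i" "1 \<le> i" "i \<le> n" by auto
      then have "i \<le> k" using r L_def' by (auto simp: Sord_def)
      then show "r \<in> (\<lambda>i. 3*i) ` {1..k}" using i by auto
    qed
    show "(\<lambda>i. 3*i) ` {1..k} \<subseteq> {r'\<in>carrier L. reducible L r' \<and> (r', 3*k) \<in> ord L}"
      using k redR Rin L_def' by (auto simp: Sord_def)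
  qed
  moreover have "inj_on (\<lambda>i::nat. 3*i) {1..k}" by (auto simp: inj_on_def)
  ultimately show ?thesis unfolding rk_def by (simp add: card_image)
qed

lemma nred_iff: assumes xC: "x \<in> carrier L" shows "\<not> reducible L x \<longleftrightarrow> x \<in> AA"
proof
  assume nr: "\<not> reducible L x"
  show "x \<in> AA"
  proof (rule ccontr)
    assume "x \<notin> AA"
    then obtain i where "x = 3*i" "1 \<le> i" "i \<le> n" using Rcodes xC L_def' by auto
    then show False using redR nr by blast
  qed
next
  assume "x \<in> AA" then show "\<not> reducible L x" using nredA by blast
qed

lemma AA_lbl: "x \<in> AA \<Longrightarrow> (lo3 x, hi3 x) \<in> EP"
  by (auto simp: Ac_iff Ax_iff)

lemma EPof_L: "EPof L = EP"
proof
  show "EPof L \<subseteq> EP"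
  proof
    fix e assume "e \<in> EPof L"
    then obtain a x b where e: "e = (rk L a, rk L b)" "x \<in> carrier L" "\<not> reducible L x" "covers L a x" "covers L x b"
      unfolding EPof_def by blast
    then have xA: "x \<in> AA" using nred_iff by blast
    then have "a = 3 * lo3 x" "b = 3 * hi3 x" using covA_low(2) covA_up(2) e by auto
    moreover have "1 \<le> lo3 x" "lo3 x \<le> n" "1 \<le> hi3 x" "hi3 x \<le> n" using okx[OF xA] by auto
    ultimately have "e = (lo3 x, hi3 x)" using e rk_R by simp
    then show "e \<in> EP" using AA_lbl xA by simp
  qed
  show "EP \<subseteq> EPof L"
  proof clarify
    fix i j assume ij: "(i,j) \<in> EP"
    let ?x = "xc i j"
    have xA: "?x \<in> AA" using ij by (auto simp: Ax_iff)
    have bd: "1 \<le> i" "i < j" "j \<le> n" using EP_bounds[OF ij] by auto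
    have "?x \<in> carrier L" "\<not> reducible L ?x" using xA nredA Ain L_def' by auto
    moreover have "covers L (3*i) ?x" "covers L ?x (3*j)" using covA_low(1)[OF xA] covA_up(1)[OF xA] by auto
    moreover have "rk L (3*i) = i" "rk L (3*j) = j" using bd rk_R by auto
    ultimately show "(i,j) \<in> EPof L" unfolding EPof_def by force
  qed
qed

lemma fibL: "card {y \<in> Scar n AA. (lo3 y, hi3 y) = v} = fc n EP v"
proof -
  obtain i j where v: "v = (i,j)" by (cases v)
  show ?thesis
  proof (cases "i = j")
    case True
    have "{y \<in> Scar n AA. (lo3 y, hi3 y) = v} = (if 1 \<le> i \<and> i \<le> n then {3*i} else {})"
    proof -
      have "y = 3*i \<and> 1 \<le> i \<and> i \<le> n" if "y \<in> Scar n AA" "lo3 y = i" "hi3 y = i" for y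
      proof -
        have "y = 3*i" using eq_R that by metis
        moreover have "y \<notin> AA" using that okx by fastforce
        ultimately show ?thesis using that Rcodes by fastforce
      qed
      then show ?thesis using v True Rin by auto
    qed
    then show ?thesis using v True by (simp add: fc_def)
  next
    case False
    have s: "{y \<in> Scar n AA. (lo3 y, hi3 y) = v} = {y \<in> AA. lo3 y = i \<and> hi3 y = j}"
    proof (rule set_eqI)
      fix y
      show "y \<in> {y \<in> Scar n AA. (lo3 y, hi3 y) = v} \<longleftrightarrow> y \<in> {y \<in> AA. lo3 y = i \<and> hi3 y = j}"
      proof
        assume y: "y \<in> {y \<in> Scar n AA. (lo3 y, hi3 y) = v}"
        have "y \<in> AA"
        proof (rule ccontr)
          assume "y \<notin> AA"
          then obtain k where "y = 3*k" using Rcodes y by blast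
          then show False using y v False by simp
        qed
        then show "y \<in> {y \<in> AA. lo3 y = i \<and> hi3 y = j}" using y v by simp
      next
        assume "y \<in> {y \<in> AA. lo3 y = i \<and> hi3 y = j}"
        then show "y \<in> {y \<in> Scar n AA. (lo3 y, hi3 y) = v}" using v Ain by simp
      qed
    qed
    show ?thesis
    proof (cases "(i,j) \<in> EP")
      case False2: False
      have e0: "{y \<in> AA. lo3 y = i \<and> hi3 y = j} = {}" using False2 AA_lbl by auto
      have "card {y \<in> Scar n AA. (lo3 y, hi3 y) = v} = 0" unfolding s e0 by simp
      moreover have "fc n EP v = 0" using v False False2 by (simp add: fc_def)
      ultimately show ?thesis by simp
    next
      case True2: True
      show ?thesis
      proof (cases "j = Suc i")
        case True
        have "{y \<in> AA. lo3 y = i \<and> hi3 y = j} = {3*i+1, xc i j}"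
          using True True2 by (auto simp: Ac_iff Ax_iff)
        then have "card {y \<in> Scar n AA. (lo3 y, hi3 y) = v} = 2" unfolding s using True by simp
        moreover have "fc n EP v = 2" using v True True2 by (simp add: fc_def)
        ultimately show ?thesis by simp
      next
        case False3: False
        have "{y \<in> AA. lo3 y = i \<and> hi3 y = j} = {xc i j}"
          using False3 True2 by (auto simp: Ac_iff Ax_iff)
        then have "card {y \<in> Scar n AA. (lo3 y, hi3 y) = v} = 1" unfolding s by simp
        moreover have "fc n EP v = 1" using v False False3 True2 by (simp add: fc_def)
        ultimately show ?thesis by simp
      qed
    qed
  qed
qed

end




locale fbb = flat +
  assumes rc: "\<forall>x y. reducible P x \<and> reducible P y \<longrightarrow> comparable P x y"
  and bb: "basic_block P"
  and c2: "card Cr \<ge> 2"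
begin

lemma glb_le: assumes g: "is_glb P y z x" and yz: "lq y z" shows "x = y"
proof -
  have "y \<in> Cr" using yz ordD by blast
  then have "lq y x" using g yz refl unfolding is_glb_def by blast
  moreover have "lq x y" using g unfolding is_glb_def by blast
  ultimately show "x = y" using antisym by blast
qed

lemma bb3: "\<forall>x. doubly_irreducible P x \<longrightarrow> nullity (remove_elem P x) = nullity P - 1"
proof -
  obtain b where b: "b \<in> Cr" "\<forall>x\<in>Cr. lq b x" using bot_ex by blast
  have "card Cr \<noteq> 1" using c2 by simp
  moreover have "\<not>(\<forall>x. \<not> doubly_irreducible P x)"
  proof
    assume nd: "\<forall>x. \<not> doubly_irreducible P x"
    then have "reducible P b" using red_iff b by blast
    then obtain y z where yz: "y \<in> Cr" "z \<in> Cr" "y \<noteq> b" "z \<noteq> b" "is_lub P y z b \<or> is_glb P y z b"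
      by (auto simp: reducible_def)
    have "\<not> is_lub P y z b" using yz b antisym unfolding is_lub_def by blast
    then have g: "is_glb P y z b" using yz by blast
    have "reducible P y" "reducible P z" using nd red_iff yz by blast+
    then have "lq y z \<or> lq z y" using rc by (auto simp: comparable_def)
    then show False
    proof
      assume "lq y z" then show False using glb_le g yz by blast
    next
      assume zy: "lq z y"
      have "is_glb P z y b" using g unfolding is_glb_def by blast
      then show False using glb_le zy yz by blast
    qed
  qed
  ultimately show ?thesis using bb unfolding basic_block_def by blast
qed

lemma bot_red: assumes b: "b \<in> Cr" "\<forall>x\<in>Cr. lq b x" shows "reducible P b"
proof (rule ccontr)
  assume "\<not> reducible P b"
  then have di: "doubly_irreducible P b" using red_iff b by blast
  then have "nullity (remove_elem P b) = nullity P - 1" using bb3 by blast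
  moreover have "nullity (remove_elem P b) = nullity P" using rem_bot[OF b di c2] .
  ultimately show False by simp
qed

lemma top_red: assumes b: "b \<in> Cr" "\<forall>x\<in>Cr. lq x b" shows "reducible P b"
proof (rule ccontr)
  assume "\<not> reducible P b"
  then have di: "doubly_irreducible P b" using red_iff b by blast
  then have "nullity (remove_elem P b) = nullity P - 1" using bb3 by blast
  moreover have "nullity (remove_elem P b) = nullity P" using rem_top[OF b di c2] .
  ultimately show False by simp
qed

definition lc :: "nat \<Rightarrow> nat" where "lc x = (SOME p. covers P p x)"
definition uc :: "nat \<Rightarrow> nat" where "uc x = (SOME q. covers P x q)"

lemma nr_cov: assumes x: "x \<in> Cr" "\<not> reducible P x" shows "covers P (lc x) x" "covers P x (uc x)"
proof -
  obtain b where b: "b \<in> Cr" "\<forall>x\<in>Cr. lq b x" using bot_ex by blast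
  have "b \<noteq> x" using bot_red[OF b] x by blast
  then obtain p where "covers P p x" using lower_cover[of b x] b x by blast
  then show "covers P (lc x) x" unfolding lc_def by (rule someI)
  obtain t where t: "t \<in> Cr" "\<forall>x\<in>Cr. lq x t" using top_ex by blast
  have "t \<noteq> x" using top_red[OF t] x by blast
  then obtain q where "covers P x q" using upper_cover[of x t] t x by metis
  then show "covers P x (uc x)" unfolding uc_def by (rule someI)
qed

lemma nr_di: "x \<in> Cr \<Longrightarrow> \<not> reducible P x \<Longrightarrow> doubly_irreducible P x"
  using red_iff by blast

lemma nr_below: assumes x: "x \<in> Cr" "\<not> reducible P x" and y: "lq y x" "y \<noteq> x" shows "lq y (lc x)"
proof -
  obtain p where p: "covers P p x" "lq y p" using lower_cover[OF y] by blast
  have "p = lc x" using di_low_unique[OF nr_di[OF x] p(1) nr_cov(1)[OF x]] .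
  then show ?thesis using p by simp
qed

lemma nr_above: assumes x: "x \<in> Cr" "\<not> reducible P x" and y: "lq x y" "y \<noteq> x" shows "lq (uc x) y"
proof -
  obtain p where p: "covers P x p" "lq p y" using upper_cover[OF y] by blast
  have "p = uc x" using di_up_unique[OF nr_di[OF x] p(1) nr_cov(2)[OF x]] .
  then show ?thesis using p by simp
qed

lemma nr_delta: assumes x: "x \<in> Cr" "\<not> reducible P x"
  shows "\<exists>w. w \<noteq> x \<and> lq (lc x) w \<and> lq w (uc x) \<and> w \<noteq> lc x \<and> w \<noteq> uc x"
proof -
  have "nullity (remove_elem P x) = nullity P - 1" using bb3 nr_di[OF x] by blast
  moreover note rem_mid[OF nr_di[OF x] nr_cov(1)[OF x] nr_cov(2)[OF x]]
  ultimately show ?thesis by (auto split: if_splits)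
qed

lemma lc_red: assumes x: "x \<in> Cr" "\<not> reducible P x" shows "reducible P (lc x)"
proof (rule ccontr)
  let ?p = "lc x"
  assume np: "\<not> reducible P ?p"
  have cpx: "covers P ?p x" using nr_cov(1)[OF x] .
  have pC: "?p \<in> Cr" using cpx coversD by blast
  have "x = uc ?p" using di_up_unique[OF nr_di[OF pC np] cpx nr_cov(2)[OF pC np]] .
  obtain w where w: "w \<noteq> ?p" "lq (lc ?p) w" "lq w (uc ?p)" "w \<noteq> lc ?p" "w \<noteq> uc ?p"
    using nr_delta[OF pC np] by blast
  have "lq w ?p" using nr_below[OF x] w \<open>x = uc ?p\<close> by simp
  then show False using nr_cov(1)[OF pC np] w unfolding covers_def by blast
qed

lemma uc_red: assumes x: "x \<in> Cr" "\<not> reducible P x" shows "reducible P (uc x)"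
proof (rule ccontr)
  let ?p = "uc x"
  assume np: "\<not> reducible P ?p"
  have cpx: "covers P x ?p" using nr_cov(2)[OF x] .
  have pC: "?p \<in> Cr" using cpx coversD by blast
  have "x = lc ?p" using di_low_unique[OF nr_di[OF pC np] cpx nr_cov(1)[OF pC np]] .
  obtain w where w: "w \<noteq> ?p" "lq (lc ?p) w" "lq w (uc ?p)" "w \<noteq> lc ?p" "w \<noteq> uc ?p"
    using nr_delta[OF pC np] by blast
  have "lq ?p w" using nr_above[OF x] w \<open>x = lc ?p\<close> by simp
  then show False using nr_cov(2)[OF pC np] w unfolding covers_def by blast
qed

abbreviation "RR \<equiv> {x \<in> Cr. reducible P x}"
abbreviation "NN \<equiv> Cr - RR"
abbreviation "rr \<equiv> rk P"

lemma RR_fin: "finite RR" using fin by simp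
lemma RR_chain: "r \<in> RR \<Longrightarrow> r' \<in> RR \<Longrightarrow> lq r r' \<or> lq r' r" using rc by (auto simp: comparable_def)

lemma rk_mono: "lq r r' \<Longrightarrow> rr r \<le> rr r'"
  unfolding rk_def by (rule card_mono) (use fin trans in auto)

lemma rk_strict: assumes "r' \<in> RR" "lq r r'" "r \<noteq> r'" shows "rr r < rr r'"
  unfolding rk_def
proof (rule psubset_card_mono)
  show "finite {r'a \<in> Cr. reducible P r'a \<and> lq r'a r'}" using fin by simp
  show "{r'a \<in> Cr. reducible P r'a \<and> lq r'a r} \<subset> {r'a \<in> Cr. reducible P r'a \<and> lq r'a r'}"
  proof
    show "{r'a \<in> Cr. reducible P r'a \<and> lq r'a r} \<subseteq> {r'a \<in> Cr. reducible P r'a \<and> lq r'a r'}"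
      using assms trans by blast
    have "r' \<in> {r'a \<in> Cr. reducible P r'a \<and> lq r'a r'}" using assms refl by blast
    moreover have "r' \<notin> {r'a \<in> Cr. reducible P r'a \<and> lq r'a r}" using assms antisym by blast
    ultimately show "{r'a \<in> Cr. reducible P r'a \<and> lq r'a r} \<noteq> {r'a \<in> Cr. reducible P r'a \<and> lq r'a r'}" by blast
  qed
qed

lemma rk_le_iff: assumes r: "r \<in> RR" and r': "r' \<in> RR" shows "rr r \<le> rr r' \<longleftrightarrow> lq r r'"
proof
  assume le: "rr r \<le> rr r'"
  show "lq r r'"
  proof (rule ccontr)
    assume "\<not> lq r r'"
    then have "lq r' r" "r' \<noteq> r" using RR_chain[OF r r'] r refl by auto
    then have "rr r' < rr r" using rk_strict r by blast
    then show False using le by simp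
  qed
next
  assume "lq r r'" then show "rr r \<le> rr r'" by (rule rk_mono)
qed

lemma rk_inj: "inj_on rr RR"
  using rk_le_iff antisym by (metis (no_types, lifting) inj_onI order_refl)

abbreviation "nn \<equiv> card RR"

lemma rk_range: "rr ` RR = {1..nn}"
proof -
  have sub: "rr ` RR \<subseteq> {1..nn}"
  proof clarify
    fix r assume r: "r \<in> Cr" "reducible P r"
    have "r \<in> {r'\<in>Cr. reducible P r' \<and> lq r' r}" using r refl by blast
    then have "rr r \<ge> 1" unfolding rk_def using fin by (metis (no_types, lifting) One_nat_def Suc_leI card_gt_0_iff empty_iff finite_subset mem_Collect_eq subsetI)
    moreover have "rr r \<le> nn" unfolding rk_def by (rule card_mono) (use fin in auto)
    ultimately show "rr r \<in> {1..nn}" by simp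
  qed
  have "card (rr ` RR) = nn" using card_image[OF rk_inj] .
  then show ?thesis using sub by (simp add: card_subset_eq)
qed

lemma rk_eq: "r \<in> RR \<Longrightarrow> r' \<in> RR \<Longrightarrow> rr r = rr r' \<Longrightarrow> r = r'"
  using rk_inj by (meson inj_onD)

definition lbl :: "nat \<Rightarrow> nat \<times> nat" where
  "lbl x = (if reducible P x then (rr x, rr x) else (rr (lc x), rr (uc x)))"

lemma nr_facts: assumes x: "x \<in> Cr" "\<not> reducible P x"
  shows "lc x \<in> RR" "uc x \<in> RR" "lq (lc x) x" "lq x (uc x)" "lc x \<noteq> x" "uc x \<noteq> x"
    "lq (lc x) (uc x)" "lc x \<noteq> uc x" "rr (lc x) < rr (uc x)"
proof -
  show a: "lc x \<in> RR" "uc x \<in> RR" using lc_red[OF x] uc_red[OF x] nr_cov[OF x] coversD by auto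
  have "lq (lc x) x \<and> lc x \<noteq> x" using coversD[OF nr_cov(1)[OF x]] by blast
  moreover have "lq x (uc x) \<and> x \<noteq> uc x" using coversD[OF nr_cov(2)[OF x]] by blast
  ultimately show b: "lq (lc x) x" "lq x (uc x)" "lc x \<noteq> x" "uc x \<noteq> x" by auto
  show c: "lq (lc x) (uc x)" using b trans by blast
  show d: "lc x \<noteq> uc x" using b antisym by metis
  show "rr (lc x) < rr (uc x)" using rk_strict a c d by blast
qed

lemma ord_formula: assumes x: "x \<in> Cr" and y: "y \<in> Cr"
  shows "lq x y \<longleftrightarrow> x = y \<or> snd (lbl x) \<le> fst (lbl y)"
proof (cases "reducible P x"; cases "reducible P y")
  assume rx: "reducible P x" and ry: "reducible P y"
  then show ?thesis using rk_le_iff x y refl by (auto simp: lbl_def)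
next
  assume rx: "reducible P x" and ry: "\<not> reducible P y"
  have "lq x y \<longleftrightarrow> lq x (lc y)"
    using nr_below[OF y ry] nr_facts[OF y ry] trans rx ry by metis
  then show ?thesis using rk_le_iff[of x "lc y"] x rx nr_facts[OF y ry] ry by (auto simp: lbl_def)
next
  assume rx: "\<not> reducible P x" and ry: "reducible P y"
  have "lq x y \<longleftrightarrow> lq (uc x) y"
    using nr_above[OF x rx] nr_facts[OF x rx] trans rx ry by metis
  then show ?thesis using rk_le_iff[of "uc x" y] y ry nr_facts[OF x rx] rx by (auto simp: lbl_def)
next
  assume rx: "\<not> reducible P x" and ry: "\<not> reducible P y"
  have "lq x y \<longleftrightarrow> x = y \<or> lq (uc x) (lc y)"
  proof
    assume xy: "lq x y"
    show "x = y \<or> lq (uc x) (lc y)"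
    proof (cases "x = y")
      case False
      then have "lq (uc x) y" using nr_above[OF x rx] xy by blast
      moreover have "uc x \<noteq> y" using nr_facts(2)[OF x rx] ry by blast
      ultimately show ?thesis using nr_below[OF y ry] by blast
    qed simp
  next
    assume "x = y \<or> lq (uc x) (lc y)"
    then show "lq x y" using refl x nr_facts[OF x rx] nr_facts[OF y ry] trans by metis
  qed
  then show ?thesis using rk_le_iff[of "uc x" "lc y"] nr_facts[OF x rx] nr_facts[OF y ry] rx ry
    by (auto simp: lbl_def)
qed


definition fib :: "nat \<times> nat \<Rightarrow> nat set" where "fib v = {x \<in> NN. lbl x = v}"
abbreviation "EP0 \<equiv> lbl ` NN"

lemma NN_lbl: "x \<in> NN \<Longrightarrow> lbl x = (rr (lc x), rr (uc x))" by (auto simp: lbl_def)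
lemma RR_lbl: "x \<in> RR \<Longrightarrow> lbl x = (rr x, rr x)" by (auto simp: lbl_def)

lemma rk_bounds: "r \<in> RR \<Longrightarrow> 1 \<le> rr r \<and> rr r \<le> nn" using rk_range by auto

lemma EP0_bounds: "e \<in> EP0 \<Longrightarrow> 1 \<le> fst e \<and> fst e < snd e \<and> snd e \<le> nn"
proof -
  assume "e \<in> EP0"
  then obtain x where x: "x \<in> NN" "e = lbl x" by blast
  then have "x \<in> Cr" "\<not> reducible P x" by auto
  then show ?thesis using x NN_lbl nr_facts rk_bounds by fastforce
qed

lemma rk_surj: assumes "i \<in> {1..nn}" shows "\<exists>r\<in>RR. rr r = i"
proof -
  have "i \<in> rr ` RR" using assms by (simp only: rk_range)
  then show ?thesis by blast
qed

lemma cov_char: "covers P u v \<longleftrightarrow> (v \<in> NN \<and> u = lc v) \<or> (u \<in> NN \<and> v = uc u)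
    \<or> (u \<in> RR \<and> v \<in> RR \<and> rr v = Suc (rr u) \<and> fib (rr u, rr v) = {})"
proof
  assume c: "covers P u v"
  then have uv: "u \<in> Cr" "v \<in> Cr" "lq u v" "u \<noteq> v" using coversD by auto
  have nz: "\<not>(\<exists>z. lq u z \<and> lq z v \<and> z \<noteq> u \<and> z \<noteq> v)" using c by (simp add: covers_def)
  show "(v \<in> NN \<and> u = lc v) \<or> (u \<in> NN \<and> v = uc u)
    \<or> (u \<in> RR \<and> v \<in> RR \<and> rr v = Suc (rr u) \<and> fib (rr u, rr v) = {})"
  proof (cases "v \<in> NN")
    case True
    then have vn: "v \<in> Cr" "\<not> reducible P v" by auto
    have "lq u (lc v)" using nr_below[OF vn] uv by blast
    moreover have "lq (lc v) v" "lc v \<noteq> v" using nr_facts[OF vn] by auto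
    ultimately have "u = lc v" using nz by blast
    then show ?thesis using True by blast
  next
    case vR: False
    show ?thesis
    proof (cases "u \<in> NN")
      case True
      then have un: "u \<in> Cr" "\<not> reducible P u" by auto
      have "lq (uc u) v" using nr_above[OF un] uv by blast
      moreover have "lq u (uc u)" "uc u \<noteq> u" using nr_facts[OF un] by auto
      ultimately have "v = uc u" using nz by blast
      then show ?thesis using True by blast
    next
      case uR: False
      have R: "u \<in> RR" "v \<in> RR" using uR vR uv by auto
      have lt: "rr u < rr v" using rk_strict R uv by blast
      have s: "rr v = Suc (rr u)"
      proof (rule ccontr)
        assume "rr v \<noteq> Suc (rr u)"
        then have "Suc (rr u) < rr v" using lt by simp
        moreover have "Suc (rr u) \<in> {1..nn}" using calculation rk_bounds[OF R(2)] by simp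
        ultimately obtain r where r: "r \<in> RR" "rr r = Suc (rr u)" "Suc (rr u) < rr v" using rk_surj by blast
        have "lq u r" using rk_le_iff[OF R(1) r(1)] r by simp
        moreover have "lq r v" using rk_le_iff[OF r(1) R(2)] r by simp
        moreover have "r \<noteq> u" "r \<noteq> v" using r by auto
        ultimately show False using nz by blast
      qed
      have f: "fib (rr u, rr v) = {}"
      proof (rule ccontr)
        assume "fib (rr u, rr v) \<noteq> {}"
        then obtain x where x: "x \<in> NN" "lbl x = (rr u, rr v)" unfolding fib_def by blast
        then have xn: "x \<in> Cr" "\<not> reducible P x" by auto
        have "rr (lc x) = rr u" "rr (uc x) = rr v" using x NN_lbl by auto
        then have "lc x = u" "uc x = v" using rk_eq[OF nr_facts(1)[OF xn] R(1)] rk_eq[OF nr_facts(2)[OF xn] R(2)] by auto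
        then have "lq u x \<and> lq x v \<and> x \<noteq> u \<and> x \<noteq> v" using nr_facts[OF xn] by auto
        then show False using nz by blast
      qed
      show ?thesis using R s f by blast
    qed
  qed
next
  assume h: "(v \<in> NN \<and> u = lc v) \<or> (u \<in> NN \<and> v = uc u)
    \<or> (u \<in> RR \<and> v \<in> RR \<and> rr v = Suc (rr u) \<and> fib (rr u, rr v) = {})"
  then consider "v \<in> NN" "u = lc v" | "u \<in> NN" "v = uc u"
    | "u \<in> RR" "v \<in> RR" "rr v = Suc (rr u)" "fib (rr u, rr v) = {}" by blast
  then show "covers P u v"
  proof cases
    case 1 then show ?thesis using nr_cov by auto
  next
    case 2 then show ?thesis using nr_cov by auto
  next
    case 3
    have uv: "lq u v" "u \<noteq> v" using rk_le_iff[of u v] 3 by auto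
    have "\<not>(\<exists>z. lq u z \<and> lq z v \<and> z \<noteq> u \<and> z \<noteq> v)"
    proof
      assume "\<exists>z. lq u z \<and> lq z v \<and> z \<noteq> u \<and> z \<noteq> v"
      then obtain z where z: "lq u z" "lq z v" "z \<noteq> u" "z \<noteq> v" by blast
      then have zC: "z \<in> Cr" using ordD by blast
      show False
      proof (cases "reducible P z")
        case True
        then have "rr u < rr z" "rr z < rr v" using rk_strict 3 z zC by blast+
        then show False using 3 by simp
      next
        case False
        have "lq u (lc z)" using nr_below[OF zC False] z by blast
        then have a: "rr u \<le> rr (lc z)" by (rule rk_mono)
        have "lq (uc z) v" using nr_above[OF zC False] z by blast
        then have b: "rr (uc z) \<le> rr v" by (rule rk_mono)
        have "rr (lc z) < rr (uc z)" using nr_facts[OF zC False] by blast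
        then have "lbl z = (rr u, rr v)" using a b 3 NN_lbl[of z] zC False by auto
        then have "z \<in> fib (rr u, rr v)" unfolding fib_def using zC False by auto
        then show False using 3 by simp
      qed
    qed
    then show ?thesis unfolding covers_def using uv by blast
  qed
qed

abbreviation "I0 \<equiv> {i. 1 \<le> i \<and> i < nn \<and> fib (i, Suc i) = {}}"
abbreviation "I1 \<equiv> {i. 1 \<le> i \<and> i < nn \<and> fib (i, Suc i) \<noteq> {}}"

lemma NN_fin: "finite NN" using fin by simp

lemma nullity_count: "nullity P = int (card NN) - int (card I1)"
proof -
  let ?E1 = "(\<lambda>x. (lc x, x)) ` NN" and ?E2 = "(\<lambda>x. (x, uc x)) ` NN"
  let ?E3 = "{(u,v). u \<in> RR \<and> v \<in> RR \<and> rr v = Suc (rr u) \<and> fib (rr u, rr v) = {}}"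
  have E: "cover_edges P = ?E1 \<union> ?E2 \<union> ?E3"
    unfolding cover_edges_def using cov_char by auto
  have c1: "card ?E1 = card NN" by (rule card_image) (auto simp: inj_on_def)
  have c2: "card ?E2 = card NN" by (rule card_image) (auto simp: inj_on_def)
  have inj3: "inj_on (\<lambda>e. rr (fst e)) ?E3"
  proof (rule inj_onI)
    fix e e' assume a0: "e \<in> ?E3" "e' \<in> ?E3" "rr (fst e) = rr (fst e')"
    obtain u v where e: "e = (u,v)" by (cases e)
    obtain u' v' where e': "e' = (u',v')" by (cases e')
    have a: "u \<in> RR" "v \<in> RR" "u' \<in> RR" "v' \<in> RR" "rr v = Suc (rr u)" "rr v' = Suc (rr u')" "rr u = rr u'"
      using a0 e e' by auto
    have uu: "u = u'" using rk_eq a by blast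
    have "v = v'" using rk_eq[of v v'] a by simp
    then show "e = e'" using uu e e' by simp
  qed
  have img3: "(\<lambda>e. rr (fst e)) ` ?E3 = I0"
  proof
    show "(\<lambda>e. rr (fst e)) ` ?E3 \<subseteq> I0"
    proof clarify
      fix u v assume a: "u \<in> Cr" "reducible P u" "v \<in> Cr" "reducible P v" "rr v = Suc (rr u)" "fib (rr u, rr v) = {}"
      then have "1 \<le> rr u" "rr v \<le> nn" using rk_bounds[of u] rk_bounds[of v] by auto
      then show "1 \<le> rr (fst (u,v)) \<and> rr (fst (u,v)) < nn \<and> fib (rr (fst (u,v)), Suc (rr (fst (u,v)))) = {}"
        using a by auto
    qed
    show "I0 \<subseteq> (\<lambda>e. rr (fst e)) ` ?E3"
    proof
      fix i assume i: "i \<in> I0"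
      have ib: "i \<in> {1..nn}" "Suc i \<in> {1..nn}" using i by auto
      obtain u where u: "u \<in> RR" "rr u = i" using rk_surj[OF ib(1)] by blast
      obtain v where v: "v \<in> RR" "rr v = Suc i" using rk_surj[OF ib(2)] by blast
      have "(u,v) \<in> ?E3" using u v i by auto
      then show "i \<in> (\<lambda>e. rr (fst e)) ` ?E3" using u by force
    qed
  qed
  have c3: "card ?E3 = card I0" using card_image[OF inj3] img3 by simp
  have fE3: "finite ?E3" by (rule finite_subset[of _ "RR \<times> RR"]) (use RR_fin in auto)
  have d12: "?E1 \<inter> ?E2 = {}"
  proof -
    { fix x y assume xy: "x \<in> NN" "y \<in> NN" "(lc x, x) = (y, uc y)"
      then have "x = uc y" by simp
      moreover have "uc y \<in> RR" using nr_facts xy by auto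
      ultimately have False using xy by auto }
    then show ?thesis by blast
  qed
  have d3: "(?E1 \<union> ?E2) \<inter> ?E3 = {}" by auto
  have cE: "card (cover_edges P) = 2 * card NN + card I0"
    unfolding E using c1 c2 c3 d12 d3 NN_fin fE3 by (simp add: card_Un_disjoint)
  have I01: "I0 \<union> I1 = {1..<nn}" "I0 \<inter> I1 = {}" by auto
  have fI0: "finite I0" by (rule finite_subset[of _ "{1..<nn}"]) auto
  have fI1: "finite I1" by (rule finite_subset[of _ "{1..<nn}"]) auto
  have "card I0 + card I1 = card (I0 \<union> I1)" using card_Un_disjoint[OF fI0 fI1] I01(2) by simp
  also have "\<dots> = nn - 1" using I01(1) by simp
  finally have "card I0 + card I1 = nn - 1" .
  moreover have "nn \<ge> 1"
  proof -
    obtain b where b: "b \<in> Cr" "\<forall>x\<in>Cr. lq b x" using bot_ex by blast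
    then have "b \<in> RR" using bot_red by blast
    then show ?thesis using RR_fin by (metis One_nat_def Suc_leI card_gt_0_iff empty_iff)
  qed
  moreover have "card Cr = nn + card NN" using fin card_Un_disjoint[of RR NN]
    by (metis (no_types, lifting) Diff_disjoint Diff_partition finite_Diff mem_Collect_eq subsetI RR_fin)
  ultimately show ?thesis using nullity_lat cE by (simp add: of_nat_diff)
qed

lemma fib_fin: "finite (fib v)" unfolding fib_def by (rule finite_subset[OF _ NN_fin]) auto

lemma card_NN_sum: "card NN = (\<Sum>e\<in>EP0. card (fib e))"
proof -
  have "NN = \<Union>(fib ` EP0)" unfolding fib_def by auto
  moreover have "card (\<Union>(fib ` EP0)) = (\<Sum>e\<in>EP0. card (fib e))"
    by (rule card_UN_disjoint) (use NN_fin fib_fin in \<open>auto simp: fib_def\<close>)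
  ultimately show ?thesis by simp
qed

abbreviation "EPc \<equiv> {e \<in> EP0. snd e = Suc (fst e)}"

lemma card_EPc: "card EPc = card I1"
proof -
  have "inj_on fst EPc" by (auto simp: inj_on_def prod_eq_iff)
  moreover have "fst ` EPc = I1"
  proof
    show "fst ` EPc \<subseteq> I1"
    proof
      fix i assume "i \<in> fst ` EPc"
      then obtain e where e: "e \<in> EP0" "snd e = Suc (fst e)" "i = fst e" by blast
      then have ne: "fib e \<noteq> {}" unfolding fib_def by auto
      have ee: "e = (i, Suc i)" using e by (simp add: prod_eq_iff)
      have "1 \<le> i" "i < nn" using EP0_bounds[OF e(1)] e by auto
      then show "i \<in> I1" using ne ee by simp
    qed
    show "I1 \<subseteq> fst ` EPc"
    proof
      fix i assume "i \<in> I1"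
      then obtain x where "x \<in> fib (i, Suc i)" by auto
      then have "(i, Suc i) \<in> EPc" unfolding fib_def by force
      then show "i \<in> fst ` EPc" by (rule image_eqI[rotated]) simp
    qed
  qed
  ultimately show ?thesis using card_image by fastforce
qed

lemma fib_ge1: "e \<in> EP0 \<Longrightarrow> card (fib e) \<ge> 1"
proof -
  assume "e \<in> EP0"
  then have "fib e \<noteq> {}" unfolding fib_def by auto
  then show ?thesis using fib_fin by (metis One_nat_def Suc_leI card_gt_0_iff)
qed

lemma fib_ge2: assumes e: "e \<in> EPc" shows "card (fib e) \<ge> 2"
proof -
  obtain x where x: "x \<in> NN" "lbl x = e" using e by blast
  then have xn: "x \<in> Cr" "\<not> reducible P x" by auto
  obtain w where w: "w \<noteq> x" "lq (lc x) w" "lq w (uc x)" "w \<noteq> lc x" "w \<noteq> uc x" using nr_delta[OF xn] by blast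
  have wC: "w \<in> Cr" using w ordD by blast
  have se: "rr (uc x) = Suc (rr (lc x))" using e x NN_lbl by auto
  have wn: "\<not> reducible P w"
  proof
    assume "reducible P w"
    then have "rr (lc x) < rr w" "rr w < rr (uc x)" using rk_strict nr_facts[OF xn] w wC by blast+
    then show False using se by simp
  qed
  have "lq (lc x) (lc w)" using nr_below[OF wC wn] w by metis
  then have a: "rr (lc x) \<le> rr (lc w)" by (rule rk_mono)
  have "lq (uc w) (uc x)" using nr_above[OF wC wn] w by metis
  then have b: "rr (uc w) \<le> rr (uc x)" by (rule rk_mono)
  have "rr (lc w) < rr (uc w)" using nr_facts[OF wC wn] by blast
  then have "lbl w = lbl x" using a b se NN_lbl[of w] NN_lbl[of x] wC wn x by auto
  then have "{x, w} \<subseteq> fib e" using x wC wn unfolding fib_def by auto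
  then have "card {x,w} \<le> card (fib e)" using fib_fin card_mono by blast
  then show ?thesis using w by simp
qed

lemma colinv_att: assumes ci: "colinv P a b col" shows "\<exists>x\<in>NN. lc x = a \<and> uc x = b"
proof -
  obtain z w where zw: "btw P a b z" "btw P a b w" "col z \<noteq> col w" using ci by (auto simp: colinv_def)
  have sep: "\<And>z w. btw P a b z \<Longrightarrow> btw P a b w \<Longrightarrow> lq z w \<Longrightarrow> col z = col w"
    using ci by (auto simp: colinv_def)
  have same: "col r = col r'" if "r \<in> RR" "r' \<in> RR" "btw P a b r" "btw P a b r'" for r r'
    using RR_chain[OF that(1,2)] sep that by metis
  obtain u where u: "btw P a b u" "\<forall>r\<in>RR. btw P a b r \<longrightarrow> col r \<noteq> col u"
  proof (cases "\<exists>r0\<in>RR. btw P a b r0")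
    case True
    then obtain r0 where r0: "r0 \<in> RR" "btw P a b r0" by blast
    show ?thesis
    proof (cases "col z = col r0")
      case True
      have "col r \<noteq> col w" if "r \<in> RR" "btw P a b r" for r
        using same[OF that(1) r0(1) that(2) r0(2)] True zw(3) by simp
      then have "\<forall>r\<in>RR. btw P a b r \<longrightarrow> col r \<noteq> col w" by blast
      then show ?thesis using that zw by blast
    next
      case False
      have "col r \<noteq> col z" if "r \<in> RR" "btw P a b r" for r
        using same[OF that(1) r0(1) that(2) r0(2)] False by simp
      then have "\<forall>r\<in>RR. btw P a b r \<longrightarrow> col r \<noteq> col z" by blast
      then show ?thesis using that zw by blast
    qed
  next
    case False then show ?thesis using that zw by blast
  qed
  have uC: "u \<in> Cr" using u ordD unfolding btw_def by blast
  have un: "\<not> reducible P u" using u uC by blast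
  have ab: "lq a u" "a \<noteq> u" "lq u b" "u \<noteq> b" using u unfolding btw_def by auto
  have "lc u = a"
  proof (rule ccontr)
    assume ne: "lc u \<noteq> a"
    have "lq a (lc u)" using nr_below[OF uC un] ab by blast
    moreover have "lq (lc u) b" using nr_facts[OF uC un] ab trans by blast
    moreover have "lc u \<noteq> b" using nr_facts[OF uC un] ab antisym by metis
    ultimately have bt: "btw P a b (lc u)" using ne unfolding btw_def by blast
    then have "col (lc u) \<noteq> col u" using u nr_facts[OF uC un] by blast
    moreover have "col (lc u) = col u" using sep[OF bt u(1)] nr_facts[OF uC un] by blast
    ultimately show False by simp
  qed
  moreover have "uc u = b"
  proof (rule ccontr)
    assume ne: "uc u \<noteq> b"
    have "lq (uc u) b" using nr_above[OF uC un] ab by blast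
    moreover have "lq a (uc u)" using nr_facts[OF uC un] ab trans by blast
    moreover have "uc u \<noteq> a" using nr_facts[OF uC un] ab antisym by metis
    ultimately have bt: "btw P a b (uc u)" using ne unfolding btw_def by blast
    then have "col (uc u) \<noteq> col u" using u nr_facts[OF uC un] by blast
    moreover have "col u = col (uc u)" using sep[OF u(1) bt] nr_facts[OF uC un] by blast
    ultimately show False by simp
  qed
  ultimately show ?thesis using uC un by blast
qed

lemma no_isolated: assumes i: "i \<in> {1..nn}" shows "\<exists>e\<in>EP0. fst e = i \<or> snd e = i"
proof -
  obtain r where r: "r \<in> RR" "rr r = i" using rk_surj[OF i] by blast
  have "\<exists>x\<in>NN. lc x = r \<or> uc x = r"
  proof (rule ccontr)
    assume na: "\<not> (\<exists>x\<in>NN. lc x = r \<or> uc x = r)"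
    have up: "v = v'" if "covers P r v" "covers P r v'" for v v'
    proof -
      have "v \<in> RR \<and> rr v = Suc (rr r)" using that(1) cov_char na r by auto
      moreover have "v' \<in> RR \<and> rr v' = Suc (rr r)" using that(2) cov_char na r by auto
      ultimately show ?thesis using rk_eq by auto
    qed
    have low: "v = v'" if "covers P v r" "covers P v' r" for v v'
    proof -
      have "v \<in> RR \<and> rr r = Suc (rr v)" using that(1) cov_char na r by auto
      moreover have "v' \<in> RR \<and> rr r = Suc (rr v')" using that(2) cov_char na r by auto
      ultimately show ?thesis using rk_eq by auto
    qed
    have "doubly_irreducible P r"
      unfolding doubly_irreducible_def
      using r card_le_Suc0_iff_eq[OF fin_up, of r] card_le_Suc0_iff_eq[OF fin_low, of r] up low by auto
    then show False using red_imp_not_di r by blast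
  qed
  then obtain x where x: "x \<in> NN" "lc x = r \<or> uc x = r" by blast
  then have "lbl x \<in> EP0" "fst (lbl x) = i \<or> snd (lbl x) = i" using NN_lbl r by auto
  then show ?thesis by blast
qed

lemma EPof_eq: "EPof P = EP0"
proof
  show "EPof P \<subseteq> EP0"
  proof
    fix e assume "e \<in> EPof P"
    then obtain a x b where e: "e = (rr a, rr b)" "x \<in> Cr" "\<not> reducible P x" "covers P a x" "covers P x b"
      unfolding EPof_def by blast
    then have "a = lc x" "b = uc x" using di_low_unique di_up_unique nr_di nr_cov by blast+
    then have "e = lbl x" using e NN_lbl by auto
    then show "e \<in> EP0" using e by auto
  qed
  show "EP0 \<subseteq> EPof P"
  proof
    fix e assume "e \<in> EP0"
    then obtain x where x: "x \<in> NN" "e = lbl x" by blast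
    then have xn: "x \<in> Cr" "\<not> reducible P x" by auto
    have "e = (rr (lc x), rr (uc x))" using x NN_lbl by auto
    then show "e \<in> EPof P" unfolding EPof_def using xn nr_cov[OF xn] by blast
  qed
qed

end

locale fbbr = fbb +
  fixes C0 :: poset and xs :: "(nat \<times> nat \<times> poset) list"
  assumes rep: "adjunct_representation P C0 xs"
  and dist: "distinct (map (\<lambda>(a,b,C). (a,b)) xs)"
begin

lemma nullity_xs: "nullity P = int (length xs)"
proof -
  have ch: "is_chain C0" and v: "valid_adjunct_list C0 xs" and L: "adjunct_list C0 xs = P"
    using rep by (auto simp: adjunct_representation_def)
  interpret C: flat C0 using ch by (simp add: is_chain_def flat_of_lat)
  have "nullity C0 = 0" using C.chain_nullity ch by (simp add: is_chain_def)
  moreover have "nullity (adjunct_list C0 xs) = nullity C0 + int (length xs)"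
    using nullity_list[OF v] ch L lat by (simp add: is_chain_def)
  ultimately show ?thesis using L by simp
qed

lemma xs_le: "length xs \<le> card EP0"
proof -
  have v: "valid_adjunct_list C0 xs" and L: "adjunct_list C0 xs = P"
    using rep by (auto simp: adjunct_representation_def)
  let ?f = "\<lambda>(a::nat,b::nat,C::poset). (rr a, rr b)"
  have att: "\<exists>x\<in>NN. lc x = a \<and> uc x = b" if "(a,b,C) \<in> set xs" for a b C
    using colinv_att pair_colinv[OF v that] L by metis
  have sub: "?f ` set xs \<subseteq> EP0"
  proof
    fix y assume "y \<in> ?f ` set xs"
    then obtain a b C where abC: "(a,b,C) \<in> set xs" "y = (rr a, rr b)" by auto
    then obtain x where x: "x \<in> NN" "lc x = a" "uc x = b" using att by blast
    then have "lbl x = y" using NN_lbl abC by auto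
    then show "y \<in> EP0" using x by blast
  qed
  have dx: "distinct xs" "inj_on (\<lambda>(a,b,C). (a,b)) (set xs)" using dist by (auto simp: distinct_map)
  have "inj_on ?f (set xs)"
  proof (rule inj_onI)
    fix t t' assume m0: "t \<in> set xs" "t' \<in> set xs" "?f t = ?f t'"
    obtain a b C where t: "t = (a,b,C)" by (cases t)
    obtain a' b' C' where t': "t' = (a',b',C')" by (cases t')
    have m: "(a,b,C) \<in> set xs" "(a',b',C') \<in> set xs" "rr a = rr a'" "rr b = rr b'" using m0 t t' by auto
    obtain x where x: "x \<in> NN" "lc x = a" "uc x = b" using att m by blast
    obtain x' where x': "x' \<in> NN" "lc x' = a'" "uc x' = b'" using att m by blast
    have "a \<in> RR" "b \<in> RR" "a' \<in> RR" "b' \<in> RR" using x x' nr_facts by auto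
    then have "a = a'" "b = b'" using rk_eq m by auto
    then have "(\<lambda>(a,b,C). (a,b)) t = (\<lambda>(a,b,C). (a,b)) t'" using t t' by simp
    then show "t = t'" using dx(2) m0 unfolding inj_on_def by blast
  qed
  then have ci: "card (?f ` set xs) = card (set xs)" by (rule card_image)
  then have "card (?f ` set xs) = length xs" using distinct_card[OF dx(1)] by simp
  moreover have "finite EP0" using NN_fin by simp
  ultimately show ?thesis using card_mono[OF _ sub] by metis
qed

lemma tight: "\<forall>e\<in>EP0. card (fib e) = (if snd e = Suc (fst e) then 2 else 1)" and EP0_card: "nullity P = int (card EP0)"
proof -
  have fE: "finite EP0" using NN_fin by simp
  let ?t = "\<lambda>e. int (card (fib e)) - 1 - (if snd e = Suc (fst e) then 1 else 0)"
  have nn: "0 \<le> ?t e" if e: "e \<in> EP0" for e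
  proof (cases "snd e = Suc (fst e)")
    case True then have "e \<in> EPc" using e by simp
    then have "card (fib e) \<ge> 2" by (rule fib_ge2)
    then show ?thesis using True by simp
  next
    case False then show ?thesis using fib_ge1[OF e] by simp
  qed
  have s1: "(\<Sum>e\<in>EP0. (if snd e = Suc (fst e) then 1 else 0::int)) = int (card EPc)"
  proof -
    have "(\<Sum>e\<in>EP0. (if snd e = Suc (fst e) then 1 else 0::int)) = (\<Sum>e\<in>EPc. 1)"
      using sum.inter_filter[OF fE, of "\<lambda>_. 1::int" "\<lambda>e. snd e = Suc (fst e)"] by simp
    then show ?thesis by simp
  qed
  have A1: "(\<Sum>e\<in>EP0. ?t e) = int (card NN) - int (card EP0) - int (card EPc)"
    using card_NN_sum s1 by (simp add: sum_subtractf)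
  have A2: "int (card NN) - int (card EP0) - int (card EPc) = nullity P - int (card EP0)"
    using nullity_count card_EPc by simp
  have le: "(\<Sum>e\<in>EP0. ?t e) \<le> 0" using A1 A2 nullity_xs xs_le by simp
  have "(\<Sum>e\<in>EP0. ?t e) \<ge> 0" using nn by (simp add: sum_nonneg)
  then have z: "(\<Sum>e\<in>EP0. ?t e) = 0" using le by simp
  have iff: "(\<Sum>e\<in>EP0. ?t e) = 0 \<longleftrightarrow> (\<forall>e\<in>EP0. ?t e = 0)"
    by (rule sum_nonneg_eq_0_iff[OF fE]) (rule nn)
  then have all0: "\<forall>e\<in>EP0. ?t e = 0" using z by blast
  show "\<forall>e\<in>EP0. card (fib e) = (if snd e = Suc (fst e) then 2 else 1)"
  proof
    fix e assume "e \<in> EP0"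
    then have "?t e = 0" using all0 by blast
    then show "card (fib e) = (if snd e = Suc (fst e) then 2 else 1)"
      by (cases "snd e = Suc (fst e)") simp_all
  qed
  show "nullity P = int (card EP0)" using z A1 A2 by simp
qed

lemma fibers: "card {x \<in> Cr. lbl x = v} = fc nn EP0 v"
proof -
  obtain i j where v: "v = (i,j)" by (cases v)
  show ?thesis
  proof (cases "i = j")
    case True
    have "{x \<in> Cr. lbl x = v} = {r \<in> RR. rr r = i}"
      using v True NN_lbl RR_lbl nr_facts by fastforce
    moreover have "card {r \<in> RR. rr r = i} = (if 1 \<le> i \<and> i \<le> nn then 1 else 0)"
    proof (cases "1 \<le> i \<and> i \<le> nn")
      case True
      then obtain r where r: "r \<in> RR" "rr r = i" using rk_surj by force
      then have e1: "{r \<in> RR. rr r = i} = {r}" using rk_eq by blast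
      show ?thesis unfolding e1 using True by simp
    next
      case False
      then have e0: "{r \<in> RR. rr r = i} = {}" using rk_bounds by force
      show ?thesis unfolding e0 using False by simp
    qed
    ultimately show ?thesis using v True by (simp add: fc_def)
  next
    case False
    have "{x \<in> Cr. lbl x = v} = fib v" unfolding fib_def using v False RR_lbl by auto
    moreover have "card (fib v) = fc nn EP0 v"
    proof (cases "v \<in> EP0")
      case True
      then have "card (fib v) = (if snd v = Suc (fst v) then 2 else 1)" using tight by blast
      then show ?thesis using True v False by (simp add: fc_def)
    next
      case F2: False
      then have "fib v = {}" unfolding fib_def by auto
      then show ?thesis using F2 v False by (simp add: fc_def)
    qed
    ultimately show ?thesis by simp
  qed
qed

end




lemma iso_labels:
  fixes lP lQ :: "nat \<Rightarrow> nat \<times> nat"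
  assumes fP: "finite (carrier P)" and fQ: "finite (carrier Q)"
  and oP: "\<forall>x\<in>carrier P. \<forall>y\<in>carrier P. (x,y) \<in> ord P \<longleftrightarrow> x = y \<or> snd (lP x) \<le> fst (lP y)"
  and oQ: "\<forall>x\<in>carrier Q. \<forall>y\<in>carrier Q. (x,y) \<in> ord Q \<longleftrightarrow> x = y \<or> snd (lQ x) \<le> fst (lQ y)"
  and fb: "\<forall>v. card {x\<in>carrier P. lP x = v} = card {y\<in>carrier Q. lQ y = v}"
  shows "poset_iso P Q"
proof -
  define FP where "FP v = {x\<in>carrier P. lP x = v}" for v
  define FQ where "FQ v = {y\<in>carrier Q. lQ y = v}" for v
  have ex: "\<exists>g. bij_betw g (FP v) (FQ v)" for v
  proof -
    have "finite (FP v)" "finite (FQ v)" using fP fQ unfolding FP_def FQ_def by auto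
    moreover have "card (FP v) = card (FQ v)" using fb unfolding FP_def FQ_def by blast
    ultimately show ?thesis using finite_same_card_bij by blast
  qed
  define gv where "gv v = (SOME g. bij_betw g (FP v) (FQ v))" for v
  have gb: "bij_betw (gv v) (FP v) (FQ v)" for v using someI_ex[OF ex[of v]] unfolding gv_def .
  define h where "h x = gv (lP x) x" for x
  have hx: "h x \<in> carrier Q \<and> lQ (h x) = lP x" if "x \<in> carrier P" for x
  proof -
    have "x \<in> FP (lP x)" using that unfolding FP_def by simp
    then have "h x \<in> FQ (lP x)" using gb[of "lP x"] unfolding h_def bij_betw_def by blast
    then show ?thesis unfolding FQ_def by simp
  qed
  have inj: "inj_on h (carrier P)"
  proof (rule inj_onI)
    fix x y assume xy: "x \<in> carrier P" "y \<in> carrier P" "h x = h y"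
    then have "lP x = lP y" using hx by metis
    moreover have "x \<in> FP (lP x)" "y \<in> FP (lP x)" using xy calculation unfolding FP_def by auto
    ultimately show "x = y" using gb[of "lP x"] xy unfolding bij_betw_def inj_on_def h_def by metis
  qed
  have surj: "h ` carrier P = carrier Q"
  proof
    show "h ` carrier P \<subseteq> carrier Q" using hx by blast
    show "carrier Q \<subseteq> h ` carrier P"
    proof
      fix y assume y: "y \<in> carrier Q"
      then have "y \<in> FQ (lQ y)" unfolding FQ_def by simp
      then obtain x where x: "x \<in> FP (lQ y)" "gv (lQ y) x = y" using gb[of "lQ y"] unfolding bij_betw_def by force
      then have "x \<in> carrier P" "lP x = lQ y" unfolding FP_def by auto
      then show "y \<in> h ` carrier P" using x unfolding h_def by force
    qed
  qed
  have "bij_betw h (carrier P) (carrier Q)" using inj surj by (simp add: bij_betw_def)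
  moreover have "\<forall>x\<in>carrier P. \<forall>y\<in>carrier P. (x,y) \<in> ord P \<longleftrightarrow> (h x, h y) \<in> ord Q"
  proof (intro ballI)
    fix x y assume xy: "x \<in> carrier P" "y \<in> carrier P"
    have "(x,y) \<in> ord P \<longleftrightarrow> x = y \<or> snd (lP x) \<le> fst (lP y)" using oP xy by blast
    also have "\<dots> \<longleftrightarrow> h x = h y \<or> snd (lQ (h x)) \<le> fst (lQ (h y))" using hx xy inj unfolding inj_on_def by metis
    also have "\<dots> \<longleftrightarrow> (h x, h y) \<in> ord Q" using oQ hx xy by metis
    finally show "(x,y) \<in> ord P \<longleftrightarrow> (h x, h y) \<in> ord Q" .
  qed
  ultimately show ?thesis unfolding poset_iso_def by blast
qed

lemma iso_refl: "poset_iso P P"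
  unfolding poset_iso_def by (rule exI[of _ id]) auto

lemma iso_sym: assumes "poset_iso P Q" shows "poset_iso Q P"
proof -
  obtain h where h: "bij_betw h (carrier P) (carrier Q)"
    "\<forall>x\<in>carrier P. \<forall>y\<in>carrier P. (x,y) \<in> ord P \<longleftrightarrow> (h x, h y) \<in> ord Q"
    using assms unfolding poset_iso_def by blast
  let ?g = "the_inv_into (carrier P) h"
  have g: "bij_betw ?g (carrier Q) (carrier P)" using bij_betw_the_inv_into[OF h(1)] .
  have "\<forall>u\<in>carrier Q. \<forall>v\<in>carrier Q. (u,v) \<in> ord Q \<longleftrightarrow> (?g u, ?g v) \<in> ord P"
  proof (intro ballI)
    fix u v assume uv: "u \<in> carrier Q" "v \<in> carrier Q"
    have "?g u \<in> carrier P" "?g v \<in> carrier P" using bij_betw_apply[OF g uv(1)] bij_betw_apply[OF g uv(2)] by auto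
    moreover have "h (?g u) = u" "h (?g v) = v" using f_the_inv_into_f_bij_betw[OF h(1)] uv by auto
    ultimately show "(u,v) \<in> ord Q \<longleftrightarrow> (?g u, ?g v) \<in> ord P" using h(2) by metis
  qed
  then show ?thesis unfolding poset_iso_def using g by blast
qed

lemma iso_trans: assumes "poset_iso P Q" "poset_iso Q R" shows "poset_iso P R"
proof -
  obtain h where h: "bij_betw h (carrier P) (carrier Q)"
    "\<forall>x\<in>carrier P. \<forall>y\<in>carrier P. (x,y) \<in> ord P \<longleftrightarrow> (h x, h y) \<in> ord Q"
    using assms(1) unfolding poset_iso_def by blast
  obtain k where k: "bij_betw k (carrier Q) (carrier R)"
    "\<forall>x\<in>carrier Q. \<forall>y\<in>carrier Q. (x,y) \<in> ord Q \<longleftrightarrow> (k x, k y) \<in> ord R"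
    using assms(2) unfolding poset_iso_def by blast
  have "bij_betw (k \<circ> h) (carrier P) (carrier R)" using bij_betw_trans h(1) k(1) by blast
  moreover have "\<forall>x\<in>carrier P. \<forall>y\<in>carrier P. (x,y) \<in> ord P \<longleftrightarrow> ((k \<circ> h) x, (k \<circ> h) y) \<in> ord R"
  proof (intro ballI)
    fix x y assume xy: "x \<in> carrier P" "y \<in> carrier P"
    have "h x \<in> carrier Q" "h y \<in> carrier Q" using bij_betw_apply[OF h(1) xy(1)] bij_betw_apply[OF h(1) xy(2)] by auto
    then show "(x,y) \<in> ord P \<longleftrightarrow> ((k \<circ> h) x, (k \<circ> h) y) \<in> ord R" using h(2) k(2) xy by simp
  qed
  ultimately show ?thesis unfolding poset_iso_def by blast
qed

locale isoP =
  fixes P Q :: poset and h :: "nat \<Rightarrow> nat"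
  assumes fpP: "finite_poset P" and fpQ: "finite_poset Q"
  and hb: "bij_betw h (carrier P) (carrier Q)"
  and ho: "\<forall>x\<in>carrier P. \<forall>y\<in>carrier P. (x,y) \<in> ord P \<longleftrightarrow> (h x, h y) \<in> ord Q"
begin

lemma hC: "x \<in> carrier P \<Longrightarrow> h x \<in> carrier Q" using bij_betw_apply[OF hb] by blast
lemma hinj: "x \<in> carrier P \<Longrightarrow> y \<in> carrier P \<Longrightarrow> h x = h y \<longleftrightarrow> x = y" using hb by (auto simp: bij_betw_def inj_on_def)
lemma hsurj: "w \<in> carrier Q \<Longrightarrow> \<exists>w'\<in>carrier P. w = h w'" using hb by (auto simp: bij_betw_def)
lemma oPsub: "(x,y) \<in> ord P \<Longrightarrow> x \<in> carrier P \<and> y \<in> carrier P"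
proof -
  have "ord P \<subseteq> carrier P \<times> carrier P" using fpP by (simp add: finite_poset_def)
  then show "(x,y) \<in> ord P \<Longrightarrow> x \<in> carrier P \<and> y \<in> carrier P" by blast
qed
lemma oQsub: "(x,y) \<in> ord Q \<Longrightarrow> x \<in> carrier Q \<and> y \<in> carrier Q"
proof -
  have "ord Q \<subseteq> carrier Q \<times> carrier Q" using fpQ by (simp add: finite_poset_def)
  then show "(x,y) \<in> ord Q \<Longrightarrow> x \<in> carrier Q \<and> y \<in> carrier Q" by blast
qed

lemma lub_iff: assumes "x \<in> carrier P" "y \<in> carrier P" "z \<in> carrier P"
  shows "is_lub P y z x \<longleftrightarrow> is_lub Q (h y) (h z) (h x)"
proof
  assume l: "is_lub P y z x"
  show "is_lub Q (h y) (h z) (h x)" unfolding is_lub_def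
  proof (intro conjI ballI impI)
    show "h x \<in> carrier Q" using hC assms by blast
    show "(h y, h x) \<in> ord Q" "(h z, h x) \<in> ord Q" using l ho assms unfolding is_lub_def by blast+
    fix w assume w: "w \<in> carrier Q" "(h y, w) \<in> ord Q \<and> (h z, w) \<in> ord Q"
    then obtain w' where w': "w' \<in> carrier P" "w = h w'" using hsurj by blast
    then have "(y,w') \<in> ord P" "(z,w') \<in> ord P" using w ho assms by blast+
    then have "(x,w') \<in> ord P" using l w' unfolding is_lub_def by blast
    then show "(h x, w) \<in> ord Q" using ho w' assms by blast
  qed
next
  assume l: "is_lub Q (h y) (h z) (h x)"
  show "is_lub P y z x" unfolding is_lub_def
  proof (intro conjI ballI impI)
    show "x \<in> carrier P" using assms by blast
    show "(y, x) \<in> ord P" "(z, x) \<in> ord P" using l ho assms unfolding is_lub_def by blast+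
    fix w assume w: "w \<in> carrier P" "(y, w) \<in> ord P \<and> (z, w) \<in> ord P"
    then have "(h y, h w) \<in> ord Q" "(h z, h w) \<in> ord Q" using ho assms by blast+
    then have "(h x, h w) \<in> ord Q" using l hC w unfolding is_lub_def by blast
    then show "(x, w) \<in> ord P" using ho w assms by blast
  qed
qed

lemma glb_iff: assumes "x \<in> carrier P" "y \<in> carrier P" "z \<in> carrier P"
  shows "is_glb P y z x \<longleftrightarrow> is_glb Q (h y) (h z) (h x)"
proof
  assume l: "is_glb P y z x"
  show "is_glb Q (h y) (h z) (h x)" unfolding is_glb_def
  proof (intro conjI ballI impI)
    show "h x \<in> carrier Q" using hC assms by blast
    show "(h x, h y) \<in> ord Q" "(h x, h z) \<in> ord Q" using l ho assms unfolding is_glb_def by blast+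
    fix w assume w: "w \<in> carrier Q" "(w, h y) \<in> ord Q \<and> (w, h z) \<in> ord Q"
    then obtain w' where w': "w' \<in> carrier P" "w = h w'" using hsurj by blast
    then have "(w',y) \<in> ord P" "(w',z) \<in> ord P" using w ho assms by blast+
    then have "(w',x) \<in> ord P" using l w' unfolding is_glb_def by blast
    then show "(w, h x) \<in> ord Q" using ho w' assms by blast
  qed
next
  assume l: "is_glb Q (h y) (h z) (h x)"
  show "is_glb P y z x" unfolding is_glb_def
  proof (intro conjI ballI impI)
    show "x \<in> carrier P" using assms by blast
    show "(x, y) \<in> ord P" "(x, z) \<in> ord P" using l ho assms unfolding is_glb_def by blast+
    fix w assume w: "w \<in> carrier P" "(w, y) \<in> ord P \<and> (w, z) \<in> ord P"
    then have "(h w, h y) \<in> ord Q" "(h w, h z) \<in> ord Q" using ho assms by blast+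
    then have "(h w, h x) \<in> ord Q" using l hC w unfolding is_glb_def by blast
    then show "(w, x) \<in> ord P" using ho w assms by blast
  qed
qed

lemma red_iff: assumes x: "x \<in> carrier P" shows "reducible P x \<longleftrightarrow> reducible Q (h x)"
proof
  assume "reducible P x"
  then obtain y z where yz: "y \<in> carrier P" "z \<in> carrier P" "y \<noteq> x" "z \<noteq> x" "is_lub P y z x \<or> is_glb P y z x"
    unfolding reducible_def by blast
  then have "h y \<noteq> h x" "h z \<noteq> h x" using hinj x by auto
  moreover have "is_lub Q (h y) (h z) (h x) \<or> is_glb Q (h y) (h z) (h x)" using yz lub_iff glb_iff x by blast
  ultimately show "reducible Q (h x)" unfolding reducible_def using hC x yz by blast
next
  assume "reducible Q (h x)"
  then obtain y' z' where yz: "y' \<in> carrier Q" "z' \<in> carrier Q" "y' \<noteq> h x" "z' \<noteq> h x"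
    "is_lub Q y' z' (h x) \<or> is_glb Q y' z' (h x)"
    unfolding reducible_def by blast
  obtain y where y: "y \<in> carrier P" "y' = h y" using hsurj yz by blast
  obtain z where z: "z \<in> carrier P" "z' = h z" using hsurj yz by blast
  have "y \<noteq> x" "z \<noteq> x" using yz y z by auto
  moreover have "is_lub P y z x \<or> is_glb P y z x" using yz y z lub_iff glb_iff x by blast
  ultimately show "reducible P x" unfolding reducible_def using x y z by blast
qed

lemma covers_iff: assumes "a \<in> carrier P" "x \<in> carrier P" shows "covers P a x \<longleftrightarrow> covers Q (h a) (h x)"
proof
  assume c: "covers P a x"
  show "covers Q (h a) (h x)" unfolding covers_def
  proof (intro conjI)
    show "(h a, h x) \<in> ord Q" using c ho assms unfolding covers_def by blast
    show "h a \<noteq> h x" using c hinj assms unfolding covers_def by blast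
    show "\<not>(\<exists>z. (h a, z) \<in> ord Q \<and> (z, h x) \<in> ord Q \<and> z \<noteq> h a \<and> z \<noteq> h x)"
    proof
      assume "\<exists>z. (h a, z) \<in> ord Q \<and> (z, h x) \<in> ord Q \<and> z \<noteq> h a \<and> z \<noteq> h x"
      then obtain z where z: "(h a, z) \<in> ord Q" "(z, h x) \<in> ord Q" "z \<noteq> h a" "z \<noteq> h x" by blast
      then obtain z' where z': "z' \<in> carrier P" "z = h z'" using hsurj oQsub by blast
      then have "(a,z') \<in> ord P" "(z',x) \<in> ord P" "z' \<noteq> a" "z' \<noteq> x" using z ho assms by auto
      then show False using c unfolding covers_def by blast
    qed
  qed
next
  assume c: "covers Q (h a) (h x)"
  show "covers P a x" unfolding covers_def
  proof (intro conjI)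
    show "(a, x) \<in> ord P" using c ho assms unfolding covers_def by blast
    show "a \<noteq> x" using c unfolding covers_def by blast
    show "\<not>(\<exists>z. (a, z) \<in> ord P \<and> (z, x) \<in> ord P \<and> z \<noteq> a \<and> z \<noteq> x)"
    proof
      assume "\<exists>z. (a, z) \<in> ord P \<and> (z, x) \<in> ord P \<and> z \<noteq> a \<and> z \<noteq> x"
      then obtain z where z: "(a, z) \<in> ord P" "(z, x) \<in> ord P" "z \<noteq> a" "z \<noteq> x" by blast
      then have zC: "z \<in> carrier P" using oPsub by blast
      then have "(h a, h z) \<in> ord Q" "(h z, h x) \<in> ord Q" "h z \<noteq> h a" "h z \<noteq> h x"
        using z ho assms hinj by auto
      then show False using c unfolding covers_def by blast
    qed
  qed
qed

lemma rk_iff: assumes a: "a \<in> carrier P" shows "rk P a = rk Q (h a)"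
proof -
  have "{r'\<in>carrier Q. reducible Q r' \<and> (r', h a) \<in> ord Q} = h ` {r\<in>carrier P. reducible P r \<and> (r,a) \<in> ord P}"
  proof
    show "{r'\<in>carrier Q. reducible Q r' \<and> (r', h a) \<in> ord Q} \<subseteq> h ` {r\<in>carrier P. reducible P r \<and> (r,a) \<in> ord P}"
    proof clarify
      fix r' assume r': "r' \<in> carrier Q" "reducible Q r'" "(r', h a) \<in> ord Q"
      then obtain r where r: "r \<in> carrier P" "r' = h r" using hsurj by blast
      then show "r' \<in> h ` {r\<in>carrier P. reducible P r \<and> (r,a) \<in> ord P}" using r' red_iff ho a by auto
    qed
    show "h ` {r\<in>carrier P. reducible P r \<and> (r,a) \<in> ord P} \<subseteq> {r'\<in>carrier Q. reducible Q r' \<and> (r', h a) \<in> ord Q}"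
      using red_iff ho a hC by auto
  qed
  moreover have "inj_on h {r\<in>carrier P. reducible P r \<and> (r,a) \<in> ord P}"
    using hb by (auto simp: bij_betw_def inj_on_def)
  ultimately show ?thesis unfolding rk_def by (simp add: card_image)
qed

lemma EPof_sub: "EPof P \<subseteq> EPof Q"
proof
  fix e assume "e \<in> EPof P"
  then obtain a x b where e: "e = (rk P a, rk P b)" "x \<in> carrier P" "\<not> reducible P x" "covers P a x" "covers P x b"
    unfolding EPof_def by blast
  have ab: "a \<in> carrier P" "b \<in> carrier P" using e oPsub unfolding covers_def by blast+
  have "h x \<in> carrier Q" "\<not> reducible Q (h x)" "covers Q (h a) (h x)" "covers Q (h x) (h b)"
    using e ab hC red_iff covers_iff by auto
  moreover have "e = (rk Q (h a), rk Q (h b))" using e ab rk_iff by auto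
  ultimately show "e \<in> EPof Q" unfolding EPof_def by blast
qed

end

lemma iso_EPof: assumes "poset_iso P Q" "finite_poset P" "finite_poset Q" shows "EPof P = EPof Q"
proof -
  have "EPof P \<subseteq> EPof Q" if a: "poset_iso P Q" "finite_poset P" "finite_poset Q" for P Q
  proof -
    obtain h where "bij_betw h (carrier P) (carrier Q)"
      "\<forall>x\<in>carrier P. \<forall>y\<in>carrier P. (x,y) \<in> ord P \<longleftrightarrow> (h x, h y) \<in> ord Q"
      using a(1) unfolding poset_iso_def by blast
    then interpret isoP P Q h using a by unfold_locales
    show ?thesis by (rule EPof_sub)
  qed
  then show ?thesis using assms iso_sym by blast
qed




definition graphOf :: "poset \<Rightarrow> nat set set" where "graphOf L = (\<lambda>(i,j). {i,j}) ` EPof L"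

lemma fbbr_of_FBB:
  assumes L: "L \<in> FBB n l" and n: "n \<ge> 1"
  shows "\<exists>C0 xs. fbbr L C0 xs" "num_reducible L = n" "nullity L = l"
proof -
  have fb: "fundamental_basic_block L" "num_reducible L = n" "nullity L = l" using L by (auto simp: FBB_def)
  then obtain C0 xs where r: "adjunct_representation L C0 xs" "distinct (map (\<lambda>(a,b,C). (a,b)) xs)"
    by (auto simp: fundamental_basic_block_def)
  have lat: "finite_lattice L" and rc: "\<forall>x y. reducible L x \<and> reducible L y \<longrightarrow> comparable L x y"
    and bb: "basic_block L"
    using fb by (auto simp: fundamental_basic_block_def RC_lattice_def)
  interpret flat L using lat by (rule flat_of_lat)
  have c2: "card (carrier L) \<ge> 2"
  proof -
    have "card {x \<in> carrier L. reducible L x} \<ge> 1" using fb n by (simp add: num_reducible_def)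
    then obtain x where x: "x \<in> carrier L" "reducible L x" by (metis (no_types, lifting) Collect_empty_eq card.empty not_one_le_zero)
    then obtain y where y: "y \<in> carrier L" "y \<noteq> x" unfolding reducible_def by blast
    have "{x,y} \<subseteq> carrier L" using x y by auto
    then have "card {x,y} \<le> card (carrier L)" using fin card_mono by blast
    then show ?thesis using y by simp
  qed
  have "fbbr L C0 xs" by (unfold_locales) (use rc bb c2 r in auto)
  then show "\<exists>C0 xs. fbbr L C0 xs" by blast
  show "num_reducible L = n" "nullity L = l" using fb by auto
qed

lemma EPG_img: assumes "\<forall>e\<in>E. fst e < snd e" shows "EPG ((\<lambda>(i,j). {i,j}) ` E) = E"
proof
  show "EPG ((\<lambda>(i,j). {i,j}) ` E) \<subseteq> E"
  proof clarify
    fix i j assume "(i,j) \<in> EPG ((\<lambda>(i,j). {i,j}) ` E)"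
    then obtain a b where "i < j" "{i,j} = {a,b}" "(a,b) \<in> E" unfolding EPG_def by auto
    moreover then have "a < b" using assms by auto
    ultimately show "(i,j) \<in> E" by (metis doubleton_eq_iff less_asym)
  qed
  show "E \<subseteq> EPG ((\<lambda>(i,j). {i,j}) ` E)"
    using assms unfolding EPG_def by force
qed

context fbbr
begin

lemma nn_eq: "nn = num_reducible P" by (simp add: num_reducible_def)

lemma graph_in_D: assumes l: "nullity P = int l" shows "graphOf P \<in> D_graphs nn l"
proof -
  have E: "EPof P = EP0" by (rule EPof_eq)
  have bd: "\<forall>e\<in>EP0. 1 \<le> fst e \<and> fst e < snd e \<and> snd e \<le> nn" using EP0_bounds by blast
  have inj: "inj_on (\<lambda>(i,j). {i,j}) EP0"
  proof (rule inj_onI)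
    fix e e' assume ee: "e \<in> EP0" "e' \<in> EP0" "(\<lambda>(i,j). {i,j}) e = (\<lambda>(i,j). {i::nat,j}) e'"
    obtain a b where e: "e = (a,b)" by (cases e)
    obtain a' b' where e': "e' = (a',b')" by (cases e')
    have "fst e < snd e" "fst e' < snd e'" using bd ee(1) ee(2) by blast+
    then have "a < b" "a' < b'" using e e' by auto
    moreover have "{a,b} = {a',b'}" using ee e e' by simp
    ultimately show "e = e'" using e e' by (metis doubleton_eq_iff less_asym)
  qed
  have "card (graphOf P) = card EP0" unfolding graphOf_def E using card_image[OF inj] .
  also have "\<dots> = l" using EP0_card l by simp
  finally have c: "card (graphOf P) = l" .
  have s: "graphOf P \<subseteq> {{i,j} | i j. 1 \<le> i \<and> i < j \<and> j \<le> nn}"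
  proof
    fix S assume "S \<in> graphOf P"
    then obtain a b where ab: "(a,b) \<in> EP0" "S = {a,b}" unfolding graphOf_def E by auto
    then have "1 \<le> a" "a < b" "b \<le> nn" using bd[rule_format, OF ab(1)] by auto
    then show "S \<in> {{i,j} | i j. 1 \<le> i \<and> i < j \<and> j \<le> nn}" using ab by blast
  qed
  have cov: "\<forall>v\<in>{1..nn}. \<exists>e\<in>graphOf P. v \<in> e"
  proof
    fix v assume "v \<in> {1..nn}"
    then obtain e where e: "e \<in> EP0" "fst e = v \<or> snd e = v" using no_isolated by blast
    obtain a b where ab: "e = (a,b)" by (cases e)
    have m1: "{a,b} \<in> graphOf P" unfolding graphOf_def E using e(1) ab by force
    have m2: "v \<in> {a,b}" using e ab by auto
    show "\<exists>e\<in>graphOf P. v \<in> e" using m1 m2 by blast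
  qed
  show ?thesis unfolding D_graphs_def using c s cov by blast
qed

lemma iso_Lat: assumes l: "nullity P = int l" shows "poset_iso P (Lat nn (graphOf P))"
proof -
  let ?G = "graphOf P"
  have GD: "?G \<in> D_graphs nn l" using graph_in_D[OF l] .
  have n1: "nn \<ge> 1"
  proof -
    obtain b where b: "b \<in> Cr" "\<forall>x\<in>Cr. lq b x" using bot_ex by blast
    then have "b \<in> RR" using bot_red by blast
    then show ?thesis using RR_fin by (metis One_nat_def Suc_leI card_gt_0_iff empty_iff)
  qed
  interpret C: canon nn l ?G using GD n1 by unfold_locales
  have EPG: "EPG ?G = EP0"
    unfolding graphOf_def EPof_eq using EPG_img EP0_bounds by simp
  show ?thesis
  proof (rule iso_labels[where lP = lbl and lQ = "\<lambda>y. (lo3 y, hi3 y)"])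
    show "finite (carrier P)" using fin .
    show "finite (carrier (Lat nn ?G))" using C.finS C.L_def' by simp
    show "\<forall>x\<in>carrier P. \<forall>y\<in>carrier P. (x,y) \<in> ord P \<longleftrightarrow> x = y \<or> snd (lbl x) \<le> fst (lbl y)"
      using ord_formula by blast
    show "\<forall>x\<in>carrier (Lat nn ?G). \<forall>y\<in>carrier (Lat nn ?G). (x,y) \<in> ord (Lat nn ?G) \<longleftrightarrow>
       x = y \<or> snd (lo3 x, hi3 x) \<le> fst (lo3 y, hi3 y)"
      using C.L_def' by (simp add: Sord_def)
    show "\<forall>v. card {x\<in>carrier P. lbl x = v} = card {y\<in>carrier (Lat nn ?G). (lo3 y, hi3 y) = v}"
      using fibers C.fibL C.L_def' EPG by simp
  qed
qed

end

lemma FBB_lat: "L \<in> FBB n l \<Longrightarrow> finite_lattice L"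
  by (auto simp: FBB_def fundamental_basic_block_def RC_lattice_def)

lemma FBB_fp: "L \<in> FBB n l \<Longrightarrow> finite_poset L"
  using FBB_lat by (auto simp: finite_lattice_def)

definition cls :: "nat \<Rightarrow> int \<Rightarrow> poset \<Rightarrow> poset set" where
  "cls n l L = {M \<in> FBB n l. poset_iso L M}"

lemma F_classes_cls: "F_classes n l = cls n l ` FBB n l"
  unfolding F_classes_def cls_def by simp

lemma cls_eq: assumes "L \<in> FBB n l" "M \<in> FBB n l" shows "cls n l L = cls n l M \<longleftrightarrow> poset_iso L M"
proof
  assume eq: "cls n l L = cls n l M"
  have "M \<in> cls n l M" using assms iso_refl by (simp add: cls_def)
  then have "M \<in> cls n l L" using eq by simp
  then show "poset_iso L M" by (simp add: cls_def)
next
  assume i: "poset_iso L M"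
  show "cls n l L = cls n l M"
    unfolding cls_def using i iso_sym iso_trans by blast
qed

lemma general_case:
  fixes n l :: nat
  assumes n: "n \<ge> 1"
  shows "\<exists>g. bij_betw g (F_classes n (int l)) (D_graphs n l)"
proof -
  let ?F = "FBB n (int l)"
  have props: "graphOf L \<in> D_graphs n l \<and> poset_iso L (Lat n (graphOf L))" if L: "L \<in> ?F" for L
  proof -
    obtain C0 xs where r: "fbbr L C0 xs" using fbbr_of_FBB[OF L n] by blast
    interpret fbbr L C0 xs by (rule r)
    have "nn = n" "nullity L = int l" using fbbr_of_FBB[OF L n] nn_eq by auto
    then show ?thesis using graph_in_D iso_Lat by metis
  qed
  have inv: "graphOf L = graphOf M" if "L \<in> ?F" "M \<in> ?F" "poset_iso L M" for L M
    unfolding graphOf_def using iso_EPof[OF that(3) FBB_fp[OF that(1)] FBB_fp[OF that(2)]] by simp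
  have lat: "Lat n G \<in> ?F \<and> graphOf (Lat n G) = G" if G: "G \<in> D_graphs n l" for G
  proof -
    interpret canon n l G using G n by unfold_locales
    have "graphOf (Lat n G) = G" unfolding graphOf_def EPof_L using G_img by simp
    then show ?thesis using L_FBB by simp
  qed
  define g where "g X = graphOf (SOME L. L \<in> X)" for X
  have gc: "g (cls n (int l) L) = graphOf L" if L: "L \<in> ?F" for L
  proof -
    have "L \<in> cls n (int l) L" using L iso_refl by (simp add: cls_def)
    then have "(SOME M. M \<in> cls n (int l) L) \<in> cls n (int l) L" by (rule someI)
    then have "(SOME M. M \<in> cls n (int l) L) \<in> ?F" "poset_iso L (SOME M. M \<in> cls n (int l) L)"
      by (auto simp: cls_def)
    then show ?thesis unfolding g_def using inv L by metis
  qed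
  have "bij_betw g (F_classes n (int l)) (D_graphs n l)"
    unfolding bij_betw_def F_classes_cls
  proof
    show "inj_on g (cls n (int l) ` ?F)"
    proof (rule inj_onI, clarify)
      fix L M assume LM: "L \<in> ?F" "M \<in> ?F" "g (cls n (int l) L) = g (cls n (int l) M)"
      then have "graphOf L = graphOf M" using gc by metis
      then have "poset_iso L M" using props LM iso_sym iso_trans by metis
      then show "cls n (int l) L = cls n (int l) M" using cls_eq LM by blast
    qed
    show "g ` cls n (int l) ` ?F = D_graphs n l"
    proof
      show "g ` cls n (int l) ` ?F \<subseteq> D_graphs n l" using gc props by auto
      show "D_graphs n l \<subseteq> g ` cls n (int l) ` ?F"
      proof
        fix G assume "G \<in> D_graphs n l"
        then have "Lat n G \<in> ?F" "g (cls n (int l) (Lat n G)) = G" using lat gc by auto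
        then show "G \<in> g ` cls n (int l) ` ?F" by blast
      qed
    qed
  qed
  then show ?thesis by blast
qed


definition S1 :: poset where "S1 = ({0}, {(0,0)})"

lemma S1_chain: "is_chain S1" unfolding S1_def by (rule chain_single)

lemma S1_nred: "\<not> reducible S1 x" unfolding reducible_def S1_def by auto

lemma S1_FBB: "S1 \<in> FBB 0 0"
proof -
  have lat: "finite_lattice S1" using S1_chain by (simp add: is_chain_def)
  have rc: "RC_lattice S1" unfolding RC_lattice_def using lat S1_nred by blast
  have bb: "basic_block S1" unfolding basic_block_def S1_def by simp
  have mc: "maximal_chain S1 (carrier S1)"
    unfolding maximal_chain_def S1_def comparable_def by auto
  have rep: "adjunct_representation S1 S1 []" unfolding adjunct_representation_def
    using S1_chain mc by simp
  have "\<exists>C0 xs. adjunct_representation S1 C0 xs \<and> distinct (map (\<lambda>(a,b,C). (a,b)) xs)"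
    using rep by (intro exI[of _ S1] exI[of _ "[] :: (nat \<times> nat \<times> poset) list"]) simp
  then have fb: "fundamental_basic_block S1" unfolding fundamental_basic_block_def using rc bb by blast
  have nr: "num_reducible S1 = 0" unfolding num_reducible_def using S1_nred by simp
  interpret fl: flat S1 using lat by (rule flat_of_lat)
  have E: "cover_edges S1 = {}" unfolding cover_edges_def covers_def S1_def by auto
  have "nullity S1 = 0" using fl.nullity_lat E by (simp add: S1_def)
  then show ?thesis unfolding FBB_def using fb nr by simp
qed

lemma FBB0_iso: assumes L: "L \<in> FBB 0 0" shows "poset_iso L S1"
proof -
  have lat: "finite_lattice L" using FBB_lat[OF L] .
  interpret fl: flat L using lat by (rule flat_of_lat)
  have fb: "fundamental_basic_block L" "num_reducible L = 0" using L by (auto simp: FBB_def)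
  have rc: "\<forall>x y. reducible L x \<and> reducible L y \<longrightarrow> comparable L x y" and bb: "basic_block L"
    using fb by (auto simp: fundamental_basic_block_def RC_lattice_def)
  have c1: "card (carrier L) = 1"
  proof (rule ccontr)
    assume "card (carrier L) \<noteq> 1"
    moreover have "card (carrier L) \<noteq> 0" using fl.nonempty fl.fin by simp
    ultimately have c2: "card (carrier L) \<ge> 2" by linarith
    interpret fb2: fbb L by (unfold_locales) (use rc bb c2 in auto)
    obtain b where b: "b \<in> carrier L" "\<forall>x\<in>carrier L. (b,x) \<in> ord L" using fl.bot_ex by blast
    have "b \<in> {x \<in> carrier L. reducible L x}" using fb2.bot_red[OF b] b by blast
    then have "card {x \<in> carrier L. reducible L x} \<noteq> 0" using fl.fin by auto
    then show False using fb by (simp add: num_reducible_def)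
  qed
  then obtain k where k: "carrier L = {k}" by (auto simp: card_1_singleton_iff)
  have o: "(k,k) \<in> ord L" using fl.refl k by simp
  have "bij_betw (\<lambda>_. 0::nat) (carrier L) (carrier S1)" using k by (simp add: S1_def bij_betw_def)
  moreover have "\<forall>x\<in>carrier L. \<forall>y\<in>carrier L. (x,y) \<in> ord L \<longleftrightarrow> ((\<lambda>_. 0::nat) x, (\<lambda>_. 0::nat) y) \<in> ord S1"
    using k o by (simp add: S1_def)
  ultimately show ?thesis unfolding poset_iso_def by blast
qed

theorem mainTheorem15:
  fixes n l :: nat
  assumes "(n + 1) div 2 \<le> l" and "l \<le> n choose 2"
  shows "(\<exists>g. bij_betw g (F_classes n (int l)) (D_graphs n l)) \<and> f n (int l) = d n l"
proof -
  have ex: "\<exists>g. bij_betw g (F_classes n (int l)) (D_graphs n l)"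
  proof (cases "n = 0")
    case True
    then have l0: "l = 0" using assms(2) by (simp add: numeral_2_eq_2)
    have F: "F_classes 0 0 = {cls 0 0 S1}"
    proof -
      have "cls 0 0 L = cls 0 0 S1" if "L \<in> FBB 0 0" for L
        using cls_eq[OF that S1_FBB] FBB0_iso[OF that] by blast
      then show ?thesis unfolding F_classes_cls using S1_FBB by blast
    qed
    have D: "D_graphs 0 0 = {{}}" unfolding D_graphs_def by auto
    have "bij_betw (\<lambda>_. {}) (F_classes 0 0) (D_graphs 0 0)" unfolding F D by (simp add: bij_betw_def)
    then show ?thesis using True l0 by auto
  next
    case False
    then show ?thesis using general_case by simp
  qed
  then obtain g where "bij_betw g (F_classes n (int l)) (D_graphs n l)" by blast
  then have "card (F_classes n (int l)) = card (D_graphs n l)" by (rule bij_betw_same_card)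
  then show ?thesis using ex by (simp add: f_def d_def)
qed


end
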